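(* There are isomorphisms of algebras: - If $r\in3+2\mathbb N$: $\mathbb A_{\bar0}\cong A^{\frac{r-1}{2}}\times\mathbb C\cong\mathbb A_{\bar1}$. - If $r\in2+4\mathbb N$: $\mathbb A_{\bar0}\cong A^{\frac{r-2}{4}}\times B$ and $\mathbb A_{\bar1}\cong A^{\frac{r-2}{4}}\times\mathbb C$. - If $r\in4+4\mathbb N$: $\mathbb A_{\bar0}\cong A^{\frac r4}$ and $\mathbb A_{\bar1}\cong A^{\frac{r-4}{4}}\times B\times\mathbb C$. Here $A^n$ denotes the product of $n$ copies of $A$.
   Context: Fix a positive integer $r$. Let $r'=r$ if $r$ is odd and $r'=r/2$ if $r$ is even. Set $q=e^{\pi\sqrt{-1}/r}$, $q^x=e^{\pi\sqrt{-1}x/r}$, $\{x\}=q^x-q^{-x}$, $[x]=\{x\}/\{1\}$. $\overline U=\overline U_q^H\mathfrak{sl}(2)$ is the Hopf algebra over $\mathbb C$ generated by $E,F,K,K^{-1},H$ with: - relations $KK^{-1}=K^{-1}K=1$, $KEK^{-1}=q^2E$, $KFK^{-1}=q^{-2}F$, $EF-FE=\frac{K-K^{-1}}{q-q^{-1}}$, $HK=KH$, $[H,E]=2E$, $[H,F]=-2F$, $E^r=F^r=0$; - coproduct $\Delta(E)=1\otimes E+E\otimes K$, $\Delta(F)=K^{-1}\otimes F+F\otimes1$, $\Delta(K)=K\otimes K$, $\Delta(H)=H\otimes1+1\otimes H$. Weight modules: $H$ diagonalizable and $K=q^\lambda$ on weight-$\lambda$ vectors. $\mathbb C^H_{kr}$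 is the one-dimensional module with $E=F=0$ and $H=kr$. Definition of $P_i$, for $i\in\{0,\dots,r-2\}$ (write $j=r-2-i$ and $\gamma_{n,k}=[k][n-k+1]$). $P_i$ has basis $h_m$ ($m=i,i-2,\dots,-i$), $s_m$ ($m=i,\dots,-i$), $R_m$ ($m=r+j,\dots,r-j$), $L_m$ ($m=j-r,\dots,-j-r$), each of weight $m$, with: - $Fh_m=h_{m-2}$ ($m>-i$), $Fh_{-i}=L_{j-r}$; - $Fs_m=s_{m-2}$ ($m>-i$), $Fs_{-i}=0$; - $FL_m=L_{m-2}$ ($m>-j-r$), $FL_{-j-r}=0$; - $FR_{r-j}=s_i$, $FR_{r-j+2k}=-\gamma_{j,k}R_{r-j+2k-2}$ ($1\le k\le j$); - $Eh_i=R_{r-j}$, $Eh_{i-2k}=\gamma_{i,k}h_{i-2k+2}+s_{i-2k+2}$; - $Es_i=0$, $Es_{i-2k}=\gamma_{i,k}s_{i-2k+2}$; - $ER_m=R_{m+2}$ ($m<r+j$), $ER_{r+j}=0$; - $EL_{j-r}=s_{-i}$, $EL_{j-2k-r}=-\gamma_{j,k}L_{j-2k-r+2}$. $P_{r-1}$ is the $r$-dimensional simple module of highest weight $r-1$. The module $\mathbb P$. Let $\mathbb P=\bigoplus_{k\in\mathbb Z}\bigoplus_{i=0}^{r-1}\mathbb C^H_{kr}\otimes P_i$, an infinite-dimensional weight module with finite-dimensional weight spaces. - It is $\mathbb Z$-graded by giving the summand $\mathbb C^H_{kr}\otimes P_i$ degree $k$. - For $\nu\in\{\bar0,\bar1\}$,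 $\mathbb P_\nu$ is the sum of the weight spaces with weights in $\nu+2\mathbb Z$, so $\mathbb P=\mathbb P_{\bar0}\oplus\mathbb P_{\bar1}$. - Let $\sigma=\mathbb C^H_{2r'}$. The canonical isomorphisms $\sigma\otimes\mathbb C^H_{kr}\otimes P_i\cong\mathbb C^H_{kr+2r'}\otimes P_i$ ($1\otimes1\otimes v\mapsto1\otimes v$) define an action of $\mathbb Z$ on $\mathbb P$. - $\mathbb A_\nu=\mathrm{End}_\sigma(\mathbb P_\nu)$ is the algebra of $\overline U$-linear endomorphisms of $\mathbb P_\nu$ commuting with this action. It is $\mathbb Z$-graded: a map has degree $d$ if it sends degree $k$ to degree $k+d$. The algebras $A$ and $B$. - $A$ is the $\mathbb Z$-graded $\mathbb C$-algebra generated by orthogonal idempotents $p,q$ with $p+q=1$ and elements $a_+,a_-,b_+,b_-$ with $a_\pm=qa_\pm p$, $b_\pm=pb_\pm q$ (the path algebra of the quiver with two vertices $p,q$, arrows $a_\pm$ from $p$ to $q$ and $b_\pm$ from $q$ to $p$). The relations are $a_+b_+=b_+a_+=a_-b_-=b_-a_-=0$, $a_+b_-+a_-b_+=0$, $b_+a_-+b_-a_+=0$. Grading: $a_+,b_+$ have degree $1$, $a_-,b_-$ degree $-1$, and $p,q$ degree $0$; $A$ has basis $\{a_+,b_+,a_-,b_-,p,q,b_+a_-,a_+b_-\}$. - $B$ is the quotient of $A$ by $p=q$, $a_+=b_+$, $a_-=b_-$; that is, the exterior algebra generated by $a_+$ (degree $1$) and $a_-$ (degree $-1$) with $a_+^2=a_-^2=0$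 and $a_+a_-+a_-a_+=0$. *)

theory Defs
  imports Complex_Main
begin

definition qe :: "nat \<Rightarrow> int \<Rightarrow> complex" where
  "qe r x = exp (of_real pi * \<i> * of_int x / of_nat r)"

definition qbr :: "nat \<Rightarrow> int \<Rightarrow> complex" where
  "qbr r x = qe r x - qe r (- x)"

definition qint :: "nat \<Rightarrow> int \<Rightarrow> complex" where
  "qint r x = qbr r x / qbr r 1"

definition gam :: "nat \<Rightarrow> int \<Rightarrow> int \<Rightarrow> complex" where
  "gam r n k = qint r k * qint r (n - k + 1)"

record 'a calg =
  acar  :: "'a set"
  aadd  :: "'a \<Rightarrow> 'a \<Rightarrow> 'a"
  amul  :: "'a \<Rightarrow> 'a \<Rightarrow> 'a"
  asmul :: "complex \<Rightarrow> 'a \<Rightarrow> 'a"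
  azero :: "'a"
  aone  :: "'a"

definition alg_iso :: "'a calg \<Rightarrow> 'b calg \<Rightarrow> ('a \<Rightarrow> 'b) \<Rightarrow> bool" where
  "alg_iso S T \<phi> \<longleftrightarrow> bij_betw \<phi> (acar S) (acar T)
     \<and> (\<forall>x\<in>acar S. \<forall>y\<in>acar S. \<phi> (aadd S x y) = aadd T (\<phi> x) (\<phi> y))
     \<and> (\<forall>x\<in>acar S. \<forall>y\<in>acar S. \<phi> (amul S x y) = amul T (\<phi> x) (\<phi> y))
     \<and> (\<forall>c. \<forall>x\<in>acar S. \<phi> (asmul S c x) = asmul T c (\<phi> x))
     \<and> \<phi> (aone S) = aone T"

definition alg_isomorphic :: "'a calg \<Rightarrow> 'b calg \<Rightarrow> bool" where
  "alg_isomorphic S T \<longleftrightarrow> (\<exists>\<phi>. alg_iso S T \<phi>)"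

definition complex_alg :: "complex calg" where
  "complex_alg = \<lparr>acar = UNIV, aadd = (+), amul = (*), asmul = (*), azero = 0, aone = 1\<rparr>"

definition prod_alg :: "'a calg \<Rightarrow> 'b calg \<Rightarrow> ('a \<times> 'b) calg" where
  "prod_alg S T = \<lparr>acar = acar S \<times> acar T,
     aadd = (\<lambda>x y. (aadd S (fst x) (fst y), aadd T (snd x) (snd y))),
     amul = (\<lambda>x y. (amul S (fst x) (fst y), amul T (snd x) (snd y))),
     asmul = (\<lambda>c x. (asmul S c (fst x), asmul T c (snd x))),
     azero = (azero S, azero T), aone = (aone S, aone T)\<rparr>"

text \<open>The product of n copies of an algebra (components with index \<open>\<ge> n\<close> are fixed to zero).\<close>
definition pow_alg :: "'a calg \<Rightarrow> nat \<Rightarrow> (nat \<Rightarrow> 'a) calg" where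
  "pow_alg S n = \<lparr>acar = {f. (\<forall>i<n. f i \<in> acar S) \<and> (\<forall>i\<ge>n. f i = azero S)},
     aadd = (\<lambda>f g i. if i < n then aadd S (f i) (g i) else azero S),
     amul = (\<lambda>f g i. if i < n then amul S (f i) (g i) else azero S),
     asmul = (\<lambda>c f i. if i < n then asmul S c (f i) else azero S),
     azero = (\<lambda>i. azero S),
     aone = (\<lambda>i. if i < n then aone S else azero S)\<rparr>"

text \<open>A finite-dimensional algebra given by a basis and structure constants:
  the product of basis elements u, w is either 0 (None) or c * v (Some (c, v)).\<close>
definition basis_alg :: "'b list \<Rightarrow> ('b \<Rightarrow> 'b \<Rightarrow> (complex \<times> 'b) option) \<Rightarrow> ('b \<Rightarrow> complex)
     \<Rightarrow> ('b \<Rightarrow> complex) calg" where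
  "basis_alg bs m one = \<lparr>acar = {x. \<forall>z. z \<notin> set bs \<longrightarrow> x z = 0},
     aadd = (\<lambda>x y z. x z + y z),
     amul = (\<lambda>x y z. \<Sum>u\<in>set bs. \<Sum>w\<in>set bs. x u * y w *
                (case m u w of None \<Rightarrow> 0 | Some (c, v) \<Rightarrow> if v = z then c else 0)),
     asmul = (\<lambda>c x z. c * x z),
     azero = (\<lambda>z. 0), aone = one\<rparr>"

text \<open>Basis p, q, a+, a-, b+, b-, b+a-, a+b-.\<close>
datatype abas = Ap | Aq | Aap | Aam | Abp | Abm | Abpam | Aapbm

definition abas_list :: "abas list" where
  "abas_list = [Ap, Aq, Aap, Aam, Abp, Abm, Abpam, Aapbm]"

text \<open>left and right idempotents of basis paths (a = q a p, b = p b q)\<close>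
fun lidA :: "abas \<Rightarrow> abas" where
  "lidA Ap = Ap" | "lidA Aq = Aq" | "lidA Aap = Aq" | "lidA Aam = Aq"
| "lidA Abp = Ap" | "lidA Abm = Ap" | "lidA Abpam = Ap" | "lidA Aapbm = Aq"

fun ridA :: "abas \<Rightarrow> abas" where
  "ridA Ap = Ap" | "ridA Aq = Aq" | "ridA Aap = Ap" | "ridA Aam = Ap"
| "ridA Abp = Aq" | "ridA Abm = Aq" | "ridA Abpam = Ap" | "ridA Aapbm = Aq"

fun amulA :: "abas \<Rightarrow> abas \<Rightarrow> (complex \<times> abas) option" where
  "amulA Ap u = (if lidA u = Ap then Some (1, u) else None)"
| "amulA Aq u = (if lidA u = Aq then Some (1, u) else None)"
| "amulA u Ap = (if ridA u = Ap then Some (1, u) else None)"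
| "amulA u Aq = (if ridA u = Aq then Some (1, u) else None)"
| "amulA Aap Abm = Some (1, Aapbm)"
| "amulA Aam Abp = Some (-1, Aapbm)"
| "amulA Abp Aam = Some (1, Abpam)"
| "amulA Abm Aap = Some (-1, Abpam)"
| "amulA _ _ = None"

definition algA :: "(abas \<Rightarrow> complex) calg" where
  "algA = basis_alg abas_list amulA (\<lambda>z. if z = Ap \<or> z = Aq then 1 else 0)"

section \<open>The algebra B (exterior algebra on a+, a-)\<close>

datatype bbas = B1 | Bp | Bm | Bpm

definition bbas_list :: "bbas list" where
  "bbas_list = [B1, Bp, Bm, Bpm]"

fun amulB :: "bbas \<Rightarrow> bbas \<Rightarrow> (complex \<times> bbas) option" where
  "amulB B1 u = Some (1, u)"
| "amulB u B1 = Some (1, u)"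
| "amulB Bp Bm = Some (1, Bpm)"
| "amulB Bm Bp = Some (-1, Bpm)"
| "amulB _ _ = None"

definition algB :: "(bbas \<Rightarrow> complex) calg" where
  "algB = basis_alg bbas_list amulB (\<lambda>z. if z = B1 then 1 else 0)"

text \<open>Basis labels of P_i: for i \<le> r-2 (j = r-2-i):
  Hb a = h_{i-2a}, Sb a = s_{i-2a} (0 \<le> a \<le> i), Rb a = R_{r-j+2a}, Lb a = L_{j-r-2a} (0 \<le> a \<le> j);
  for i = r-1: Vb a = v_a of weight r-1-2a (0 \<le> a \<le> r-1), with F v_a = v_{a+1}, E v_a = [a][r-a] v_{a-1}.\<close>
datatype blab = Hb nat | Sb nat | Rb nat | Lb nat | Vb nat

fun valid_lab :: "nat \<Rightarrow> nat \<Rightarrow> blab \<Rightarrow> bool" where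
  "valid_lab r i (Hb a) = (i + 2 \<le> r \<and> a \<le> i)"
| "valid_lab r i (Sb a) = (i + 2 \<le> r \<and> a \<le> i)"
| "valid_lab r i (Rb a) = (i + 2 \<le> r \<and> a \<le> r - 2 - i)"
| "valid_lab r i (Lb a) = (i + 2 \<le> r \<and> a \<le> r - 2 - i)"
| "valid_lab r i (Vb a) = (i + 1 = r \<and> a < r)"

fun lab_wt :: "nat \<Rightarrow> nat \<Rightarrow> blab \<Rightarrow> int" where
  "lab_wt r i (Hb a) = int i - 2 * int a"
| "lab_wt r i (Sb a) = int i - 2 * int a"
| "lab_wt r i (Rb a) = int r - (int r - 2 - int i) + 2 * int a"
| "lab_wt r i (Lb a) = (int r - 2 - int i) - int r - 2 * int a"
| "lab_wt r i (Vb a) = int r - 1 - 2 * int a"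

definition dl :: "blab \<Rightarrow> blab \<Rightarrow> complex" where
  "dl y z = (if z = y then 1 else 0)"

fun Eb :: "nat \<Rightarrow> nat \<Rightarrow> blab \<Rightarrow> blab \<Rightarrow> complex" where
  "Eb r i (Hb a) = (if a = 0 then dl (Rb 0)
      else (\<lambda>z. gam r (int i) (int a) * dl (Hb (a - 1)) z + dl (Sb (a - 1)) z))"
| "Eb r i (Sb a) = (if a = 0 then (\<lambda>z. 0) else (\<lambda>z. gam r (int i) (int a) * dl (Sb (a - 1)) z))"
| "Eb r i (Rb a) = (if a < r - 2 - i then dl (Rb (a + 1)) else (\<lambda>z. 0))"
| "Eb r i (Lb a) = (if a = 0 then dl (Sb i)
      else (\<lambda>z. - gam r (int (r - 2 - i)) (int a) * dl (Lb (a - 1)) z))"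
| "Eb r i (Vb a) = (if a = 0 then (\<lambda>z. 0)
      else (\<lambda>z. qint r (int a) * qint r (int r - int a) * dl (Vb (a - 1)) z))"

fun Fb :: "nat \<Rightarrow> nat \<Rightarrow> blab \<Rightarrow> blab \<Rightarrow> complex" where
  "Fb r i (Hb a) = (if a < i then dl (Hb (a + 1)) else dl (Lb 0))"
| "Fb r i (Sb a) = (if a < i then dl (Sb (a + 1)) else (\<lambda>z. 0))"
| "Fb r i (Lb a) = (if a < r - 2 - i then dl (Lb (a + 1)) else (\<lambda>z. 0))"
| "Fb r i (Rb a) = (if a = 0 then dl (Sb 0)
      else (\<lambda>z. - gam r (int (r - 2 - i)) (int a) * dl (Rb (a - 1)) z))"
| "Fb r i (Vb a) = (if a + 1 < r then dl (Vb (a + 1)) else (\<lambda>z. 0))"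

text \<open>Basis of P: (k, i, b) is the vector 1 \<otimes> b of C^H_{kr} \<otimes> P_i (degree k).\<close>
type_synonym pidx = "int \<times> nat \<times> blab"

definition valid :: "nat \<Rightarrow> pidx \<Rightarrow> bool" where
  "valid r x = (fst (snd x) < r \<and> valid_lab r (fst (snd x)) (snd (snd x)))"

definition wt :: "nat \<Rightarrow> pidx \<Rightarrow> int" where
  "wt r x = fst x * int r + lab_wt r (fst (snd x)) (snd (snd x))"

text \<open>Coefficient of basis vector y in E x, F x. Via the coproduct, on C^H_{kr} \<otimes> P_i,
  E acts as 1 \<otimes> E and F as K^{-1} \<otimes> F = q^{-kr} F.\<close>
definition Ecoef :: "nat \<Rightarrow> pidx \<Rightarrow> pidx \<Rightarrow> complex" where
  "Ecoef r x y = (if fst y = fst x \<and> fst (snd y) = fst (snd x)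
     then Eb r (fst (snd x)) (snd (snd x)) (snd (snd y)) else 0)"

definition Fcoef :: "nat \<Rightarrow> pidx \<Rightarrow> pidx \<Rightarrow> complex" where
  "Fcoef r x y = (if fst y = fst x \<and> fst (snd y) = fst (snd x)
     then qe r (- (fst x * int r)) * Fb r (fst (snd x)) (snd (snd x)) (snd (snd y)) else 0)"

type_synonym pvec = "pidx \<Rightarrow> complex"

definition opE :: "nat \<Rightarrow> pvec \<Rightarrow> pvec" where
  "opE r v = (\<lambda>y. \<Sum>x\<in>{x. v x \<noteq> 0}. v x * Ecoef r x y)"

definition opF :: "nat \<Rightarrow> pvec \<Rightarrow> pvec" where
  "opF r v = (\<lambda>y. \<Sum>x\<in>{x. v x \<noteq> 0}. v x * Fcoef r x y)"

definition opH :: "nat \<Rightarrow> pvec \<Rightarrow> pvec" where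
  "opH r v = (\<lambda>y. of_int (wt r y) * v y)"

definition opK :: "nat \<Rightarrow> pvec \<Rightarrow> pvec" where
  "opK r v = (\<lambda>y. qe r (wt r y) * v y)"

definition opKinv :: "nat \<Rightarrow> pvec \<Rightarrow> pvec" where
  "opKinv r v = (\<lambda>y. qe r (- wt r y) * v y)"

definition Pnu :: "nat \<Rightarrow> int \<Rightarrow> pvec set" where
  "Pnu r \<nu> = {v. finite {x. v x \<noteq> 0} \<and>
      (\<forall>x. v x \<noteq> 0 \<longrightarrow> valid r x \<and> wt r x mod 2 = \<nu>)}"

definition rprime :: "nat \<Rightarrow> nat" where
  "rprime r = (if odd r then r else r div 2)"

text \<open>The generator of the Z-action: sigma \<otimes> C^H_{kr} \<otimes> P_i = C^H_{kr + 2r'} \<otimes> P_i,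
  i.e. shift of degree by 2r'/r.\<close>
definition shiftP :: "nat \<Rightarrow> pvec \<Rightarrow> pvec" where
  "shiftP r v = (\<lambda>y. v (fst y - int (2 * rprime r div r), snd y))"

definition EndSet :: "nat \<Rightarrow> int \<Rightarrow> (pvec \<Rightarrow> pvec) set" where
  "EndSet r \<nu> = {f.
     (\<forall>v\<in>Pnu r \<nu>. f v \<in> Pnu r \<nu>)
   \<and> (\<forall>v\<in>Pnu r \<nu>. \<forall>w\<in>Pnu r \<nu>. f (\<lambda>x. v x + w x) = (\<lambda>x. f v x + f w x))
   \<and> (\<forall>c. \<forall>v\<in>Pnu r \<nu>. f (\<lambda>x. c * v x) = (\<lambda>x. c * f v x))
   \<and> (\<forall>v\<in>Pnu r \<nu>. f (opE r v) = opE r (f v))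
   \<and> (\<forall>v\<in>Pnu r \<nu>. f (opF r v) = opF r (f v))
   \<and> (\<forall>v\<in>Pnu r \<nu>. f (opK r v) = opK r (f v))
   \<and> (\<forall>v\<in>Pnu r \<nu>. f (opKinv r v) = opKinv r (f v))
   \<and> (\<forall>v\<in>Pnu r \<nu>. f (opH r v) = opH r (f v))
   \<and> (\<forall>v\<in>Pnu r \<nu>. f (shiftP r v) = shiftP r (f v))
   \<and> (\<forall>v. v \<notin> Pnu r \<nu> \<longrightarrow> f v = (\<lambda>x. 0))}"

text \<open>The algebra A_nu = End_sigma(P_nu), product = composition.\<close>
definition EndAlg :: "nat \<Rightarrow> int \<Rightarrow> (pvec \<Rightarrow> pvec) calg" where
  "EndAlg r \<nu> = \<lparr>acar = EndSet r \<nu>,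
     aadd = (\<lambda>f g v. if v \<in> Pnu r \<nu> then (\<lambda>x. f v x + g v x) else (\<lambda>x. 0)),
     amul = (\<lambda>f g v. if v \<in> Pnu r \<nu> then f (g v) else (\<lambda>x. 0)),
     asmul = (\<lambda>c f v. if v \<in> Pnu r \<nu> then (\<lambda>x. c * f v x) else (\<lambda>x. 0)),
     azero = (\<lambda>v x. 0),
     aone = (\<lambda>v. if v \<in> Pnu r \<nu> then v else (\<lambda>x. 0))\<rparr>"

end

theory Submission
  imports Defs
begin


definition ev :: "pidx \<Rightarrow> pvec" where "ev x = (\<lambda>y. if y = x then 1 else 0)"

definition lin :: "(pidx \<Rightarrow> pvec) \<Rightarrow> pvec \<Rightarrow> pvec" where
  "lin M v = (\<lambda>y. \<Sum>x\<in>{x. v x \<noteq> 0}. v x * M x y)"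

definition fs :: "pvec \<Rightarrow> bool" where "fs v \<longleftrightarrow> finite {x. v x \<noteq> 0}"

lemma opE_lin: "opE r = lin (Ecoef r)"
  by (simp add: opE_def lin_def fun_eq_iff)
lemma opF_lin: "opF r = lin (Fcoef r)"
  by (simp add: opF_def lin_def fun_eq_iff)

lemma lin_sum:
  assumes "finite S" "{x. v x \<noteq> 0} \<subseteq> S"
  shows "lin M v y = (\<Sum>x\<in>S. v x * M x y)"
  unfolding lin_def by (rule sum.mono_neutral_left) (use assms in auto)

lemma lin_add:
  assumes "fs v" "fs w"
  shows "lin M (\<lambda>x. v x + w x) = (\<lambda>y. lin M v y + lin M w y)"
proof
  fix y
  let ?S = "{x. v x \<noteq> 0} \<union> {x. w x \<noteq> 0}"
  have f: "finite ?S" using assms by (auto simp: fs_def)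
  have "lin M (\<lambda>x. v x + w x) y = (\<Sum>x\<in>?S. (v x + w x) * M x y)"
    by (rule lin_sum[OF f]) auto
  also have "\<dots> = (\<Sum>x\<in>?S. v x * M x y) + (\<Sum>x\<in>?S. w x * M x y)"
    by (simp add: distrib_right sum.distrib)
  also have "\<dots> = lin M v y + lin M w y"
    by (simp add: lin_sum[OF f])
  finally show "lin M (\<lambda>x. v x + w x) y = lin M v y + lin M w y" .
qed

lemma lin_smul:
  assumes "fs v"
  shows "lin M (\<lambda>x. c * v x) = (\<lambda>y. c * lin M v y)"
proof
  fix y
  have f: "finite {x. v x \<noteq> 0}" using assms by (auto simp: fs_def)
  have "lin M (\<lambda>x. c * v x) y = (\<Sum>x\<in>{x. v x \<noteq> 0}. c * v x * M x y)"
    by (rule lin_sum[OF f]) auto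
  also have "\<dots> = c * lin M v y"
    by (simp add: lin_def sum_distrib_left mult.assoc)
  finally show "lin M (\<lambda>x. c * v x) y = c * lin M v y" .
qed

lemma lin_ev[simp]: "lin M (ev x) = M x"
proof
  fix y
  have "lin M (ev x) y = (\<Sum>z\<in>{x}. ev x z * M z y)"
    by (rule lin_sum) (auto simp: ev_def)
  then show "lin M (ev x) y = M x y" by (simp add: ev_def)
qed

lemma lin_zero[simp]: "lin M (\<lambda>x. 0) = (\<lambda>y. 0)"
  by (simp add: lin_def)

lemma fs_ev[simp]: "fs (ev x)" by (simp add: fs_def ev_def)
lemma fs_add: "fs v \<Longrightarrow> fs w \<Longrightarrow> fs (\<lambda>x. v x + w x)"
  unfolding fs_def by (rule finite_subset[of _ "{x. v x \<noteq> 0} \<union> {x. w x \<noteq> 0}"]) auto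
lemma fs_smul: "fs v \<Longrightarrow> fs (\<lambda>x. c * v x)"
  unfolding fs_def by (rule finite_subset[of _ "{x. v x \<noteq> 0}"]) auto
lemma fs_zero[simp]: "fs (\<lambda>x. 0)" by (simp add: fs_def)

lemma lin_cong:
  assumes "\<And>x. v x \<noteq> 0 \<Longrightarrow> M x = N x"
  shows "lin M v = lin N v"
  using assms by (auto simp: lin_def fun_eq_iff intro!: sum.cong)

lemma fs_lin:
  assumes "fs v" "\<And>x. v x \<noteq> 0 \<Longrightarrow> fs (M x)"
  shows "fs (lin M v)"
proof -
  have "{y. lin M v y \<noteq> 0} \<subseteq> (\<Union>x\<in>{x. v x \<noteq> 0}. {y. M x y \<noteq> 0})"
  proof
    fix y assume "y \<in> {y. lin M v y \<noteq> 0}"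
    then have "(\<Sum>x\<in>{x. v x \<noteq> 0}. v x * M x y) \<noteq> 0" by (simp add: lin_def)
    then obtain x where "x \<in> {x. v x \<noteq> 0}" "v x * M x y \<noteq> 0" by (rule sum.not_neutral_contains_not_neutral)
    then show "y \<in> (\<Union>x\<in>{x. v x \<noteq> 0}. {y. M x y \<noteq> 0})" by (intro UN_I[of x]) simp_all
  qed
  moreover have "finite (\<Union>x\<in>{x. v x \<noteq> 0}. {y. M x y \<noteq> 0})"
    using assms by (auto simp: fs_def)
  ultimately show ?thesis unfolding fs_def by (rule finite_subset)
qed

lemma lin_supp:
  assumes "lin M v y \<noteq> 0"
  obtains x where "v x \<noteq> 0" "M x y \<noteq> 0"
proof -
  from assms have "(\<Sum>x\<in>{x. v x \<noteq> 0}. v x * M x y) \<noteq> 0" by (simp add: lin_def)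
  then obtain x where "x \<in> {x. v x \<noteq> 0}" "v x * M x y \<noteq> 0"
    by (rule sum.not_neutral_contains_not_neutral)
  then show ?thesis using that by auto
qed

lemma lin_comp:
  assumes "fs v" "\<And>x. v x \<noteq> 0 \<Longrightarrow> fs (M x)"
  shows "lin N (lin M v) = lin (\<lambda>x. lin N (M x)) v"
proof
  fix y
  let ?V = "{x. v x \<noteq> 0}"
  let ?S = "\<Union>x\<in>?V. {z. M x z \<noteq> 0}"
  have fV: "finite ?V" using assms by (auto simp: fs_def)
  have fS: "finite ?S" using assms by (auto simp: fs_def)
  have sub: "{z. lin M v z \<noteq> 0} \<subseteq> ?S"
    by (auto elim!: lin_supp)
  have "lin N (lin M v) y = (\<Sum>z\<in>?S. lin M v z * N z y)"
    by (rule lin_sum[OF fS sub])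
  also have "\<dots> = (\<Sum>z\<in>?S. \<Sum>x\<in>?V. v x * M x z * N z y)"
    by (simp add: lin_def sum_distrib_right)
  also have "\<dots> = (\<Sum>x\<in>?V. \<Sum>z\<in>?S. v x * M x z * N z y)"
    by (rule sum.swap)
  also have "\<dots> = (\<Sum>x\<in>?V. v x * lin N (M x) y)"
  proof (rule sum.cong[OF refl])
    fix x assume x: "x \<in> ?V"
    have "lin N (M x) y = (\<Sum>z\<in>?S. M x z * N z y)"
      by (rule lin_sum[OF fS]) (use x in auto)
    then show "(\<Sum>z\<in>?S. v x * M x z * N z y) = v x * lin N (M x) y"
      by (simp add: sum_distrib_left mult.assoc)
  qed
  also have "\<dots> = lin (\<lambda>x. lin N (M x)) v y" by (simp add: lin_def)
  finally show "lin N (lin M v) y = lin (\<lambda>x. lin N (M x)) v y" .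
qed

lemma fs_expand:
  assumes "fs v"
  shows "v = (\<lambda>y. \<Sum>x\<in>{x. v x \<noteq> 0}. v x * ev x y)"
proof
  fix y
  show "v y = (\<Sum>x\<in>{x. v x \<noteq> 0}. v x * ev x y)"
  proof (cases "v y = 0")
    case True then show ?thesis by (auto simp: ev_def intro!: sum.neutral)
  next
    case False
    have f: "finite {x. v x \<noteq> 0}" using assms by (simp add: fs_def)
    have "(\<Sum>x\<in>{x. v x \<noteq> 0}. v x * ev x y) = (\<Sum>x\<in>{y}. v x * ev x y)"
      by (rule sum.mono_neutral_right) (use f False in \<open>auto simp: ev_def\<close>)
    then show ?thesis by (simp add: ev_def)
  qed
qed

lemma qe_add: "qe r (x + y) = qe r x * qe r y"
  by (simp add: qe_def exp_add[symmetric] distrib_left distrib_right add_divide_distrib)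

lemma qe_0[simp]: "qe r 0 = 1" by (simp add: qe_def)

lemma qe_neg: "qe r (- x) = inverse (qe r x)"
  by (simp add: qe_def exp_minus)

lemma qe_r: "r > 0 \<Longrightarrow> qe r (int r) = -1"
  by (simp add: qe_def)

lemma qe_diff: "qe r (x - y) = qe r x * qe r (- y)"
  using qe_add[of r x "-y"] by simp

lemma qe_nat_r: "r > 0 \<Longrightarrow> qe r (int n * int r) = (-1) ^ n"
proof (induction n)
  case 0 then show ?case by simp
next
  case (Suc n)
  have "qe r (int (Suc n) * int r) = qe r (int n * int r + int r)" by (simp add: algebra_simps)
  also have "\<dots> = qe r (int n * int r) * qe r (int r)" by (rule qe_add)
  finally show ?case using Suc qe_r[of r] by simp
qed

lemma qe_mult_r: "r > 0 \<Longrightarrow> qe r (k * int r) = (-1) ^ nat \<bar>k\<bar>"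
proof (cases "k \<ge> 0")
  case True
  assume "r > 0"
  then show ?thesis using True qe_nat_r[of r "nat k"] by simp
next
  case False
  assume r: "r > 0"
  have "qe r (k * int r) = qe r (- (int (nat (-k)) * int r))" using False by simp
  also have "\<dots> = inverse ((-1) ^ nat (-k))" using qe_nat_r[OF r, of "nat (-k)"] by (simp add: qe_neg)
  also have "\<dots> = (-1) ^ nat \<bar>k\<bar>" using False by (simp add: power_inverse[symmetric])
  finally show ?thesis .
qed


definition near :: "nat \<Rightarrow> blab \<Rightarrow> blab set" where
  "near i b = (let n = (case b of Hb a \<Rightarrow> a | Sb a \<Rightarrow> a | Rb a \<Rightarrow> a | Lb a \<Rightarrow> a | Vb a \<Rightarrow> a) in
     {Hb (n-1), Sb (n-1), Rb (n+1), Rb 0, Lb (n-1), Lb (n+1), Lb 0, Sb i, Sb 0, Hb (n+1),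
      Sb (n+1), Rb (n-1), Vb (n-1), Vb (n+1)})"

lemma finite_near[simp]: "finite (near i b)" by (simp add: near_def Let_def)

lemma Eb_near: "Eb r i b z \<noteq> 0 \<Longrightarrow> z \<in> near i b"
  by (cases b) (auto simp: near_def dl_def split: if_splits)

lemma Fb_near: "Fb r i b z \<noteq> 0 \<Longrightarrow> z \<in> near i b"
  by (cases b) (auto simp: near_def dl_def split: if_splits)

lemma Eb_supp:
  assumes "valid_lab r i b" "Eb r i b z \<noteq> 0"
  shows "valid_lab r i z \<and> lab_wt r i z = lab_wt r i b + 2"
  using assms by (cases b) (auto simp: dl_def split: if_splits)

lemma Fb_supp:
  assumes "valid_lab r i b" "Fb r i b z \<noteq> 0"
  shows "valid_lab r i z \<and> lab_wt r i z = lab_wt r i b - 2"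
  using assms by (cases b) (auto simp: dl_def split: if_splits)

lemma Ecoef_supp:
  assumes "valid r x" "Ecoef r x y \<noteq> 0"
  shows "valid r y \<and> wt r y = wt r x + 2 \<and> fst y = fst x \<and> fst (snd y) = fst (snd x)"
  using assms Eb_supp[of r "fst (snd x)" "snd (snd x)" "snd (snd y)"]
  by (auto simp: Ecoef_def valid_def wt_def split: if_splits)

lemma Fcoef_supp:
  assumes "valid r x" "Fcoef r x y \<noteq> 0"
  shows "valid r y \<and> wt r y = wt r x - 2 \<and> fst y = fst x \<and> fst (snd y) = fst (snd x)"
  using assms Fb_supp[of r "fst (snd x)" "snd (snd x)" "snd (snd y)"]
  by (auto simp: Fcoef_def valid_def wt_def split: if_splits)

lemma fs_Ecoef[simp]: "fs (Ecoef r x)"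
proof -
  obtain k i b where x: "x = (k, i, b)" by (cases x) auto
  have "{y. Ecoef r x y \<noteq> 0} \<subseteq> (\<lambda>z. (k, i, z)) ` near i b"
  proof
    fix y assume "y \<in> {y. Ecoef r x y \<noteq> 0}"
    then have "fst y = k" "fst (snd y) = i" "Eb r i b (snd (snd y)) \<noteq> 0"
      by (auto simp: Ecoef_def x split: if_splits)
    then show "y \<in> (\<lambda>z. (k, i, z)) ` near i b"
      by (intro image_eqI[of _ _ "snd (snd y)"]) (auto intro: Eb_near simp: prod_eq_iff)
  qed
  then show ?thesis unfolding fs_def by (rule finite_subset) simp
qed

lemma fs_Fcoef[simp]: "fs (Fcoef r x)"
proof -
  obtain k i b where x: "x = (k, i, b)" by (cases x) auto
  have "{y. Fcoef r x y \<noteq> 0} \<subseteq> (\<lambda>z. (k, i, z)) ` near i b"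
  proof
    fix y assume "y \<in> {y. Fcoef r x y \<noteq> 0}"
    then have "fst y = k" "fst (snd y) = i" "Fb r i b (snd (snd y)) \<noteq> 0"
      by (auto simp: Fcoef_def x split: if_splits)
    then show "y \<in> (\<lambda>z. (k, i, z)) ` near i b"
      by (intro image_eqI[of _ _ "snd (snd y)"]) (auto intro: Fb_near simp: prod_eq_iff)
  qed
  then show ?thesis unfolding fs_def by (rule finite_subset) simp
qed

definition PS :: "nat \<Rightarrow> int \<Rightarrow> pidx set" where
  "PS r \<nu> = {x. valid r x \<and> wt r x mod 2 = \<nu>}"

lemma Pnu_iff: "v \<in> Pnu r \<nu> \<longleftrightarrow> fs v \<and> (\<forall>x. v x \<noteq> 0 \<longrightarrow> x \<in> PS r \<nu>)"
  by (simp add: Pnu_def PS_def fs_def)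

declare split_paired_All[simp del] split_paired_Ex[simp del]

lemma ev_Pnu[simp]: "ev x \<in> Pnu r \<nu> \<longleftrightarrow> x \<in> PS r \<nu>"
  by (simp add: Pnu_iff) (simp add: ev_def)

lemma zero_Pnu[simp]: "(\<lambda>x. 0) \<in> Pnu r \<nu>" by (simp add: Pnu_iff)

lemma add_Pnu: "v \<in> Pnu r \<nu> \<Longrightarrow> w \<in> Pnu r \<nu> \<Longrightarrow> (\<lambda>x. v x + w x) \<in> Pnu r \<nu>"
  unfolding Pnu_iff
proof (intro conjI allI impI)
  fix x assume "fs v \<and> (\<forall>x. v x \<noteq> 0 \<longrightarrow> x \<in> PS r \<nu>)" "fs w \<and> (\<forall>x. w x \<noteq> 0 \<longrightarrow> x \<in> PS r \<nu>)"
    "v x + w x \<noteq> 0"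
  then show "x \<in> PS r \<nu>" by (metis add.right_neutral add_0)
qed (auto intro: fs_add)

lemma smul_Pnu: "v \<in> Pnu r \<nu> \<Longrightarrow> (\<lambda>x. c * v x) \<in> Pnu r \<nu>"
  unfolding Pnu_iff by (auto intro: fs_smul)

lemma Pnu_fs: "v \<in> Pnu r \<nu> \<Longrightarrow> fs v" by (simp add: Pnu_iff)
lemma Pnu_PS: "v \<in> Pnu r \<nu> \<Longrightarrow> v x \<noteq> 0 \<Longrightarrow> x \<in> PS r \<nu>" by (simp add: Pnu_iff)

lemma lin_Pnu:
  assumes "v \<in> Pnu r \<nu>" "\<And>x. x \<in> PS r \<nu> \<Longrightarrow> M x \<in> Pnu r \<nu>"
  shows "lin M v \<in> Pnu r \<nu>"
  unfolding Pnu_iff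
proof
  show "fs (lin M v)"
    by (rule fs_lin) (use assms in \<open>auto simp: Pnu_iff\<close>)
  show "\<forall>x. lin M v x \<noteq> 0 \<longrightarrow> x \<in> PS r \<nu>"
    by (auto elim!: lin_supp) (use assms in \<open>auto simp: Pnu_iff\<close>)
qed

lemma opE_Pnu: "v \<in> Pnu r \<nu> \<Longrightarrow> opE r v \<in> Pnu r \<nu>"
  unfolding opE_lin
proof (rule lin_Pnu)
  fix x assume x: "x \<in> PS r \<nu>"
  show "Ecoef r x \<in> Pnu r \<nu>"
    unfolding Pnu_iff
  proof (intro conjI allI impI)
    fix y assume "Ecoef r x y \<noteq> 0"
    with Ecoef_supp[of r x y] x have "valid r y" "wt r y = wt r x + 2" by (auto simp: PS_def)
    then show "y \<in> PS r \<nu>" using x by (auto simp: PS_def)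
  qed simp
qed

lemma opF_Pnu: "v \<in> Pnu r \<nu> \<Longrightarrow> opF r v \<in> Pnu r \<nu>"
  unfolding opF_lin
proof (rule lin_Pnu)
  fix x assume x: "x \<in> PS r \<nu>"
  show "Fcoef r x \<in> Pnu r \<nu>"
    unfolding Pnu_iff
  proof (intro conjI allI impI)
    fix y assume "Fcoef r x y \<noteq> 0"
    with Fcoef_supp[of r x y] x have "valid r y" "wt r y = wt r x - 2" by (auto simp: PS_def)
    then show "y \<in> PS r \<nu>" using x by (auto simp: PS_def)
  qed simp
qed

definition diag :: "nat \<Rightarrow> (int \<Rightarrow> complex) \<Rightarrow> pvec \<Rightarrow> pvec" where
  "diag r g v = (\<lambda>y. g (wt r y) * v y)"

lemma opH_diag: "opH r = diag r of_int" by (simp add: opH_def diag_def fun_eq_iff)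
lemma opK_diag: "opK r = diag r (qe r)" by (simp add: opK_def diag_def fun_eq_iff)
lemma opKinv_diag: "opKinv r = diag r (\<lambda>m. qe r (-m))" by (simp add: opKinv_def diag_def fun_eq_iff)

lemma diag_Pnu: "v \<in> Pnu r \<nu> \<Longrightarrow> diag r g v \<in> Pnu r \<nu>"
  unfolding Pnu_iff diag_def fs_def
  by (auto intro: finite_subset[of _ "{x. v x \<noteq> 0}"])

definition sh :: "nat \<Rightarrow> int" where "sh r = int (2 * rprime r div r)"

lemma shiftP_alt: "shiftP r v = (\<lambda>y. v (fst y - sh r, snd y))"
  by (simp add: shiftP_def sh_def)

lemma even_sh: "even (sh r * int r)"
proof (cases "odd r")
  case True
  then have "r > 0" by (cases r) auto
  then have "sh r = 2" using True by (simp add: sh_def rprime_def)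
  then show ?thesis by simp
next
  case False then show ?thesis by simp
qed

lemma wt_shift: "wt r (fst x + s, snd x) = wt r x + s * int r"
  by (simp add: wt_def algebra_simps)

lemma PS_shift: "x \<in> PS r \<nu> \<Longrightarrow> (fst x + sh r, snd x) \<in> PS r \<nu>"
proof -
  assume x: "x \<in> PS r \<nu>"
  obtain m where m: "sh r * int r = 2 * m" using even_sh[of r] by (auto elim: evenE)
  have "wt r (fst x + sh r, snd x) mod 2 = (wt r x + 2 * m) mod 2" using m by (simp add: wt_shift)
  also have "\<dots> = wt r x mod 2" by simp
  finally show ?thesis using x by (simp add: PS_def valid_def)
qed

lemma PS_unshift: "x \<in> PS r \<nu> \<Longrightarrow> (fst x - sh r, snd x) \<in> PS r \<nu>"
proof -
  assume x: "x \<in> PS r \<nu>"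
  obtain m where m: "sh r * int r = 2 * m" using even_sh[of r] by (auto elim: evenE)
  have "wt r (fst x - sh r, snd x) = wt r x - 2 * m" using m by (simp add: wt_def algebra_simps)
  then have "wt r (fst x - sh r, snd x) mod 2 = (wt r x - 2 * m) mod 2" by simp
  also have "\<dots> = wt r x mod 2" by presburger
  finally show ?thesis using x by (simp add: PS_def valid_def)
qed

lemma shiftP_Pnu: "v \<in> Pnu r \<nu> \<Longrightarrow> shiftP r v \<in> Pnu r \<nu>"
proof -
  assume v: "v \<in> Pnu r \<nu>"
  have "{y. shiftP r v y \<noteq> 0} = (\<lambda>x. (fst x + sh r, snd x)) ` {x. v x \<noteq> 0}"
    by (force simp: shiftP_alt image_iff)
  then have "fs (shiftP r v)" using v by (simp add: fs_def Pnu_iff)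
  moreover have "\<forall>y. shiftP r v y \<noteq> 0 \<longrightarrow> y \<in> PS r \<nu>"
  proof (intro allI impI)
    fix y assume "shiftP r v y \<noteq> 0"
    then have "(fst y - sh r, snd y) \<in> PS r \<nu>" using v by (auto simp: shiftP_alt Pnu_iff)
    from PS_shift[OF this] show "y \<in> PS r \<nu>" by simp
  qed
  ultimately show ?thesis by (simp add: Pnu_iff)
qed

lemma shiftP_ev: "shiftP r (ev x) = ev (fst x + sh r, snd x)"
  by (auto simp: shiftP_alt ev_def fun_eq_iff)

definition mapM :: "nat \<Rightarrow> int \<Rightarrow> (pidx \<Rightarrow> pvec) \<Rightarrow> pvec \<Rightarrow> pvec" where
  "mapM r \<nu> M = (\<lambda>v. if v \<in> Pnu r \<nu> then lin M v else (\<lambda>x. 0))"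

lemma lin_diag:
  assumes v: "v \<in> Pnu r \<nu>"
    and w: "\<And>x y. x \<in> PS r \<nu> \<Longrightarrow> M x y \<noteq> 0 \<Longrightarrow> wt r y = wt r x"
  shows "lin M (diag r g v) = diag r g (lin M v)"
proof
  fix y
  have f: "finite {x. v x \<noteq> 0}" using v by (simp add: Pnu_iff fs_def)
  have "lin M (diag r g v) y = (\<Sum>x\<in>{x. v x \<noteq> 0}. g (wt r x) * v x * M x y)"
    using lin_sum[OF f, of "diag r g v" M y] by (auto simp: diag_def)
  also have "\<dots> = (\<Sum>x\<in>{x. v x \<noteq> 0}. v x * (g (wt r y) * M x y))"
  proof (rule sum.cong[OF refl])
    fix x assume "x \<in> {x. v x \<noteq> 0}"
    then have "x \<in> PS r \<nu>" using v by (simp add: Pnu_iff)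
    then show "g (wt r x) * v x * M x y = v x * (g (wt r y) * M x y)"
      using w[of x y] by (cases "M x y = 0") auto
  qed
  also have "\<dots> = diag r g (lin M v) y"
    by (simp add: diag_def lin_def sum_distrib_left mult_ac)
  finally show "lin M (diag r g v) y = diag r g (lin M v) y" .
qed

lemma lin_shift:
  assumes v: "v \<in> Pnu r \<nu>"
    and s: "\<And>x. x \<in> PS r \<nu> \<Longrightarrow> M (fst x + sh r, snd x) = shiftP r (M x)"
  shows "lin M (shiftP r v) = shiftP r (lin M v)"
proof
  fix y
  let ?g = "\<lambda>x. (fst x + sh r, snd x)"
  have f: "finite {x. v x \<noteq> 0}" using v by (simp add: Pnu_iff fs_def)
  have supp: "{x. shiftP r v x \<noteq> 0} = ?g ` {x. v x \<noteq> 0}"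
    by (force simp: shiftP_alt image_iff)
  have inj: "inj_on ?g {x. v x \<noteq> 0}" by (auto simp: inj_on_def prod_eq_iff)
  have "lin M (shiftP r v) y = (\<Sum>x\<in>?g ` {x. v x \<noteq> 0}. shiftP r v x * M x y)"
    by (simp add: lin_def supp)
  also have "\<dots> = (\<Sum>x\<in>{x. v x \<noteq> 0}. shiftP r v (?g x) * M (?g x) y)"
    by (simp add: sum.reindex[OF inj])
  also have "\<dots> = (\<Sum>x\<in>{x. v x \<noteq> 0}. v x * M x (fst y - sh r, snd y))"
  proof (rule sum.cong[OF refl])
    fix x assume "x \<in> {x. v x \<noteq> 0}"
    then have "x \<in> PS r \<nu>" using v by (simp add: Pnu_iff)
    then show "shiftP r v (?g x) * M (?g x) y = v x * M x (fst y - sh r, snd y)"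
      using s[of x] by (simp add: shiftP_alt)
  qed
  also have "\<dots> = shiftP r (lin M v) y" by (simp add: shiftP_alt lin_def)
  finally show "lin M (shiftP r v) y = shiftP r (lin M v) y" .
qed

lemma lin_comm:
  assumes v: "v \<in> Pnu r \<nu>"
    and rowP: "\<And>x. x \<in> PS r \<nu> \<Longrightarrow> M x \<in> Pnu r \<nu>"
    and fN: "\<And>x. fs (N x)"
    and c: "\<And>x. x \<in> PS r \<nu> \<Longrightarrow> lin M (N x) = lin N (M x)"
  shows "lin M (lin N v) = lin N (lin M v)"
proof -
  have fv: "fs v" using v by (simp add: Pnu_iff)
  have "lin M (lin N v) = lin (\<lambda>x. lin M (N x)) v" by (rule lin_comp[OF fv fN])
  also have "\<dots> = lin (\<lambda>x. lin N (M x)) v"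
    by (rule lin_cong) (use v c in \<open>auto simp: Pnu_iff\<close>)
  also have "\<dots> = lin N (lin M v)"
    by (rule lin_comp[symmetric, OF fv]) (use v rowP in \<open>auto simp: Pnu_iff\<close>)
  finally show ?thesis .
qed

lemma mapM_EndSet:
  assumes rowP: "\<And>x. x \<in> PS r \<nu> \<Longrightarrow> M x \<in> Pnu r \<nu>"
    and roww: "\<And>x y. x \<in> PS r \<nu> \<Longrightarrow> M x y \<noteq> 0 \<Longrightarrow> wt r y = wt r x"
    and rowE: "\<And>x. x \<in> PS r \<nu> \<Longrightarrow> lin M (Ecoef r x) = lin (Ecoef r) (M x)"
    and rowF: "\<And>x. x \<in> PS r \<nu> \<Longrightarrow> lin M (Fcoef r x) = lin (Fcoef r) (M x)"
    and rowS: "\<And>x. x \<in> PS r \<nu> \<Longrightarrow> M (fst x + sh r, snd x) = shiftP r (M x)"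
  shows "mapM r \<nu> M \<in> EndSet r \<nu>"
proof -
  have LP: "\<And>v. v \<in> Pnu r \<nu> \<Longrightarrow> lin M v \<in> Pnu r \<nu>" by (rule lin_Pnu) (use rowP in auto)
  show ?thesis
    unfolding EndSet_def mem_Collect_eq
  proof (intro conjI ballI allI impI)
    fix v assume v: "v \<in> Pnu r \<nu>"
    show "mapM r \<nu> M v \<in> Pnu r \<nu>" using v LP by (simp add: mapM_def)
    show "mapM r \<nu> M (opE r v) = opE r (mapM r \<nu> M v)"
      using v opE_Pnu[OF v] by (simp add: mapM_def opE_lin lin_comm[OF v rowP _ rowE])
    show "mapM r \<nu> M (opF r v) = opF r (mapM r \<nu> M v)"
      using v opF_Pnu[OF v] by (simp add: mapM_def opF_lin lin_comm[OF v rowP _ rowF])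
    show "mapM r \<nu> M (opK r v) = opK r (mapM r \<nu> M v)"
      using v by (simp add: mapM_def opK_diag diag_Pnu lin_diag[OF v roww])
    show "mapM r \<nu> M (opKinv r v) = opKinv r (mapM r \<nu> M v)"
      using v by (simp add: mapM_def opKinv_diag diag_Pnu lin_diag[OF v roww])
    show "mapM r \<nu> M (opH r v) = opH r (mapM r \<nu> M v)"
      using v by (simp add: mapM_def opH_diag diag_Pnu lin_diag[OF v roww])
    show "mapM r \<nu> M (shiftP r v) = shiftP r (mapM r \<nu> M v)"
      using v by (simp add: mapM_def shiftP_Pnu lin_shift[where M=M, OF v rowS])
  next
    fix c v assume v: "v \<in> Pnu r \<nu>"
    show "mapM r \<nu> M (\<lambda>x. c * v x) = (\<lambda>x. c * mapM r \<nu> M v x)"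
      using v by (simp add: mapM_def smul_Pnu lin_smul Pnu_fs)
  next
    fix v w assume v: "v \<in> Pnu r \<nu>" and w: "w \<in> Pnu r \<nu>"
    show "mapM r \<nu> M (\<lambda>x. v x + w x) = (\<lambda>x. mapM r \<nu> M v x + mapM r \<nu> M w x)"
      using v w by (simp add: mapM_def add_Pnu lin_add Pnu_fs)
  next
    fix v assume "v \<notin> Pnu r \<nu>"
    then show "mapM r \<nu> M v = (\<lambda>x. 0)" by (simp add: mapM_def)
  qed
qed

lemma End_Pnu: "f \<in> EndSet r \<nu> \<Longrightarrow> v \<in> Pnu r \<nu> \<Longrightarrow> f v \<in> Pnu r \<nu>"
  unfolding EndSet_def by blast
lemma End_add: "f \<in> EndSet r \<nu> \<Longrightarrow> v \<in> Pnu r \<nu> \<Longrightarrow> w \<in> Pnu r \<nu> \<Longrightarrow>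
   f (\<lambda>x. v x + w x) = (\<lambda>x. f v x + f w x)"
  unfolding EndSet_def by blast
lemma End_smul: "f \<in> EndSet r \<nu> \<Longrightarrow> v \<in> Pnu r \<nu> \<Longrightarrow> f (\<lambda>x. c * v x) = (\<lambda>x. c * f v x)"
  unfolding EndSet_def by blast
lemma End_zero:
  assumes "f \<in> EndSet r \<nu>" shows "f (\<lambda>x. 0) = (\<lambda>x. 0)"
  using End_smul[OF assms zero_Pnu, of 0] by simp

lemma End_E: "f \<in> EndSet r \<nu> \<Longrightarrow> v \<in> Pnu r \<nu> \<Longrightarrow> f (opE r v) = opE r (f v)"
  unfolding EndSet_def by blast
lemma End_F: "f \<in> EndSet r \<nu> \<Longrightarrow> v \<in> Pnu r \<nu> \<Longrightarrow> f (opF r v) = opF r (f v)"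
  unfolding EndSet_def by blast
lemma End_H: "f \<in> EndSet r \<nu> \<Longrightarrow> v \<in> Pnu r \<nu> \<Longrightarrow> f (opH r v) = opH r (f v)"
  unfolding EndSet_def by blast
lemma End_S: "f \<in> EndSet r \<nu> \<Longrightarrow> v \<in> Pnu r \<nu> \<Longrightarrow> f (shiftP r v) = shiftP r (f v)"
  unfolding EndSet_def by blast
lemma End_out: "f \<in> EndSet r \<nu> \<Longrightarrow> v \<notin> Pnu r \<nu> \<Longrightarrow> f v = (\<lambda>x. 0)"
  unfolding EndSet_def by blast

lemma End_sum:
  assumes f: "f \<in> EndSet r \<nu>" and S: "finite S" "S \<subseteq> PS r \<nu>"
  shows "f (\<lambda>y. \<Sum>x\<in>S. c x * ev x y) = (\<lambda>y. \<Sum>x\<in>S. c x * f (ev x) y)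
     \<and> (\<lambda>y. \<Sum>x\<in>S. c x * ev x y) \<in> Pnu r \<nu>"
  using S
proof (induction S rule: finite_induct)
  case empty then show ?case using End_zero[OF f] by simp
next
  case (insert a S)
  then have a: "a \<in> PS r \<nu>" and IH: "f (\<lambda>y. \<Sum>x\<in>S. c x * ev x y) = (\<lambda>y. \<Sum>x\<in>S. c x * f (ev x) y)"
    "(\<lambda>y. \<Sum>x\<in>S. c x * ev x y) \<in> Pnu r \<nu>" by auto
  have e: "(\<lambda>y. c a * ev a y) \<in> Pnu r \<nu>" using a by (intro smul_Pnu) simp
  have eq: "(\<lambda>y. \<Sum>x\<in>insert a S. c x * ev x y) = (\<lambda>y. (\<lambda>y. c a * ev a y) y + (\<lambda>y. \<Sum>x\<in>S. c x * ev x y) y)"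
    using insert by simp
  show ?case
    unfolding eq
    using insert End_add[OF f e IH(2)] End_smul[OF f, of "ev a" "c a"] a IH add_Pnu[OF e IH(2)]
    by simp
qed

lemma End_lin:
  assumes f: "f \<in> EndSet r \<nu>" and v: "v \<in> Pnu r \<nu>"
  shows "f v = lin (\<lambda>x. f (ev x)) v"
proof -
  have fv: "fs v" using v by (simp add: Pnu_iff)
  have S: "finite {x. v x \<noteq> 0}" "{x. v x \<noteq> 0} \<subseteq> PS r \<nu>" using v by (auto simp: Pnu_iff fs_def)
  have "f v = f (\<lambda>y. \<Sum>x\<in>{x. v x \<noteq> 0}. v x * ev x y)" using fs_expand[OF fv] by simp
  also have "\<dots> = (\<lambda>y. \<Sum>x\<in>{x. v x \<noteq> 0}. v x * f (ev x) y)"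
    using End_sum[OF f S] by blast
  also have "\<dots> = lin (\<lambda>x. f (ev x)) v" by (simp add: lin_def)
  finally show ?thesis .
qed

lemma End_eqI:
  assumes f: "f \<in> EndSet r \<nu>" and g: "g \<in> EndSet r \<nu>"
    and e: "\<And>x. x \<in> PS r \<nu> \<Longrightarrow> f (ev x) = g (ev x)"
  shows "f = g"
proof
  fix v
  show "f v = g v"
  proof (cases "v \<in> Pnu r \<nu>")
    case True
    have "f v = lin (\<lambda>x. f (ev x)) v" by (rule End_lin[OF f True])
    also have "\<dots> = lin (\<lambda>x. g (ev x)) v"
      by (rule lin_cong) (use True e in \<open>auto simp: Pnu_iff\<close>)
    also have "\<dots> = g v" by (rule End_lin[OF g True, symmetric])
    finally show ?thesis .
  next
    case False then show ?thesis using End_out[OF f] End_out[OF g] by simp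
  qed
qed

lemma End_wt:
  assumes f: "f \<in> EndSet r \<nu>" and x: "x \<in> PS r \<nu>" and y: "f (ev x) y \<noteq> 0"
  shows "wt r y = wt r x"
proof -
  have "opH r (ev x) = (\<lambda>y. of_int (wt r x) * ev x y)" by (auto simp: opH_def ev_def fun_eq_iff)
  then have "f (opH r (ev x)) = (\<lambda>y. of_int (wt r x) * f (ev x) y)"
    using End_smul[OF f, of "ev x"] x by simp
  moreover have "f (opH r (ev x)) = opH r (f (ev x))" using End_H[OF f] x by simp
  ultimately have "of_int (wt r x) * f (ev x) y = of_int (wt r y) * f (ev x) y"
    by (metis opH_def)
  then show ?thesis using y by simp
qed

lemma End_shift_ev:
  assumes f: "f \<in> EndSet r \<nu>" and x: "x \<in> PS r \<nu>"
  shows "f (ev (fst x + sh r, snd x)) = shiftP r (f (ev x))"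
  using End_S[OF f, of "ev x"] x by (simp add: shiftP_ev)


definition jj :: "nat \<Rightarrow> nat \<Rightarrow> nat" where "jj r i = r - 2 - i"

lemma jjI: "r - Suc (Suc i) = jj r i" by (simp add: jj_def)
lemma jj_inv: "i + 2 \<le> r \<Longrightarrow> jj r (jj r i) = i" by (simp add: jj_def)
lemma jj_le: "i + 2 \<le> r \<Longrightarrow> jj r i + 2 \<le> r" by (simp add: jj_def)

definition sg :: "nat \<Rightarrow> int \<Rightarrow> complex" where "sg r k = qe r (- (k * int r))"

lemma sg_succ: "r > 0 \<Longrightarrow> sg r (k + 1) = - sg r k"
proof -
  assume r: "r > 0"
  have "qe r (- ((k + 1) * int r)) = qe r (- (k * int r)) * qe r (- int r)"
    by (subst qe_add[symmetric]) (simp add: algebra_simps)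
  also have "qe r (- int r) = -1" using qe_r[OF r] by (simp add: qe_neg)
  finally show ?thesis by (simp add: sg_def)
qed

lemma sg_pred: "r > 0 \<Longrightarrow> sg r (k - 1) = - sg r k"
  using sg_succ[of r "k - 1"] by simp

lemma sg_sq: "r > 0 \<Longrightarrow> sg r k * sg r k = 1"
proof -
  assume r: "r > 0"
  have "sg r k = (-1) ^ nat \<bar>- k\<bar>" using qe_mult_r[OF r, of "-k"] by (simp add: sg_def)
  moreover have "((-1::complex) ^ nat \<bar>- k\<bar>) * ((-1) ^ nat \<bar>- k\<bar>) = 1"
    by (simp add: power_add[symmetric])
  ultimately show ?thesis by simp
qed

lemma gam_sym: "gam r n (n - m + 1) = gam r n m"
  by (simp add: gam_def mult.commute)

fun prodg :: "nat \<Rightarrow> nat \<Rightarrow> nat \<Rightarrow> complex" where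
  "prodg r n 0 = 1"
| "prodg r n (Suc a) = prodg r n a * gam r (int n) (int n - int a)"

lemma Ecoef_alt: "Ecoef r (k, i, b) = (\<lambda>y. if fst y = k \<and> fst (snd y) = i then Eb r i b (snd (snd y)) else 0)"
  by (simp add: Ecoef_def fun_eq_iff)

lemma Fcoef_alt: "Fcoef r (k, i, b) = (\<lambda>y. sg r k * (if fst y = k \<and> fst (snd y) = i then Fb r i b (snd (snd y)) else 0))"
  by (simp add: Fcoef_def sg_def fun_eq_iff)

lemma lift_dl: "(\<lambda>y. if fst y = k \<and> fst (snd y) = i then dl z (snd (snd y)) else 0) = ev (k, i, z)"
  by (auto simp: ev_def dl_def fun_eq_iff prod_eq_iff)

lemma E_H0: "Ecoef r (k, i, Hb 0) = ev (k, i, Rb 0)"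
  by (auto simp: Ecoef_alt ev_def dl_def fun_eq_iff prod_eq_iff)
lemma E_H: "Ecoef r (k, i, Hb (Suc a)) = (\<lambda>y. gam r (int i) (int (Suc a)) * ev (k, i, Hb a) y + ev (k, i, Sb a) y)"
  by (auto simp: Ecoef_alt ev_def dl_def fun_eq_iff prod_eq_iff)
lemma E_S0: "Ecoef r (k, i, Sb 0) = (\<lambda>y. 0)"
  by (auto simp: Ecoef_alt fun_eq_iff)
lemma E_S: "Ecoef r (k, i, Sb (Suc a)) = (\<lambda>y. gam r (int i) (int (Suc a)) * ev (k, i, Sb a) y)"
  by (auto simp: Ecoef_alt ev_def dl_def fun_eq_iff prod_eq_iff)
lemma E_R: "a < jj r i \<Longrightarrow> Ecoef r (k, i, Rb a) = ev (k, i, Rb (Suc a))"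
  by (auto simp: Ecoef_alt ev_def dl_def fun_eq_iff jj_def prod_eq_iff)
lemma E_Rtop: "\<not> a < jj r i \<Longrightarrow> Ecoef r (k, i, Rb a) = (\<lambda>y. 0)"
  by (auto simp: Ecoef_alt fun_eq_iff jj_def)
lemma E_L0: "Ecoef r (k, i, Lb 0) = ev (k, i, Sb i)"
  by (auto simp: Ecoef_alt ev_def dl_def fun_eq_iff prod_eq_iff)
lemma E_L: "Ecoef r (k, i, Lb (Suc a)) = (\<lambda>y. (- gam r (int (jj r i)) (int (Suc a))) * ev (k, i, Lb a) y)"
  by (auto simp: Ecoef_alt ev_def dl_def fun_eq_iff jj_def prod_eq_iff)
lemma E_V0: "Ecoef r (k, i, Vb 0) = (\<lambda>y. 0)"
  by (auto simp: Ecoef_alt fun_eq_iff)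
lemma E_V: "Ecoef r (k, i, Vb (Suc a)) = (\<lambda>y. (qint r (int (Suc a)) * qint r (int r - int (Suc a))) * ev (k, i, Vb a) y)"
  by (auto simp: Ecoef_alt ev_def dl_def fun_eq_iff prod_eq_iff)

lemma F_H: "a < i \<Longrightarrow> Fcoef r (k, i, Hb a) = (\<lambda>y. sg r k * ev (k, i, Hb (Suc a)) y)"
  by (auto simp: Fcoef_alt ev_def dl_def fun_eq_iff prod_eq_iff)
lemma F_Hbot: "\<not> a < i \<Longrightarrow> Fcoef r (k, i, Hb a) = (\<lambda>y. sg r k * ev (k, i, Lb 0) y)"
  by (auto simp: Fcoef_alt ev_def dl_def fun_eq_iff prod_eq_iff)
lemma F_S: "a < i \<Longrightarrow> Fcoef r (k, i, Sb a) = (\<lambda>y. sg r k * ev (k, i, Sb (Suc a)) y)"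
  by (auto simp: Fcoef_alt ev_def dl_def fun_eq_iff prod_eq_iff)
lemma F_Sbot: "\<not> a < i \<Longrightarrow> Fcoef r (k, i, Sb a) = (\<lambda>y. 0)"
  by (auto simp: Fcoef_alt fun_eq_iff)
lemma F_L: "a < jj r i \<Longrightarrow> Fcoef r (k, i, Lb a) = (\<lambda>y. sg r k * ev (k, i, Lb (Suc a)) y)"
  by (auto simp: Fcoef_alt ev_def dl_def fun_eq_iff jj_def prod_eq_iff)
lemma F_Lbot: "\<not> a < jj r i \<Longrightarrow> Fcoef r (k, i, Lb a) = (\<lambda>y. 0)"
  by (auto simp: Fcoef_alt fun_eq_iff jj_def)
lemma F_R0: "Fcoef r (k, i, Rb 0) = (\<lambda>y. sg r k * ev (k, i, Sb 0) y)"
  by (auto simp: Fcoef_alt ev_def dl_def fun_eq_iff prod_eq_iff)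
lemma F_R: "Fcoef r (k, i, Rb (Suc a)) = (\<lambda>y. (sg r k * (- gam r (int (jj r i)) (int (Suc a)))) * ev (k, i, Rb a) y)"
  by (auto simp: Fcoef_alt ev_def dl_def fun_eq_iff jj_def prod_eq_iff)
lemma F_V: "a + 1 < r \<Longrightarrow> Fcoef r (k, i, Vb a) = (\<lambda>y. sg r k * ev (k, i, Vb (Suc a)) y)"
  by (auto simp: Fcoef_alt ev_def dl_def fun_eq_iff prod_eq_iff)
lemma F_Vbot: "\<not> a + 1 < r \<Longrightarrow> Fcoef r (k, i, Vb a) = (\<lambda>y. 0)"
  by (auto simp: Fcoef_alt fun_eq_iff)

lemma fs_add_simp[simp]: "fs v \<Longrightarrow> fs w \<Longrightarrow> fs (\<lambda>x. v x + w x)" by (rule fs_add)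
lemma fs_smul_simp[simp]: "fs v \<Longrightarrow> fs (\<lambda>x. c * v x)" by (rule fs_smul)
lemma lin_add_simp[simp]: "fs v \<Longrightarrow> fs w \<Longrightarrow> lin M (\<lambda>x. v x + w x) = (\<lambda>y. lin M v y + lin M w y)"
  by (rule lin_add)
lemma lin_smul_simp[simp]: "fs v \<Longrightarrow> lin M (\<lambda>x. c * v x) = (\<lambda>y. c * lin M v y)"
  by (rule lin_smul)
lemma fs_neg_simp[simp]: "fs v \<Longrightarrow> fs (\<lambda>x. - v x)"
  using fs_smul[of v "-1"] by simp
lemma lin_neg_simp[simp]: "fs v \<Longrightarrow> lin M (\<lambda>x. - v x) = (\<lambda>y. - lin M v y)"
  using lin_smul[of v M "-1"] by simp
lemma fs_diff_simp[simp]: "fs v \<Longrightarrow> fs w \<Longrightarrow> fs (\<lambda>x. v x - w x)"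
  using fs_add[of v "\<lambda>x. - w x"] by simp
lemma lin_diff_simp[simp]: "fs v \<Longrightarrow> fs w \<Longrightarrow> lin M (\<lambda>x. v x - w x) = (\<lambda>y. lin M v y - lin M w y)"
  using lin_add[of v "\<lambda>x. - w x" M] by simp


section \<open>The general matrix\<close>

type_synonym cf = "int \<Rightarrow> nat \<Rightarrow> complex"

fun Mrow :: "nat \<Rightarrow> cf \<Rightarrow> cf \<Rightarrow> cf \<Rightarrow> cf \<Rightarrow> pidx \<Rightarrow> pvec" where
  "Mrow r A B G D (k, i, Hb a) = (\<lambda>y. A k i * ev (k, i, Hb a) y + (B k i * ev (k, i, Sb a) y
      + ((G k i * (-1) ^ a) * ev (k + 1, jj r i, Lb a) y
      + (D k i * prodg r i a) * ev (k - 1, jj r i, Rb (i - a)) y)))"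
| "Mrow r A B G D (k, i, Sb a) = (\<lambda>y. A k i * ev (k, i, Sb a) y)"
| "Mrow r A B G D (k, i, Rb a) = (\<lambda>y. A k i * ev (k, i, Rb a) y
      + (G k i * prodg r (jj r i) a) * ev (k + 1, jj r i, Sb (jj r i - a)) y)"
| "Mrow r A B G D (k, i, Lb a) = (\<lambda>y. A k i * ev (k, i, Lb a) y
      + (- (D k i * prodg r i i * (-1) ^ a)) * ev (k - 1, jj r i, Sb a) y)"
| "Mrow r A B G D (k, i, Vb a) = (\<lambda>y. A k i * ev (k, i, Vb a) y)"

lemmas Elems = E_H0 E_H E_S0 E_S E_L0 E_L E_V0 E_V
lemmas Flems = F_H F_Hbot F_S F_Sbot F_L F_Lbot F_R0 F_R F_V F_Vbot

lemma rowE_H0: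
  assumes "i + 2 \<le> r"
  shows "lin (Mrow r A B G D) (Ecoef r (k, i, Hb 0)) = lin (Ecoef r) (Mrow r A B G D (k, i, Hb 0))"
proof -
  have j: "jj r (jj r i) = i" using assms by (rule jj_inv)
  show ?thesis by (simp add: Elems E_Rtop j, (simp add: fun_eq_iff)?)
qed

lemma rowE_H:
  assumes "i + 2 \<le> r" "Suc a \<le> i"
  shows "lin (Mrow r A B G D) (Ecoef r (k, i, Hb (Suc a))) = lin (Ecoef r) (Mrow r A B G D (k, i, Hb (Suc a)))"
proof -
  have j: "jj r (jj r i) = i" using assms by (intro jj_inv) simp
  have lt: "i - Suc a < i" using assms by simp
  have s: "Suc (i - Suc a) = i - a" using assms by simp
  have g: "gam r (int i) (int i - int a) = gam r (int i) (int (Suc a))"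
    using gam_sym[of r "int i" "int (Suc a)"] by simp
  show ?thesis using lt by (simp add: Elems E_R j s g, (simp add: fun_eq_iff algebra_simps)?)
qed

lemma rowE_S:
  shows "lin (Mrow r A B G D) (Ecoef r (k, i, Sb a)) = lin (Ecoef r) (Mrow r A B G D (k, i, Sb a))"
  by (cases a) (simp_all add: Elems, (simp add: fun_eq_iff algebra_simps)?)

lemma rowE_R:
  assumes "i + 2 \<le> r" "a \<le> jj r i"
  shows "lin (Mrow r A B G D) (Ecoef r (k, i, Rb a)) = lin (Ecoef r) (Mrow r A B G D (k, i, Rb a))"
proof (cases "a < jj r i")
  case True
  have s: "jj r i - a = Suc (jj r i - Suc a)" using True by simp
  have g: "int (Suc (jj r i - Suc a)) = int (jj r i) - int a" using True by simp
  show ?thesis using True by (simp add: Elems E_R s g, (simp add: fun_eq_iff algebra_simps)?)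
next
  case False
  then have a: "a = jj r i" using assms by simp
  show ?thesis using False by (simp add: Elems E_Rtop a, (simp add: fun_eq_iff)?)
qed

lemma rowE_L:
  assumes "i + 2 \<le> r"
  shows "lin (Mrow r A B G D) (Ecoef r (k, i, Lb a)) = lin (Ecoef r) (Mrow r A B G D (k, i, Lb a))"
proof (cases a)
  case 0
  then show ?thesis by (simp add: Elems, (simp add: fun_eq_iff)?)
next
  case (Suc b)
  show ?thesis using Suc by (simp add: Elems, (simp add: fun_eq_iff algebra_simps)?)
qed

lemma rowE_V:
  shows "lin (Mrow r A B G D) (Ecoef r (k, i, Vb a)) = lin (Ecoef r) (Mrow r A B G D (k, i, Vb a))"
  by (cases a) (simp_all add: Elems, (simp add: fun_eq_iff algebra_simps)?)

lemma rowF_H: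
  assumes r: "i + 2 \<le> r" and a: "a < i"
  shows "lin (Mrow r A B G D) (Fcoef r (k, i, Hb a)) = lin (Fcoef r) (Mrow r A B G D (k, i, Hb a))"
proof -
  have r0: "r > 0" using r by simp
  have j: "jj r (jj r i) = i" using r by (rule jj_inv)
  have s: "i - a = Suc (i - Suc a)" using a by simp
  have g: "int (Suc (i - Suc a)) = int i - int a" using a by simp
  show ?thesis using a
    by (simp add: Flems j s g sg_succ[OF r0] sg_pred[OF r0], (simp add: fun_eq_iff algebra_simps)?)
qed

lemma rowF_Hbot:
  assumes r: "i + 2 \<le> r"
  shows "lin (Mrow r A B G D) (Fcoef r (k, i, Hb i)) = lin (Fcoef r) (Mrow r A B G D (k, i, Hb i))"
proof -
  have r0: "r > 0" using r by simp
  have j: "jj r (jj r i) = i" using r by (rule jj_inv)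
  show ?thesis
    by (simp add: Flems j sg_succ[OF r0] sg_pred[OF r0], (simp add: fun_eq_iff algebra_simps)?)
qed

lemma rowF_S:
  shows "lin (Mrow r A B G D) (Fcoef r (k, i, Sb a)) = lin (Fcoef r) (Mrow r A B G D (k, i, Sb a))"
  by (cases "a < i") (simp_all add: Flems, (simp add: fun_eq_iff algebra_simps)?)

lemma rowF_R:
  assumes r: "i + 2 \<le> r" and a: "a \<le> jj r i"
  shows "lin (Mrow r A B G D) (Fcoef r (k, i, Rb a)) = lin (Fcoef r) (Mrow r A B G D (k, i, Rb a))"
proof (cases a)
  case 0
  have r0: "r > 0" using r by simp
  show ?thesis using 0 by (simp add: Flems sg_succ[OF r0] sg_pred[OF r0], (simp add: fun_eq_iff algebra_simps)?)
next
  case (Suc b)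
  have r0: "r > 0" using r by simp
  have lt: "jj r i - Suc b < jj r i" using Suc a by simp
  have s: "Suc (jj r i - Suc b) = jj r i - b" using Suc a by simp
  have g: "gam r (int (jj r i)) (int (jj r i) - int b) = gam r (int (jj r i)) (int (Suc b))"
    using gam_sym[of r "int (jj r i)" "int (Suc b)"] Suc a by simp
  show ?thesis using Suc lt
    by (simp add: Flems s g sg_succ[OF r0] sg_pred[OF r0], (simp add: fun_eq_iff algebra_simps)?)
qed

lemma rowF_L:
  assumes r: "i + 2 \<le> r"
  shows "lin (Mrow r A B G D) (Fcoef r (k, i, Lb a)) = lin (Fcoef r) (Mrow r A B G D (k, i, Lb a))"
proof -
  have r0: "r > 0" using r by simp
  show ?thesis
    by (cases "a < jj r i") (simp_all add: Flems sg_succ[OF r0] sg_pred[OF r0], (simp add: fun_eq_iff algebra_simps)?)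
qed

lemma rowF_V:
  shows "lin (Mrow r A B G D) (Fcoef r (k, i, Vb a)) = lin (Fcoef r) (Mrow r A B G D (k, i, Vb a))"
  by (cases "a + 1 < r") (simp_all add: Flems, (simp add: fun_eq_iff algebra_simps)?)


lemma int_jj: "i + 2 \<le> r \<Longrightarrow> int (jj r i) = int r - 2 - int i"
  by (simp add: jj_def)

lemma lab_wt_par: "valid_lab r i b \<Longrightarrow> lab_wt r i b mod 2 = int i mod 2"
proof (cases b)
  case (Hb a)
  have "lab_wt r i b = int i - 2 * int a" using Hb by simp
  then show ?thesis by presburger
next
  case (Sb a)
  have "lab_wt r i b = int i - 2 * int a" using Sb by simp
  then show ?thesis by presburger
next
  case (Rb a)
  have "lab_wt r i b = int i + 2 * (1 + int a)" using Rb by simp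
  then show ?thesis by presburger
next
  case (Lb a)
  have "lab_wt r i b = - 2 * (1 + int a) - int i" using Lb by simp
  then show ?thesis by presburger
next
  case (Vb a)
  assume v: "valid_lab r i b"
  then have "int r = int i + 1" using Vb by simp
  then have "lab_wt r i b = int i - 2 * int a" using Vb by simp
  then show ?thesis by presburger
qed

definition sumPS :: "nat \<Rightarrow> int \<Rightarrow> int \<Rightarrow> nat \<Rightarrow> bool" where
  "sumPS r \<nu> k i \<longleftrightarrow> i < r \<and> (k * int r + int i) mod 2 = \<nu>"

lemma PS_iff: "(k, i, b) \<in> PS r \<nu> \<longleftrightarrow> sumPS r \<nu> k i \<and> valid_lab r i b"
proof -
  have "valid_lab r i b \<Longrightarrow> (k * int r + lab_wt r i b) mod 2 = (k * int r + int i) mod 2"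
    using lab_wt_par[of r i b] by (metis mod_add_right_eq)
  then show ?thesis by (auto simp: PS_def valid_def wt_def sumPS_def)
qed

lemma valid_lab_i: "valid_lab r i b \<Longrightarrow> i < r"
  by (cases b) auto

lemma sumPS_nb:
  assumes "i + 2 \<le> r" "sumPS r \<nu> k i"
  shows "sumPS r \<nu> (k + 1) (jj r i) \<and> sumPS r \<nu> (k - 1) (jj r i)"
proof -
  have jj: "int (jj r i) = int r - 2 - int i" using assms by (intro int_jj) simp
  have e1: "(k + 1) * int r + int (jj r i) = (k * int r + int i) + 2 * (int r - 1 - int i)"
    using jj by (simp add: algebra_simps)
  have e2: "(k - 1) * int r + int (jj r i) = (k * int r + int i) + 2 * (- 1 - int i)"
    using jj by (simp add: algebra_simps)
  have lt: "jj r i < r" using assms by (simp add: jj_def)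
  have pr: "\<forall>X::int. (X + int i) mod 2 = \<nu> \<longrightarrow> (X + int i + 2 * (int r - 1 - int i)) mod 2 = \<nu>
     \<and> (X + int i + 2 * (- 1 - int i)) mod 2 = \<nu>" by presburger
  show ?thesis using assms(2) lt pr[rule_format, of "k * int r"] unfolding sumPS_def e1 e2 by blast
qed

lemma fs_Mrow[simp]: "fs (Mrow r A B G D x)"
proof -
  obtain k i b where x: "x = (k, i, b)" by (cases x) auto
  show ?thesis unfolding x by (cases b) simp_all
qed

lemma Mrow_supp:
  assumes x: "x \<in> PS r \<nu>" and y: "Mrow r A B G D x y \<noteq> 0"
  shows "y \<in> PS r \<nu> \<and> wt r y = wt r x"
proof -
  obtain k i b where xx: "x = (k, i, b)" by (cases x) auto
  have sx: "sumPS r \<nu> k i" and vb: "valid_lab r i b" using x by (auto simp: xx PS_iff)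
  show ?thesis
  proof (cases b)
    case (Hb a)
    then have ir: "i + 2 \<le> r" "a \<le> i" using vb by auto
    have jj: "int (jj r i) = int r - 2 - int i" using ir by (intro int_jj) simp
    have s1: "sumPS r \<nu> (k + 1) (jj r i)" "sumPS r \<nu> (k - 1) (jj r i)"
      using sumPS_nb[OF ir(1) sx] by auto
    show ?thesis using y Hb ir jj sx s1
      by (auto simp: xx ev_def PS_iff wt_def algebra_simps jj_def split: if_splits)
  next
    case (Sb a)
    then show ?thesis using y vb sx by (auto simp: xx ev_def PS_iff split: if_splits)
  next
    case (Rb a)
    then have ir: "i + 2 \<le> r" "a \<le> jj r i" using vb by (auto simp: jj_def)
    have jj: "int (jj r i) = int r - 2 - int i" using ir by (intro int_jj) simp
    have s1: "sumPS r \<nu> (k + 1) (jj r i)"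
      using sumPS_nb[OF ir(1) sx] by auto
    show ?thesis using y Rb ir jj sx s1
      by (auto simp: xx ev_def PS_iff wt_def algebra_simps jj_def split: if_splits)
  next
    case (Lb a)
    then have ir: "i + 2 \<le> r" "a \<le> jj r i" using vb by (auto simp: jj_def)
    have jj: "int (jj r i) = int r - 2 - int i" using ir by (intro int_jj) simp
    have s1: "sumPS r \<nu> (k - 1) (jj r i)"
      using sumPS_nb[OF ir(1) sx] by auto
    show ?thesis using y Lb ir jj sx s1
      by (auto simp: xx ev_def PS_iff wt_def algebra_simps jj_def split: if_splits)
  next
    case (Vb a)
    then show ?thesis using y vb sx by (auto simp: xx ev_def PS_iff split: if_splits)
  qed
qed


lemma Mrow_EndSet:
  assumes pA: "\<And>k i. A (k + sh r) i = A k i" and pB: "\<And>k i. B (k + sh r) i = B k i"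
    and pG: "\<And>k i. G (k + sh r) i = G k i" and pD: "\<And>k i. D (k + sh r) i = D k i"
  shows "mapM r \<nu> (Mrow r A B G D) \<in> EndSet r \<nu>"
proof (rule mapM_EndSet)
  fix x assume x: "x \<in> PS r \<nu>"
  show "Mrow r A B G D x \<in> Pnu r \<nu>"
    unfolding Pnu_iff using Mrow_supp[OF x] by auto
  show "\<And>y. Mrow r A B G D x y \<noteq> 0 \<Longrightarrow> wt r y = wt r x"
    using Mrow_supp[OF x] by auto
  obtain k i b where xx: "x = (k, i, b)" by (cases x) auto
  have vb: "valid_lab r i b" using x by (simp add: xx PS_iff)
  show "lin (Mrow r A B G D) (Ecoef r x) = lin (Ecoef r) (Mrow r A B G D x)"
  proof (cases b)
    case (Hb a)
    show ?thesis
    proof (cases a)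
      case 0 then show ?thesis using Hb vb by (simp add: xx rowE_H0)
    next
      case (Suc a') then show ?thesis using Hb vb by (simp add: xx rowE_H)
    qed
  next
    case (Sb a) then show ?thesis by (simp add: xx rowE_S)
  next
    case (Rb a) then show ?thesis using vb by (simp add: xx rowE_R jj_def)
  next
    case (Lb a) then show ?thesis using vb by (simp add: xx rowE_L)
  next
    case (Vb a) then show ?thesis by (simp add: xx rowE_V)
  qed
  show "lin (Mrow r A B G D) (Fcoef r x) = lin (Fcoef r) (Mrow r A B G D x)"
  proof (cases b)
    case (Hb a)
    show ?thesis
    proof (cases "a < i")
      case True then show ?thesis using Hb vb by (simp add: xx rowF_H)
    next
      case False then have "a = i" using Hb vb by simp
      then show ?thesis using Hb vb by (simp add: xx rowF_Hbot)
    qed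
  next
    case (Sb a) then show ?thesis by (simp add: xx rowF_S)
  next
    case (Rb a) then show ?thesis using vb by (simp add: xx rowF_R jj_def)
  next
    case (Lb a) then show ?thesis using vb by (simp add: xx rowF_L)
  next
    case (Vb a) then show ?thesis by (simp add: xx rowF_V)
  qed
  show "Mrow r A B G D (fst x + sh r, snd x) = shiftP r (Mrow r A B G D x)"
    by (cases b) (auto simp: xx shiftP_alt ev_def fun_eq_iff prod_eq_iff pA pB pG pD algebra_simps)
qed

lemma Mrow_top:
  assumes "i + 2 \<le> r"
  shows "Mrow r A B G D (k, i, Hb 0) (k, i, Hb 0) = A k i"
    "Mrow r A B G D (k, i, Hb 0) (k, i, Sb 0) = B k i"
    "Mrow r A B G D (k, i, Hb 0) (k + 1, jj r i, Lb 0) = G k i"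
    "Mrow r A B G D (k, i, Hb 0) (k - 1, jj r i, Rb i) = D k i"
  by (simp_all add: ev_def)

lemma Mrow_topV: "Mrow r A B G D (k, i, Vb 0) (k, i, Vb 0) = A k i"
  by (simp add: ev_def)

section \<open>Generation: maps are determined by their values on tops\<close>

definition top :: "nat \<Rightarrow> int \<Rightarrow> nat \<Rightarrow> pidx" where
  "top r k i = (if i + 2 \<le> r then (k, i, Hb 0) else (k, i, Vb 0))"

lemma sg_nz: "sg r k \<noteq> 0" by (simp add: sg_def qe_def)

lemma gen_E:
  assumes f: "f \<in> EndSet r \<nu>" and g: "g \<in> EndSet r \<nu>" and x: "x \<in> PS r \<nu>"
    and e: "f (ev x) = g (ev x)"
  shows "f (Ecoef r x) = g (Ecoef r x)"
  using End_E[OF f, of "ev x"] End_E[OF g, of "ev x"] x e by (simp add: opE_lin)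

lemma gen_F:
  assumes f: "f \<in> EndSet r \<nu>" and g: "g \<in> EndSet r \<nu>" and x: "x \<in> PS r \<nu>"
    and e: "f (ev x) = g (ev x)"
  shows "f (Fcoef r x) = g (Fcoef r x)"
  using End_F[OF f, of "ev x"] End_F[OF g, of "ev x"] x e by (simp add: opF_lin)

lemma gen_smul:
  assumes f: "f \<in> EndSet r \<nu>" and g: "g \<in> EndSet r \<nu>" and p: "p \<in> PS r \<nu>"
    and e: "f (\<lambda>y. c * ev p y) = g (\<lambda>y. c * ev p y)" and c: "c \<noteq> 0"
  shows "f (ev p) = g (ev p)"
proof -
  have "(\<lambda>y. c * f (ev p) y) = (\<lambda>y. c * g (ev p) y)"
    using e End_smul[OF f, of "ev p" c] End_smul[OF g, of "ev p" c] p by simp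
  then show ?thesis using c by (simp add: fun_eq_iff)
qed

lemma gen_add:
  assumes f: "f \<in> EndSet r \<nu>" and g: "g \<in> EndSet r \<nu>" and p: "p \<in> PS r \<nu>" and q: "q \<in> PS r \<nu>"
    and e: "f (\<lambda>y. c * ev p y + ev q y) = g (\<lambda>y. c * ev p y + ev q y)"
    and ep: "f (ev p) = g (ev p)"
  shows "f (ev q) = g (ev q)"
proof -
  have cp: "(\<lambda>y. c * ev p y) \<in> Pnu r \<nu>" using p by (intro smul_Pnu) simp
  have "f (\<lambda>y. c * ev p y + ev q y) = (\<lambda>y. c * f (ev p) y + f (ev q) y)"
    using End_add[OF f cp, of "ev q"] End_smul[OF f, of "ev p" c] p q by simp
  moreover have "g (\<lambda>y. c * ev p y + ev q y) = (\<lambda>y. c * g (ev p) y + g (ev q) y)"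
    using End_add[OF g cp, of "ev q"] End_smul[OF g, of "ev p" c] p q by simp
  ultimately show ?thesis using e ep by (simp add: fun_eq_iff)
qed

lemma End_eq_tops:
  assumes f: "f \<in> EndSet r \<nu>" and g: "g \<in> EndSet r \<nu>"
    and t: "\<And>k i. sumPS r \<nu> k i \<Longrightarrow> f (ev (top r k i)) = g (ev (top r k i))"
  shows "f = g"
proof (rule End_eqI[OF f g])
  fix x assume x: "x \<in> PS r \<nu>"
  obtain k i b where xx: "x = (k, i, b)" by (cases x) auto
  have sx: "sumPS r \<nu> k i" and vb: "valid_lab r i b" using x by (auto simp: xx PS_iff)
  have P: "\<And>b. valid_lab r i b \<Longrightarrow> (k, i, b) \<in> PS r \<nu>" using sx by (simp add: PS_iff)
  show "f (ev x) = g (ev x)"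
  proof (cases "i + 2 \<le> r")
    case ir: True
    have H: "\<And>a. a \<le> i \<Longrightarrow> f (ev (k, i, Hb a)) = g (ev (k, i, Hb a))"
    proof -
      fix a show "a \<le> i \<Longrightarrow> f (ev (k, i, Hb a)) = g (ev (k, i, Hb a))"
      proof (induction a)
        case 0 then show ?case using t[OF sx] ir by (simp add: top_def)
      next
        case (Suc a)
        then have a: "a < i" by simp
        have "f (Fcoef r (k, i, Hb a)) = g (Fcoef r (k, i, Hb a))"
          by (rule gen_F[OF f g]) (use P ir a Suc in auto)
        then show ?case using a ir by (intro gen_smul[OF f g P _ sg_nz]) (auto simp: F_H)
      qed
    qed
    have L: "\<And>a. a \<le> jj r i \<Longrightarrow> f (ev (k, i, Lb a)) = g (ev (k, i, Lb a))"
    proof -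
      fix a show "a \<le> jj r i \<Longrightarrow> f (ev (k, i, Lb a)) = g (ev (k, i, Lb a))"
      proof (induction a)
        case 0
        have "f (Fcoef r (k, i, Hb i)) = g (Fcoef r (k, i, Hb i))"
          by (rule gen_F[OF f g]) (use P ir H in auto)
        then show ?case using ir by (intro gen_smul[OF f g P _ sg_nz]) (auto simp: F_Hbot jj_def)
      next
        case (Suc a)
        then have a: "a < jj r i" by simp
        have "f (Fcoef r (k, i, Lb a)) = g (Fcoef r (k, i, Lb a))"
          by (rule gen_F[OF f g]) (use P ir a Suc in \<open>auto simp: jj_def\<close>)
        then show ?case using a ir by (intro gen_smul[OF f g P _ sg_nz]) (auto simp: F_L jj_def)
      qed
    qed
    have R: "\<And>a. a \<le> jj r i \<Longrightarrow> f (ev (k, i, Rb a)) = g (ev (k, i, Rb a))"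
    proof -
      fix a show "a \<le> jj r i \<Longrightarrow> f (ev (k, i, Rb a)) = g (ev (k, i, Rb a))"
      proof (induction a)
        case 0
        have "f (Ecoef r (k, i, Hb 0)) = g (Ecoef r (k, i, Hb 0))"
          by (rule gen_E[OF f g]) (use P ir H in auto)
        then show ?case by (simp add: E_H0)
      next
        case (Suc a)
        then have a: "a < jj r i" by simp
        have "f (Ecoef r (k, i, Rb a)) = g (Ecoef r (k, i, Rb a))"
          by (rule gen_E[OF f g]) (use P ir a Suc in \<open>auto simp: jj_def\<close>)
        then show ?case using a by (simp add: E_R)
      qed
    qed
    have S: "\<And>a. a \<le> i \<Longrightarrow> f (ev (k, i, Sb a)) = g (ev (k, i, Sb a))"
    proof -
      fix a assume a: "a \<le> i"
      show "f (ev (k, i, Sb a)) = g (ev (k, i, Sb a))"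
      proof (cases "a < i")
        case True
        have "f (Ecoef r (k, i, Hb (Suc a))) = g (Ecoef r (k, i, Hb (Suc a)))"
          by (rule gen_E[OF f g]) (use P ir H True in auto)
        then have e: "f (\<lambda>y. gam r (int i) (int (Suc a)) * ev (k, i, Hb a) y + ev (k, i, Sb a) y)
            = g (\<lambda>y. gam r (int i) (int (Suc a)) * ev (k, i, Hb a) y + ev (k, i, Sb a) y)"
          by (simp add: E_H)
        have ep: "f (ev (k, i, Hb a)) = g (ev (k, i, Hb a))" using H True by simp
        have p1: "(k, i, Hb a) \<in> PS r \<nu>" and p2: "(k, i, Sb a) \<in> PS r \<nu>"
          using P ir True by auto
        show ?thesis by (rule gen_add[OF f g p1 p2 e ep])
      next
        case False
        then have ai: "a = i" using a by simp
        have "f (Ecoef r (k, i, Lb 0)) = g (Ecoef r (k, i, Lb 0))"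
          by (rule gen_E[OF f g]) (use P ir L in \<open>auto simp: jj_def\<close>)
        then show ?thesis using ai by (simp add: E_L0)
      qed
    qed
    show ?thesis
      using vb ir H S R L by (cases b) (auto simp: xx jj_def)
  next
    case ir: False
    then have ri: "r = i + 1" using sx by (simp add: sumPS_def)
    have V: "\<And>a. a < r \<Longrightarrow> f (ev (k, i, Vb a)) = g (ev (k, i, Vb a))"
    proof -
      fix a show "a < r \<Longrightarrow> f (ev (k, i, Vb a)) = g (ev (k, i, Vb a))"
      proof (induction a)
        case 0 then show ?case using t[OF sx] ir by (simp add: top_def)
      next
        case (Suc a)
        then have a: "a + 1 < r" by simp
        have "f (Fcoef r (k, i, Vb a)) = g (Fcoef r (k, i, Vb a))"
          by (rule gen_F[OF f g]) (use P ri a Suc in auto)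
        then show ?case using a by (intro gen_smul[OF f g P _ sg_nz]) (auto simp: F_V ri)
      qed
    qed
    show ?thesis using vb ir V by (cases b) (auto simp: xx)
  qed
qed


lemma qe_cis: "qe r x = cis (pi * of_int x / of_nat r)"
  by (simp add: qe_def cis_conv_exp mult_ac)

lemma qe_plus_neg: "qe r x + qe r (- x) = of_real (2 * cos (pi * of_int x / of_nat r))"
  by (simp add: qe_cis complex_eq_iff)

lemma qbr_sin: "qbr r x = \<i> * of_real (2 * sin (pi * of_int x / of_nat r))"
  by (simp add: qbr_def qe_cis complex_eq_iff)

lemma qbr1_nz: "r \<ge> 2 \<Longrightarrow> qbr r 1 \<noteq> 0"
proof -
  assume r: "r \<ge> 2"
  have "0 < pi / real r" using r by simp
  moreover have "pi / real r < pi" using r by (simp add: divide_less_eq)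
  ultimately have "sin (pi / real r) > 0" by (rule sin_gt_zero)
  then show ?thesis by (simp add: qbr_sin)
qed

lemma qbr_prod: "qbr r x * qbr r y = qe r (x + y) - qe r (x - y) - qe r (y - x) + qe r (- x - y)"
proof -
  have "qbr r x * qbr r y = qe r x * qe r y - qe r x * qe r (- y) - qe r (- x) * qe r y + qe r (- x) * qe r (- y)"
    by (simp add: qbr_def algebra_simps)
  also have "\<dots> = qe r (x + y) - qe r (x - y) - qe r (y - x) + qe r (- x - y)"
    by (simp add: qe_add[symmetric] algebra_simps)
  finally show ?thesis .
qed

lemma qint_prod:
  assumes "r \<ge> 2"
  shows "qint r x * qint r y = (qe r (x + y) - qe r (x - y) - qe r (y - x) + qe r (- x - y)) / (qbr r 1)\<^sup>2"
  using qbr1_nz[OF assms] by (simp add: qint_def qbr_prod[symmetric] power2_eq_square)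

lemma qe_plus_r: "r > 0 \<Longrightarrow> qe r (x + int r) = - qe r x"
  by (simp add: qe_add qe_r)

definition cphi :: "nat \<Rightarrow> int \<Rightarrow> complex" where
  "cphi r m = (qe r (m - 1) + qe r (1 - m)) / (qbr r 1)\<^sup>2"

definition c0 :: "nat \<Rightarrow> nat \<Rightarrow> complex" where
  "c0 r i = (qe r (int i + 1) + qe r (- (int i + 1))) / (qbr r 1)\<^sup>2"

definition cval :: "nat \<Rightarrow> int \<Rightarrow> nat \<Rightarrow> complex" where
  "cval r k i = sg r k * c0 r i"

lemma qe_kr: "r > 0 \<Longrightarrow> qe r (k * int r) = sg r k"
  using qe_mult_r[of r k] qe_mult_r[of r "-k"] by (simp add: sg_def)

lemma cphi_shift: "r > 0 \<Longrightarrow> cphi r (k * int r + m) = sg r k * cphi r m"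
proof -
  assume r: "r > 0"
  have "qe r (k * int r + m - 1) = sg r k * qe r (m - 1)"
    using qe_add[of r "k * int r" "m - 1"] qe_kr[OF r] by (simp add: algebra_simps)
  moreover have "qe r (1 - (k * int r + m)) = sg r k * qe r (1 - m)"
    using qe_add[of r "- (k * int r)" "1 - m"] by (simp add: sg_def algebra_simps)
  ultimately show ?thesis by (simp add: cphi_def algebra_simps add_divide_distrib)
qed

lemma idH:
  assumes "r \<ge> 2"
  shows "qint r (a + 1) * qint r (i - a) + cphi r (i - 2 * a) = (qe r (i + 1) + qe r (- (i + 1))) / (qbr r 1)\<^sup>2"
proof -
  have args: "a + 1 + (i - a) = i + 1" "a + 1 - (i - a) = 1 - (i - 2 * a)" "i - a - (a + 1) = i - 2 * a - 1"
    "- (a + 1) - (i - a) = - (i + 1)" by simp_all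
  have "qint r (a + 1) * qint r (i - a) + cphi r (i - 2 * a)
     = (qe r (i + 1) - qe r (1 - (i - 2 * a)) - qe r (i - 2 * a - 1) + qe r (- (i + 1))) / (qbr r 1)\<^sup>2
       + (qe r (i - 2 * a - 1) + qe r (1 - (i - 2 * a))) / (qbr r 1)\<^sup>2"
    by (simp only: qint_prod[OF assms] cphi_def args)
  also have "\<dots> = (qe r (i + 1) + qe r (- (i + 1))) / (qbr r 1)\<^sup>2"
    by (simp only: add_divide_distrib[symmetric]) (simp add: algebra_simps)
  finally show ?thesis .
qed


lemma cphi_sym: "cphi r (2 - m) = cphi r m"
  by (simp add: cphi_def algebra_simps)

lemma cphi_wt: "r > 0 \<Longrightarrow> cphi r (wt r (k, i, b)) = sg r k * cphi r (lab_wt r i b)"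
  by (simp add: wt_def cphi_shift)

lemma div_aux:
  fixes P X Y W Q g c d :: complex
  assumes "g = (- P + X + Y - W) / Q" "c = (X + Y) / Q" "d = (W + P) / Q"
  shows "g = c - d"
  using assms by (simp add: diff_divide_distrib add_divide_distrib)

lemma div_aux2:
  fixes P X Y W Q :: complex
  shows "(- P - - X - - Y + - W) / Q = (- P + X + Y - W) / Q"
  by simp

lemma idH_gam:
  assumes "r \<ge> 2"
  shows "gam r (int i) (int (Suc a)) = c0 r i - cphi r (int i - 2 * int a)"
proof -
  have e1: "int (Suc a) = int a + 1" and e2: "int i - (int a + 1) + 1 = int i - int a" by simp_all
  have "gam r (int i) (int (Suc a)) = qint r (int a + 1) * qint r (int i - int a)"
    unfolding gam_def e1 e2 ..
  then show ?thesis using idH[OF assms, of "int a" "int i"] unfolding c0_def by (simp add: eq_diff_eq)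
qed

lemma idV_q:
  assumes "r \<ge> 2" "a + 1 < r"
  shows "qint r (int (Suc a)) * qint r (int r - int (Suc a)) = c0 r (r - 1) - cphi r (int r - 1 - 2 * int a)"
proof -
  have i: "int (r - 1) = int r - 1" using assms by simp
  have e1: "int (Suc a) = int a + 1" and e2: "int r - (int a + 1) = int (r - 1) - int a"
    using i by simp_all
  have e3: "int (r - 1) - 2 * int a = int r - 1 - 2 * int a" using i by simp
  have "qint r (int (Suc a)) * qint r (int r - int (Suc a)) = qint r (int a + 1) * qint r (int (r - 1) - int a)"
    unfolding e1 e2 ..
  then show ?thesis using idH[OF assms(1), of "int a" "int (r - 1)"] unfolding c0_def e3 by (simp add: eq_diff_eq)
qed

lemma idR_gam:
  assumes r2: "r \<ge> 2" and ir: "i + 2 \<le> r"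
  shows "gam r (int (jj r i)) (int (Suc a)) = cphi r (int i + 2 + 2 * (int a + 1)) - c0 r i"
proof -
  have r: "r > 0" using r2 by simp
  have jj: "int (jj r i) = int r - 2 - int i" using ir by (rule int_jj)
  have e1: "int (Suc a) = int a + 1" and e2: "int r - 2 - int i - (int a + 1) + 1 = int r - 2 - int i - int a"
    by simp_all
  have g: "gam r (int (jj r i)) (int (Suc a)) = qint r (int a + 1) * qint r (int r - 2 - int i - int a)"
    unfolding gam_def jj e1 e2 ..
  have q1: "qe r (int a + 1 + (int r - 2 - int i - int a)) = - qe r (- 1 - int i)"
    using qe_plus_r[OF r, of "- 1 - int i"] by (simp add: algebra_simps)
  have q2: "qe r (int a + 1 - (int r - 2 - int i - int a)) = - qe r (2 * int a + 3 + int i)"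
    using qe_plus_r[OF r, of "int a + 1 - (int r - 2 - int i - int a)"] by (simp add: algebra_simps)
  have q3: "qe r (int r - 2 - int i - int a - (int a + 1)) = - qe r (- 3 - int i - 2 * int a)"
    using qe_plus_r[OF r, of "- 3 - int i - 2 * int a"] by (simp add: algebra_simps)
  have q4: "qe r (- (int a + 1) - (int r - 2 - int i - int a)) = - qe r (int i + 1)"
    using qe_plus_r[OF r, of "- (int a + 1) - (int r - 2 - int i - int a)"] by (simp add: algebra_simps)
  have A: "gam r (int (jj r i)) (int (Suc a))
      = (- qe r (- 1 - int i) + qe r (2 * int a + 3 + int i) + qe r (- 3 - int i - 2 * int a) - qe r (int i + 1)) / (qbr r 1)\<^sup>2"
    unfolding g qint_prod[OF r2] q1 q2 q3 q4 by (rule div_aux2)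
  have c1: "int i + 2 + 2 * (int a + 1) - 1 = 2 * int a + 3 + int i"
    and c2: "1 - (int i + 2 + 2 * (int a + 1)) = - 3 - int i - 2 * int a" by simp_all
  have B: "cphi r (int i + 2 + 2 * (int a + 1)) = (qe r (2 * int a + 3 + int i) + qe r (- 3 - int i - 2 * int a)) / (qbr r 1)\<^sup>2"
    unfolding cphi_def c1 c2 ..
  have c3: "- (int i + 1) = - 1 - int i" by simp
  have C: "c0 r i = (qe r (int i + 1) + qe r (- 1 - int i)) / (qbr r 1)\<^sup>2"
    unfolding c0_def c3 ..
  show ?thesis by (rule div_aux[OF A B C])
qed

lemma c0_alt: "c0 r i = cphi r (int i + 2)"
proof -
  have a: "int i + 2 - 1 = int i + 1" "1 - (int i + 2) = - (int i + 1)" by simp_all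
  show ?thesis unfolding cphi_def c0_def a ..
qed

lemma c0_neg: "c0 r i = cphi r (- int i)"
proof -
  have a: "- int i - 1 = - (int i + 1)" "1 - - int i = int i + 1" by simp_all
  show ?thesis unfolding cphi_def c0_def a by (simp add: add.commute)
qed

lemma c0_Lb:
  assumes "r > 0"
  shows "c0 r i = cphi r (int i + 2 - 2 * int r)"
proof -
  have "qe r (int i + 2 - 2 * int r - 1) = qe r (int i + 1)"
    using qe_plus_r[OF assms, of "int i + 1 - 2 * int r"] qe_plus_r[OF assms, of "int i + 1 - int r"]
    by (simp add: algebra_simps)
  moreover have "qe r (1 - (int i + 2 - 2 * int r)) = qe r (- (int i + 1))"
    using qe_plus_r[OF assms, of "- (int i + 1)"] qe_plus_r[OF assms, of "- (int i + 1) + int r"]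
    by (simp add: algebra_simps)
  ultimately show ?thesis by (simp add: c0_def cphi_def)
qed


section \<open>The Casimir-like operator\<close>

definition OmM :: "nat \<Rightarrow> pidx \<Rightarrow> pvec" where
  "OmM r x = (\<lambda>y. lin (Ecoef r) (Fcoef r x) y + cphi r (wt r x) * ev x y)"

definition NM :: "nat \<Rightarrow> complex \<Rightarrow> pidx \<Rightarrow> pvec" where
  "NM r c x = (\<lambda>y. OmM r x y - c * ev x y)"

lemma NM_alt: "NM r c x = (\<lambda>y. lin (Ecoef r) (Fcoef r x) y + (cphi r (wt r x) - c) * ev x y)"
  by (simp add: NM_def OmM_def fun_eq_iff algebra_simps)

lemma NM_H:
  assumes r2: "r \<ge> 2" and a: "a < i"
  shows "NM r (cval r k i) (k, i, Hb a) = (\<lambda>y. sg r k * ev (k, i, Sb a) y)"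
proof -
  have r0: "r > 0" using r2 by simp
  have g: "gam r (int i) (int (Suc a)) = c0 r i - cphi r (int i - 2 * int a)" by (rule idH_gam[OF r2])
  have "NM r (cval r k i) (k, i, Hb a) = (\<lambda>y. sg r k * (gam r (int i) (int (Suc a)) * ev (k, i, Hb a) y + ev (k, i, Sb a) y)
     + (sg r k * cphi r (int i - 2 * int a) - sg r k * c0 r i) * ev (k, i, Hb a) y)"
    using a by (simp add: NM_alt F_H E_H cphi_wt[OF r0] cval_def)
  also have "\<dots> = (\<lambda>y. sg r k * ev (k, i, Sb a) y)"
    unfolding g by (simp add: fun_eq_iff algebra_simps)
  finally show ?thesis .
qed

lemma NM_Hbot:
  assumes r2: "r \<ge> 2"
  shows "NM r (cval r k i) (k, i, Hb i) = (\<lambda>y. sg r k * ev (k, i, Sb i) y)"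
proof -
  have r0: "r > 0" using r2 by simp
  have e: "int i - 2 * int i = - int i" by simp
  have "NM r (cval r k i) (k, i, Hb i) = (\<lambda>y. sg r k * ev (k, i, Sb i) y
     + (sg r k * cphi r (int i - 2 * int i) - sg r k * c0 r i) * ev (k, i, Hb i) y)"
    by (simp add: NM_alt F_Hbot E_L0 cphi_wt[OF r0] cval_def)
  also have "\<dots> = (\<lambda>y. sg r k * ev (k, i, Sb i) y)"
    unfolding e c0_neg[symmetric] by simp
  finally show ?thesis .
qed

lemma NM_S:
  assumes r2: "r \<ge> 2" and a: "a < i"
  shows "NM r (cval r k i) (k, i, Sb a) = (\<lambda>y. 0)"
proof -
  have r0: "r > 0" using r2 by simp
  have g: "gam r (int i) (int (Suc a)) = c0 r i - cphi r (int i - 2 * int a)" by (rule idH_gam[OF r2])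
  have "NM r (cval r k i) (k, i, Sb a) = (\<lambda>y. sg r k * (gam r (int i) (int (Suc a)) * ev (k, i, Sb a) y)
     + (sg r k * cphi r (int i - 2 * int a) - sg r k * c0 r i) * ev (k, i, Sb a) y)"
    using a by (simp add: NM_alt F_S E_S cphi_wt[OF r0] cval_def)
  also have "\<dots> = (\<lambda>y. 0)"
    unfolding g by (simp add: fun_eq_iff algebra_simps)
  finally show ?thesis .
qed

lemma NM_Sbot:
  assumes r2: "r \<ge> 2"
  shows "NM r (cval r k i) (k, i, Sb i) = (\<lambda>y. 0)"
proof -
  have r0: "r > 0" using r2 by simp
  have e: "int i - 2 * int i = - int i" by simp
  have "NM r (cval r k i) (k, i, Sb i) = (\<lambda>y. (sg r k * cphi r (int i - 2 * int i) - sg r k * c0 r i) * ev (k, i, Sb i) y)"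
    by (simp add: NM_alt F_Sbot cphi_wt[OF r0] cval_def)
  also have "\<dots> = (\<lambda>y. 0)"
    unfolding e c0_neg[symmetric] by simp
  finally show ?thesis .
qed

lemma NM_R0:
  assumes r2: "r \<ge> 2" and ir: "i + 2 \<le> r"
  shows "NM r (cval r k i) (k, i, Rb 0) = (\<lambda>y. 0)"
proof -
  have r0: "r > 0" using r2 by simp
  have e: "int r - (int r - 2 - int i) + 2 * int 0 = int i + 2" by simp
  have "NM r (cval r k i) (k, i, Rb 0) = (\<lambda>y. (sg r k * cphi r (int r - (int r - 2 - int i) + 2 * int 0) - sg r k * c0 r i) * ev (k, i, Rb 0) y)"
    by (simp add: NM_alt F_R0 E_S0 cphi_wt[OF r0] cval_def del: of_nat_0)
  also have "\<dots> = (\<lambda>y. 0)"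
    unfolding e c0_alt[symmetric] by simp
  finally show ?thesis .
qed

lemma NM_R:
  assumes r2: "r \<ge> 2" and ir: "i + 2 \<le> r" and a: "a < jj r i"
  shows "NM r (cval r k i) (k, i, Rb (Suc a)) = (\<lambda>y. 0)"
proof -
  have r0: "r > 0" using r2 by simp
  have g: "gam r (int (jj r i)) (int (Suc a)) = cphi r (int i + 2 + 2 * (int a + 1)) - c0 r i"
    by (rule idR_gam[OF r2 ir])
  have e: "int r - (int r - 2 - int i) + 2 * int (Suc a) = int i + 2 + 2 * (int a + 1)" by simp
  have "NM r (cval r k i) (k, i, Rb (Suc a)) = (\<lambda>y. (sg r k * (- gam r (int (jj r i)) (int (Suc a)))) * ev (k, i, Rb (Suc a)) y
     + (sg r k * cphi r (int r - (int r - 2 - int i) + 2 * int (Suc a)) - sg r k * c0 r i) * ev (k, i, Rb (Suc a)) y)"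
    using a by (simp add: NM_alt F_R E_R cphi_wt[OF r0] cval_def del: of_nat_Suc)
  also have "\<dots> = (\<lambda>y. 0)"
    unfolding e g by (simp add: fun_eq_iff algebra_simps)
  finally show ?thesis .
qed

lemma NM_L:
  assumes r2: "r \<ge> 2" and ir: "i + 2 \<le> r" and a: "a < jj r i"
  shows "NM r (cval r k i) (k, i, Lb a) = (\<lambda>y. 0)"
proof -
  have r0: "r > 0" using r2 by simp
  have g: "gam r (int (jj r i)) (int (Suc a)) = cphi r (int i + 2 + 2 * (int a + 1)) - c0 r i"
    by (rule idR_gam[OF r2 ir])
  have e: "int r - 2 - int i - int r - 2 * int a = 2 - (int i + 2 + 2 * (int a + 1))" by simp
  have "NM r (cval r k i) (k, i, Lb a) = (\<lambda>y. sg r k * ((- gam r (int (jj r i)) (int (Suc a))) * ev (k, i, Lb a) y)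
     + (sg r k * cphi r (int r - 2 - int i - int r - 2 * int a) - sg r k * c0 r i) * ev (k, i, Lb a) y)"
    using a by (simp add: NM_alt F_L E_L cphi_wt[OF r0] cval_def del: of_nat_Suc)
  also have "\<dots> = (\<lambda>y. 0)"
    unfolding e g cphi_sym by (simp add: fun_eq_iff algebra_simps)
  finally show ?thesis .
qed

lemma NM_Lbot:
  assumes r2: "r \<ge> 2" and ir: "i + 2 \<le> r"
  shows "NM r (cval r k i) (k, i, Lb (jj r i)) = (\<lambda>y. 0)"
proof -
  have r0: "r > 0" using r2 by simp
  have jj: "int (jj r i) = int r - 2 - int i" using ir by (rule int_jj)
  have e: "int r - 2 - int i - int r - 2 * int (jj r i) = int i + 2 - 2 * int r" using jj by simp
  have "NM r (cval r k i) (k, i, Lb (jj r i)) = (\<lambda>y. (sg r k * cphi r (int r - 2 - int i - int r - 2 * int (jj r i)) - sg r k * c0 r i) * ev (k, i, Lb (jj r i)) y)"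
    by (simp add: NM_alt F_Lbot cphi_wt[OF r0] cval_def)
  also have "\<dots> = (\<lambda>y. 0)"
    unfolding e c0_Lb[OF r0, symmetric] by simp
  finally show ?thesis .
qed

lemma NM_V:
  assumes r2: "r \<ge> 2" and a: "a + 1 < r" and i: "i = r - 1"
  shows "NM r (cval r k i) (k, i, Vb a) = (\<lambda>y. 0)"
proof -
  have r0: "r > 0" using r2 by simp
  have g: "qint r (int (Suc a)) * qint r (int r - int (Suc a)) = c0 r (r - 1) - cphi r (int r - 1 - 2 * int a)"
    by (rule idV_q[OF r2 a])
  have "NM r (cval r k i) (k, i, Vb a) = (\<lambda>y. sg r k * ((qint r (int (Suc a)) * qint r (int r - int (Suc a))) * ev (k, i, Vb a) y)
     + (sg r k * cphi r (int r - 1 - 2 * int a) - sg r k * c0 r i) * ev (k, i, Vb a) y)"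
    using a by (simp add: NM_alt F_V E_V cphi_wt[OF r0] cval_def del: of_nat_Suc)
  also have "\<dots> = (\<lambda>y. 0)"
    unfolding g i by (simp add: fun_eq_iff algebra_simps)
  finally show ?thesis .
qed

lemma NM_Vbot:
  assumes r2: "r \<ge> 2" and i: "i = r - 1"
  shows "NM r (cval r k i) (k, i, Vb (r - 1)) = (\<lambda>y. 0)"
proof -
  have r0: "r > 0" using r2 by simp
  have e: "int r - 1 - 2 * int (r - 1) = - int (r - 1)" using r0 by simp
  have "NM r (cval r k i) (k, i, Vb (r - 1)) = (\<lambda>y. (sg r k * cphi r (int r - 1 - 2 * int (r - 1)) - sg r k * c0 r i) * ev (k, i, Vb (r - 1)) y)"
    using r0 by (simp add: NM_alt F_Vbot cphi_wt[OF r0] cval_def)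
  also have "\<dots> = (\<lambda>y. 0)"
    unfolding e i c0_neg[symmetric] by simp
  finally show ?thesis .
qed


definition nilv :: "nat \<Rightarrow> pidx \<Rightarrow> pvec" where
  "nilv r x = (case snd (snd x) of Hb a \<Rightarrow> (\<lambda>y. sg r (fst x) * ev (fst x, fst (snd x), Sb a) y) | _ \<Rightarrow> (\<lambda>y. 0))"

lemma NM_basis:
  assumes r2: "r \<ge> 2" and x: "(k, i, b) \<in> PS r \<nu>"
  shows "NM r (cval r k i) (k, i, b) = nilv r (k, i, b)"
proof -
  have vb: "valid_lab r i b" and ir: "i < r" using x by (auto simp: PS_iff sumPS_def)
  show ?thesis
  proof (cases b)
    case (Hb a)
    then show ?thesis using vb NM_H[OF r2, of a i k] NM_Hbot[OF r2, of k i]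
      by (cases "a < i") (auto simp: nilv_def)
  next
    case (Sb a)
    then show ?thesis using vb NM_S[OF r2, of a i k] NM_Sbot[OF r2, of k i]
      by (cases "a < i") (auto simp: nilv_def)
  next
    case (Rb a)
    then have ir2: "i + 2 \<le> r" "a \<le> jj r i" using vb by (auto simp: jj_def)
    show ?thesis
    proof (cases a)
      case 0 then show ?thesis using Rb NM_R0[OF r2 ir2(1)] by (simp add: nilv_def)
    next
      case (Suc a') then show ?thesis using Rb ir2 NM_R[OF r2 ir2(1), of a' k] by (simp add: nilv_def)
    qed
  next
    case (Lb a)
    then have ir2: "i + 2 \<le> r" "a \<le> jj r i" using vb by (auto simp: jj_def)
    show ?thesis
    proof (cases "a < jj r i")
      case True then show ?thesis using Lb NM_L[OF r2 ir2(1) True] by (simp add: nilv_def)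
    next
      case False then have "a = jj r i" using ir2 by simp
      then show ?thesis using Lb NM_Lbot[OF r2 ir2(1)] by (simp add: nilv_def)
    qed
  next
    case (Vb a)
    then have i1: "i = r - 1" "a < r" using vb by auto
    show ?thesis
    proof (cases "a + 1 < r")
      case True then show ?thesis using Vb NM_V[OF r2 True i1(1)] by (simp add: nilv_def)
    next
      case False then have "a = r - 1" using i1 by simp
      then show ?thesis using Vb NM_Vbot[OF r2 i1(1)] by (simp add: nilv_def)
    qed
  qed
qed

lemma fs_NM[simp]: "fs (NM r c x)"
  unfolding NM_alt by (intro fs_add fs_smul fs_lin) auto

lemma NM_same:
  assumes "NM r c x y \<noteq> 0"
  shows "fst y = fst x \<and> fst (snd y) = fst (snd x)"
proof (cases "ev x y = 0")
  case True
  then have "lin (Ecoef r) (Fcoef r x) y \<noteq> 0" using assms by (simp add: NM_alt)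
  then obtain z where "Fcoef r x z \<noteq> 0" "Ecoef r z y \<noteq> 0" by (rule lin_supp)
  then show ?thesis by (auto simp: Ecoef_def Fcoef_def split: if_splits)
next
  case False then show ?thesis by (simp add: ev_def split: if_splits)
qed

lemma NM_NM:
  assumes r2: "r \<ge> 2" and x: "(k, i, b) \<in> PS r \<nu>"
  shows "lin (NM r (cval r k i)) (NM r (cval r k i) (k, i, b)) = (\<lambda>y. 0)"
proof (cases b)
  case (Hb a)
  then have a: "a \<le> i" using x by (simp add: PS_iff)
  have "(k, i, Sb a) \<in> PS r \<nu>" using x a by (simp add: PS_iff Hb)
  then have "NM r (cval r k i) (k, i, Sb a) = (\<lambda>y. 0)"
    using NM_basis[OF r2] by (simp add: nilv_def)
  then show ?thesis using NM_basis[OF r2 x] Hb by (simp add: nilv_def)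
qed (use NM_basis[OF r2 x] in \<open>simp_all add: nilv_def\<close>)

definition Nop :: "nat \<Rightarrow> complex \<Rightarrow> pvec \<Rightarrow> pvec" where
  "Nop r c = lin (NM r c)"

definition res :: "int \<Rightarrow> nat \<Rightarrow> pvec \<Rightarrow> pvec" where
  "res k i v = (\<lambda>y. if fst y = k \<and> fst (snd y) = i then v y else 0)"

lemma lin_res:
  assumes M: "\<And>x y. M x y \<noteq> 0 \<Longrightarrow> fst y = fst x \<and> fst (snd y) = fst (snd x)" and v: "fs v"
  shows "lin M (res k i v) = res k i (lin M v)"
proof
  fix y
  have f: "finite {x. v x \<noteq> 0}" using v by (simp add: fs_def)
  have "lin M (res k i v) y = (\<Sum>x\<in>{x. v x \<noteq> 0}. res k i v x * M x y)"
    by (rule lin_sum[OF f]) (auto simp: res_def)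
  also have "\<dots> = (\<Sum>x\<in>{x. v x \<noteq> 0}. (if fst y = k \<and> fst (snd y) = i then v x * M x y else 0))"
  proof (rule sum.cong[OF refl])
    fix x
    show "res k i v x * M x y = (if fst y = k \<and> fst (snd y) = i then v x * M x y else 0)"
      using M[of x y] by (cases "M x y = 0") (auto simp: res_def)
  qed
  also have "\<dots> = res k i (lin M v) y" by (auto simp: res_def lin_def)
  finally show "lin M (res k i v) y = res k i (lin M v) y" .
qed

lemma fs_res[simp]: "fs v \<Longrightarrow> fs (res k i v)"
  unfolding fs_def res_def by (rule finite_subset[of _ "{x. v x \<noteq> 0}"]) auto

lemma res_Pnu: "v \<in> Pnu r \<nu> \<Longrightarrow> res k i v \<in> Pnu r \<nu>"
  unfolding Pnu_iff
proof (intro conjI allI impI)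
  assume v: "fs v \<and> (\<forall>x. v x \<noteq> 0 \<longrightarrow> x \<in> PS r \<nu>)"
  then show "fs (res k i v)" by simp
  fix x assume "res k i v x \<noteq> 0"
  then have "v x \<noteq> 0" by (simp add: res_def split: if_splits)
  then show "x \<in> PS r \<nu>" using v by blast
qed

lemma lin_madd: "lin (\<lambda>x y. M x y + N x y) v = (\<lambda>y. lin M v y + lin N v y)"
  by (simp add: lin_def fun_eq_iff distrib_left sum.distrib)

lemma lin_ev_diag:
  assumes "fs v"
  shows "lin (\<lambda>x y. g x * ev x y) v = (\<lambda>y. g y * v y)"
proof
  fix y
  show "lin (\<lambda>x y. g x * ev x y) v y = g y * v y"
  proof (cases "v y = 0")
    case True then show ?thesis by (auto simp: lin_def ev_def intro!: sum.neutral)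
  next
    case False
    have f: "finite {x. v x \<noteq> 0}" using assms by (simp add: fs_def)
    have "lin (\<lambda>x y. g x * ev x y) v y = (\<Sum>x\<in>{y}. v x * (g x * ev x y))"
      unfolding lin_def by (rule sum.mono_neutral_right) (use f False in \<open>auto simp: ev_def\<close>)
    then show ?thesis by (simp add: ev_def)
  qed
qed

lemma Nop_alt:
  assumes "fs v"
  shows "Nop r c v = (\<lambda>y. opE r (opF r v) y + diag r (\<lambda>m. cphi r m - c) v y)"
proof -
  have "NM r c = (\<lambda>x y. lin (Ecoef r) (Fcoef r x) y + (cphi r (wt r x) - c) * ev x y)"
    by (simp add: fun_eq_iff NM_alt)
  then have "Nop r c v = lin (\<lambda>x y. lin (Ecoef r) (Fcoef r x) y + (cphi r (wt r x) - c) * ev x y) v"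
    by (simp add: Nop_def)
  also have "\<dots> = (\<lambda>y. lin (\<lambda>x. lin (Ecoef r) (Fcoef r x)) v y + lin (\<lambda>x y. (cphi r (wt r x) - c) * ev x y) v y)"
    by (rule lin_madd)
  also have "\<dots> = (\<lambda>y. opE r (opF r v) y + diag r (\<lambda>m. cphi r m - c) v y)"
    using assms by (simp add: opE_lin opF_lin lin_comp lin_ev_diag[OF assms] diag_def)
  finally show ?thesis .
qed

lemma Nop_Pnu: "v \<in> Pnu r \<nu> \<Longrightarrow> Nop r c v \<in> Pnu r \<nu>"
  by (simp add: Nop_alt Pnu_fs add_Pnu opE_Pnu opF_Pnu diag_Pnu)

lemma End_diag:
  assumes f: "f \<in> EndSet r \<nu>" and v: "v \<in> Pnu r \<nu>"
  shows "f (diag r g v) = diag r g (f v)"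
proof -
  have "f (diag r g v) = lin (\<lambda>x. f (ev x)) (diag r g v)" by (rule End_lin[OF f diag_Pnu[OF v]])
  also have "\<dots> = diag r g (lin (\<lambda>x. f (ev x)) v)"
    by (rule lin_diag[OF v]) (use End_wt[OF f] in auto)
  also have "\<dots> = diag r g (f v)" using End_lin[OF f v] by simp
  finally show ?thesis .
qed

lemma End_Nop:
  assumes f: "f \<in> EndSet r \<nu>" and v: "v \<in> Pnu r \<nu>"
  shows "f (Nop r c v) = Nop r c (f v)"
proof -
  have a: "opE r (opF r v) \<in> Pnu r \<nu>" using v by (simp add: opE_Pnu opF_Pnu)
  have b: "diag r (\<lambda>m. cphi r m - c) v \<in> Pnu r \<nu>" using v by (simp add: diag_Pnu)
  have "f (Nop r c v) = (\<lambda>y. f (opE r (opF r v)) y + f (diag r (\<lambda>m. cphi r m - c) v) y)"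
    using End_add[OF f a b] by (simp add: Nop_alt Pnu_fs[OF v])
  also have "\<dots> = Nop r c (f v)"
    using End_E[OF f opF_Pnu[OF v]] End_F[OF f v] End_diag[OF f v] End_Pnu[OF f v]
    by (simp add: Nop_alt Pnu_fs)
  finally show ?thesis .
qed

lemma Nop_nil:
  assumes r2: "r \<ge> 2" and u: "u \<in> Pnu r \<nu>" and s: "\<And>x. u x \<noteq> 0 \<Longrightarrow> fst x = k \<and> fst (snd x) = i"
  shows "Nop r (cval r k i) (Nop r (cval r k i) u) = (\<lambda>y. 0)"
proof -
  have fu: "fs u" using u by (simp add: Pnu_fs)
  have "Nop r (cval r k i) (Nop r (cval r k i) u) = lin (\<lambda>x. lin (NM r (cval r k i)) (NM r (cval r k i) x)) u"
    unfolding Nop_def by (rule lin_comp[OF fu]) simp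
  also have "\<dots> = lin (\<lambda>x. (\<lambda>y. 0)) u"
  proof (rule lin_cong)
    fix x assume ux: "u x \<noteq> 0"
    then have xP: "x \<in> PS r \<nu>" using u by (simp add: Pnu_iff)
    obtain b where xx: "x = (k, i, b)" using s[OF ux] by (cases x) auto
    show "lin (NM r (cval r k i)) (NM r (cval r k i) x) = (\<lambda>y. 0)"
      using NM_NM[OF r2, of k i b] xP by (simp add: xx)
  qed
  also have "\<dots> = (\<lambda>y. 0)" by (simp add: lin_def)
  finally show ?thesis .
qed

lemma Nop_shift:
  assumes "fs v"
  shows "Nop r c v = (\<lambda>y. Nop r c' v y + (c' - c) * v y)"
proof -
  have "NM r c = (\<lambda>x y. NM r c' x y + (c' - c) * ev x y)"
    by (simp add: NM_def fun_eq_iff algebra_simps)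
  then have "Nop r c v = lin (\<lambda>x y. NM r c' x y + (c' - c) * ev x y) v" by (simp add: Nop_def)
  also have "\<dots> = (\<lambda>y. Nop r c' v y + (c' - c) * v y)"
    by (simp add: lin_madd lin_ev_diag[OF assms] Nop_def)
  finally show ?thesis .
qed

lemma Nop_sep:
  assumes r2: "r \<ge> 2" and u: "u \<in> Pnu r \<nu>" and s: "\<And>x. u x \<noteq> 0 \<Longrightarrow> fst x = k \<and> fst (snd x) = i"
    and n: "Nop r c (Nop r c u) = (\<lambda>y. 0)" and c: "c \<noteq> cval r k i"
  shows "u = (\<lambda>y. 0)"
proof -
  define c' where "c' = cval r k i"
  define d where "d = c' - c"
  have d: "d \<noteq> 0" using c by (simp add: d_def c'_def)
  have fu: "fs u" using u by (simp add: Pnu_fs)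
  have fN: "\<And>v. fs v \<Longrightarrow> fs (Nop r c' v)" unfolding Nop_def by (intro fs_lin) auto
  have h0: "Nop r c' (Nop r c' u) = (\<lambda>y. 0)" unfolding c'_def by (rule Nop_nil[OF r2 u s])
  have p: "Nop r c u = (\<lambda>y. Nop r c' u y + d * u y)" unfolding d_def by (rule Nop_shift[OF fu])
  have fp: "fs (Nop r c u)" unfolding Nop_def by (intro fs_lin fu) auto
  have "Nop r c (Nop r c u) = (\<lambda>y. Nop r c' (Nop r c u) y + d * Nop r c u y)"
    unfolding d_def by (rule Nop_shift[OF fp])
  also have "Nop r c' (Nop r c u) = (\<lambda>y. Nop r c' (Nop r c' u) y + d * Nop r c' u y)"
    unfolding p using fu fN[OF fu] by (simp add: Nop_def fs_lin)
  finally have "(\<lambda>y. 0) = (\<lambda>y. (Nop r c' (Nop r c' u) y + d * Nop r c' u y) + d * (Nop r c' u y + d * u y))"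
    using n p by simp
  then have e: "\<And>y. 0 = 2 * d * Nop r c' u y + d * d * u y"
    using h0 by (simp add: fun_eq_iff algebra_simps)
  have e2: "Nop r c' u = (\<lambda>y. (- d / 2) * u y)"
  proof
    fix y
    have "d * (2 * Nop r c' u y + d * u y) = 0" using e[of y] by (simp add: algebra_simps)
    then have "2 * Nop r c' u y + d * u y = 0" using d by simp
    then show "Nop r c' u y = (- d / 2) * u y" by (simp add: field_simps add_eq_0_iff2)
  qed
  have l: "Nop r c' (\<lambda>y. (- d / 2) * u y) = (\<lambda>y. (- d / 2) * Nop r c' u y)"
    unfolding Nop_def by (rule lin_smul[OF fu])
  have "(\<lambda>y. 0) = Nop r c' (Nop r c' u)" using h0 by simp
  also have "\<dots> = Nop r c' (\<lambda>y. (- d / 2) * u y)" using e2 by (rule arg_cong)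
  also have "\<dots> = (\<lambda>y. (- d / 2) * Nop r c' u y)" by (rule l)
  also have "\<dots> = (\<lambda>y. (- d / 2) * ((- d / 2) * u y))" by (simp add: e2)
  finally have "(\<lambda>y. 0) = (\<lambda>y. (- d / 2) * ((- d / 2) * u y))" .
  then show ?thesis using d by (simp add: fun_eq_iff)
qed

lemma cas_sep:
  assumes r2: "r \<ge> 2" and f: "f \<in> EndSet r \<nu>" and t: "(k, i, b) \<in> PS r \<nu>"
    and y: "f (ev (k, i, b)) (k', i', b') \<noteq> 0"
  shows "cval r k' i' = cval r k i"
proof (rule ccontr)
  assume ne: "cval r k' i' \<noteq> cval r k i"
  define c where "c = cval r k i"
  define w where "w = f (ev (k, i, b))"
  have et: "ev (k, i, b) \<in> Pnu r \<nu>" using t by simp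
  have w: "w \<in> Pnu r \<nu>" unfolding w_def by (rule End_Pnu[OF f et])
  have n0: "Nop r c (Nop r c (ev (k, i, b))) = (\<lambda>y. 0)"
    unfolding c_def by (rule Nop_nil[OF r2 et]) (simp add: ev_def split: if_splits)
  have "Nop r c (Nop r c w) = f (Nop r c (Nop r c (ev (k, i, b))))"
    unfolding w_def using End_Nop[OF f et] End_Nop[OF f Nop_Pnu[OF et]] by simp
  also have "\<dots> = (\<lambda>y. 0)" unfolding n0 by (rule End_zero[OF f])
  finally have nw: "Nop r c (Nop r c w) = (\<lambda>y. 0)" .
  define u where "u = res k' i' w"
  have u: "u \<in> Pnu r \<nu>" unfolding u_def by (rule res_Pnu[OF w])
  have fw: "fs w" using w by (simp add: Pnu_fs)
  have fNw: "fs (Nop r c w)" unfolding Nop_def by (intro fs_lin fw) auto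
  have "Nop r c (Nop r c u) = res k' i' (Nop r c (Nop r c w))"
    unfolding u_def Nop_def using lin_res[OF NM_same fw] lin_res[OF NM_same fNw[unfolded Nop_def]]
    by simp
  then have nu: "Nop r c (Nop r c u) = (\<lambda>y. 0)" by (simp add: nw res_def)
  have "u = (\<lambda>y. 0)"
    by (rule Nop_sep[OF r2 u _ nu]) (use ne c_def in \<open>auto simp: u_def res_def split: if_splits\<close>)
  then have "u (k', i', b') = 0" by simp
  then show False using y by (simp add: u_def res_def w_def)
qed


section \<open>Separation of Casimir values\<close>

lemma sg_pow: "r > 0 \<Longrightarrow> sg r k = (-1) ^ nat \<bar>k\<bar>"
  using qe_mult_r[of r "-k"] by (simp add: sg_def)

lemma sg_eq: "r > 0 \<Longrightarrow> sg r k' = (if even (k' - k) then sg r k else - sg r k)"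
proof -
  assume r: "r > 0"
  have "sg r k' = qe r (- (k * int r)) * qe r (- ((k' - k) * int r))"
    unfolding qe_add[symmetric] by (simp add: sg_def algebra_simps)
  also have "\<dots> = sg r k * sg r (k' - k)" by (simp add: sg_def)
  also have "sg r (k' - k) = (if even (k' - k) then 1 else -1)"
    using sg_pow[OF r, of "k' - k"] by (simp add: even_nat_iff)
  finally show ?thesis by simp
qed

lemma c0_real: "c0 r i = of_real (2 * cos (pi * (real i + 1) / real r)) / (qbr r 1)\<^sup>2"
  using qe_plus_neg[of r "int i + 1"] by (simp add: c0_def)

lemma cval_eq:
  assumes r2: "r \<ge> 2" and i: "i < r" and i': "i' < r" and e: "cval r k' i' = cval r k i"
  shows "(i' = i \<and> even (k' - k)) \<or> (i + i' + 2 = r \<and> odd (k' - k))"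
proof -
  have r: "r > 0" using r2 by simp
  have Q: "(qbr r 1)\<^sup>2 \<noteq> 0" using qbr1_nz[OF r2] by simp
  have sgnz: "sg r k \<noteq> 0" by (rule sg_nz)
  define th where "th = pi * (real i + 1) / real r"
  define th' where "th' = pi * (real i' + 1) / real r"
  have q: "(real i + 1) / real r \<le> 1" using i r by (simp add: divide_le_eq)
  have q': "(real i' + 1) / real r \<le> 1" using i' r by (simp add: divide_le_eq)
  have th: "0 \<le> th" "th \<le> pi" using mult_left_mono[OF q pi_ge_zero] r unfolding th_def by auto
  have th': "0 < th'" "th' \<le> pi" using mult_left_mono[OF q' pi_ge_zero] r unfolding th'_def by auto
  show ?thesis
  proof (cases "even (k' - k)")
    case True
    then have "sg r k' = sg r k" using sg_eq[OF r, of k' k] by simp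
    then have "c0 r i' = c0 r i" using e sgnz by (simp add: cval_def)
    then have "of_real (2 * cos th') / (qbr r 1)\<^sup>2 = of_real (2 * cos th) / (qbr r 1)\<^sup>2"
      by (simp add: c0_real th_def th'_def)
    then have cc: "cos th' = cos th" using Q by simp
    have a: "0 \<le> th'" using th' by simp
    have "th' = th" by (rule cos_inj_pi[OF a th'(2) th(1) th(2) cc])
    then have "real i' = real i" using r unfolding th_def th'_def by (simp add: field_simps)
    then show ?thesis using True by simp
  next
    case False
    then have "sg r k' = - sg r k" using sg_eq[OF r, of k' k] by simp
    then have "sg r k * c0 r i' = sg r k * (- c0 r i)" using e by (simp add: cval_def minus_equation_iff)
    then have "c0 r i' = - c0 r i" using sgnz by (rule mult_left_cancel[THEN iffD1, rotated])
    then have "of_real (2 * cos th') / (qbr r 1)\<^sup>2 = - (of_real (2 * cos th) / (qbr r 1)\<^sup>2)"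
      by (simp add: c0_real th_def th'_def)
    then have "cos th' = - cos th" using Q by (simp add: field_simps)
    then have cc: "cos th' = cos (pi - th)" by simp
    have a: "0 \<le> th'" and b: "0 \<le> pi - th" and c: "pi - th \<le> pi" using th' th by simp_all
    have "th' = pi - th" by (rule cos_inj_pi[OF a th'(2) b c cc])
    then have "pi * (real i' + 1) = pi * real r - pi * (real i + 1)" using r unfolding th_def th'_def
      by (simp add: field_simps)
    then have "pi * (real i' + 1) = pi * (real r - (real i + 1))" by (simp add: algebra_simps)
    then have "real i' + 1 = real r - (real i + 1)" by simp
    then show ?thesis using False by simp
  qed
qed

lemma mr_bound:
  fixes m e lo hi :: int
  assumes r: "r > 0" and e: "m * int r = e" and lo: "lo * int r < e" and hi: "e < hi * int r"
  shows "lo < m \<and> m < hi"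
proof
  show "lo < m"
  proof (rule ccontr)
    assume "\<not> lo < m"
    then have "m * int r \<le> lo * int r" using r by (intro mult_right_mono) auto
    then show False using e lo by simp
  qed
  show "m < hi"
  proof (rule ccontr)
    assume "\<not> m < hi"
    then have "hi * int r \<le> m * int r" using r by (intro mult_right_mono) auto
    then show False using e hi by simp
  qed
qed

lemma wt_an_H:
  assumes ir: "i + 2 \<le> r" and v: "valid_lab r i' b'"
    and w: "k' * int r + lab_wt r i' b' = k * int r + int i"
    and c: "(i' = i \<and> even (k' - k)) \<or> (i + i' + 2 = r \<and> odd (k' - k))"
  shows "(k', i', b') \<in> {(k, i, Hb 0), (k, i, Sb 0), (k + 1, jj r i, Lb 0), (k - 1, jj r i, Rb i)}"
proof -
  have r: "r > 0" using ir by simp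
  define m where "m = k' - k"
  have me: "m * int r = int i - lab_wt r i' b'" using w by (simp add: m_def algebra_simps)
  from c show ?thesis
  proof
    assume A: "i' = i \<and> even (k' - k)"
    then have ev: "even m" and ii: "i' = i" by (auto simp: m_def)
    show ?thesis
    proof (cases b')
      case (Hb a)
      then have "a \<le> i" using v ii by simp
      then have "m * int r = 2 * int a" "(- 1) * int r < 2 * int a" "2 * int a < 2 * int r"
        using me Hb ii ir by auto
      then have "- 1 < m \<and> m < 2" using mr_bound[OF r] by blast
      then have "m = 0" using ev by presburger
      then have "a = 0" using me Hb ii by simp
      then show ?thesis using Hb ii \<open>m = 0\<close> by (simp add: m_def)
    next
      case (Sb a)
      then have "a \<le> i" using v ii by simp
      then have "m * int r = 2 * int a" "(- 1) * int r < 2 * int a" "2 * int a < 2 * int r"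
        using me Sb ii ir by auto
      then have "- 1 < m \<and> m < 2" using mr_bound[OF r] by blast
      then have "m = 0" using ev by presburger
      then have "a = 0" using me Sb ii by simp
      then show ?thesis using Sb ii \<open>m = 0\<close> by (simp add: m_def)
    next
      case (Rb a)
      then have "a \<le> r - 2 - i" using v ii by simp
      then have "m * int r = - 2 - 2 * int a" "(- 2) * int r < - 2 - 2 * int a" "- 2 - 2 * int a < 0 * int r"
        using me Rb ii ir by auto
      then have "- 2 < m \<and> m < 0" using mr_bound[OF r] by blast
      then have False using ev by presburger
      then show ?thesis ..
    next
      case (Lb a)
      then have "a \<le> r - 2 - i" using v ii by simp
      then have "m * int r = 2 + 2 * int i + 2 * int a" "0 * int r < 2 + 2 * int i + 2 * int a"
        "2 + 2 * int i + 2 * int a < 2 * int r"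
        using me Lb ii ir by auto
      then have "0 < m \<and> m < 2" using mr_bound[OF r] by blast
      then have False using ev by presburger
      then show ?thesis ..
    next
      case (Vb a)
      then show ?thesis using v ii ir by simp
    qed
  next
    assume B: "i + i' + 2 = r \<and> odd (k' - k)"
    then have od: "odd m" and ii: "i' = r - 2 - i" by (auto simp: m_def)
    have jj: "jj r i = i'" using ii by (simp add: jj_def)
    show ?thesis
    proof (cases b')
      case (Hb a)
      then have "a \<le> i'" using v by simp
      then have "m * int r = int i - int i' + 2 * int a" "(- 1) * int r < int i - int i' + 2 * int a"
        "int i - int i' + 2 * int a < 1 * int r"
        using me Hb ii ir by auto
      then have "- 1 < m \<and> m < 1" using mr_bound[OF r] by blast
      then have False using od by presburger
      then show ?thesis ..
    next
      case (Sb a)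
      then have "a \<le> i'" using v by simp
      then have "m * int r = int i - int i' + 2 * int a" "(- 1) * int r < int i - int i' + 2 * int a"
        "int i - int i' + 2 * int a < 1 * int r"
        using me Sb ii ir by auto
      then have "- 1 < m \<and> m < 1" using mr_bound[OF r] by blast
      then have False using od by presburger
      then show ?thesis ..
    next
      case (Rb a)
      then have a: "a \<le> r - 2 - i'" using v by simp
      then have "m * int r = int i - int i' - 2 - 2 * int a" "(- 2) * int r < int i - int i' - 2 - 2 * int a"
        "int i - int i' - 2 - 2 * int a < 1 * int r"
        using me Rb ii ir by auto
      then have "- 2 < m \<and> m < 1" using mr_bound[OF r] by blast
      then have "m = -1" using od by presburger
      then have "a = i" using me Rb ii ir by simp
      then show ?thesis using Rb jj \<open>m = -1\<close> by (simp add: m_def)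
    next
      case (Lb a)
      then have a: "a \<le> r - 2 - i'" using v by simp
      then have "m * int r = int i + 2 + int i' + 2 * int a" "0 * int r < int i + 2 + int i' + 2 * int a"
        "int i + 2 + int i' + 2 * int a < 3 * int r"
        using me Lb ii ir by auto
      then have "0 < m \<and> m < 3" using mr_bound[OF r] by blast
      then have "m = 1" using od by presburger
      then have "a = 0" using me Lb ii ir by simp
      then show ?thesis using Lb jj \<open>m = 1\<close> by (simp add: m_def)
    next
      case (Vb a)
      then show ?thesis using v ii ir by (simp; linarith)
    qed
  qed
qed

lemma wt_an_V:
  assumes ir: "i + 1 = r" and v: "valid_lab r i' b'"
    and w: "k' * int r + lab_wt r i' b' = k * int r + lab_wt r i (Vb 0)"
    and c: "i' = i \<and> even (k' - k)"
  shows "(k', i', b') = (k, i, Vb 0)"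
proof -
  have r: "r > 0" using ir by simp
  define m where "m = k' - k"
  have ev: "even m" and ii: "i' = i" using c by (auto simp: m_def)
  have me: "m * int r = lab_wt r i (Vb 0) - lab_wt r i' b'" using w by (simp add: m_def algebra_simps)
  show ?thesis
  proof (cases b')
    case (Vb a)
    then have "a < r" using v by simp
    then have "m * int r = 2 * int a" "(- 1) * int r < 2 * int a" "2 * int a < 2 * int r"
      using me Vb ii ir by auto
    then have "- 1 < m \<and> m < 2" using mr_bound[OF r] by blast
    then have "m = 0" using ev by presburger
    then have "a = 0" using me Vb ii by simp
    then show ?thesis using Vb ii \<open>m = 0\<close> by (simp add: m_def)
  qed (use v ii ir in auto)
qed


lemma End_top_H:
  assumes r2: "r \<ge> 2" and f: "f \<in> EndSet r \<nu>" and t: "(k, i, Hb 0) \<in> PS r \<nu>"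
  shows "f (ev (k, i, Hb 0)) = (\<lambda>y. f (ev (k, i, Hb 0)) (k, i, Hb 0) * ev (k, i, Hb 0) y
     + (f (ev (k, i, Hb 0)) (k, i, Sb 0) * ev (k, i, Sb 0) y
     + (f (ev (k, i, Hb 0)) (k + 1, jj r i, Lb 0) * ev (k + 1, jj r i, Lb 0) y
     + f (ev (k, i, Hb 0)) (k - 1, jj r i, Rb i) * ev (k - 1, jj r i, Rb i) y)))"
proof
  fix y
  let ?w = "f (ev (k, i, Hb 0))"
  have ir: "i + 2 \<le> r" and si: "sumPS r \<nu> k i" using t by (auto simp: PS_iff)
  show "?w y = ?w (k, i, Hb 0) * ev (k, i, Hb 0) y + (?w (k, i, Sb 0) * ev (k, i, Sb 0) y
     + (?w (k + 1, jj r i, Lb 0) * ev (k + 1, jj r i, Lb 0) y + ?w (k - 1, jj r i, Rb i) * ev (k - 1, jj r i, Rb i) y))"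
  proof (cases "?w y = 0")
    case True
    then show ?thesis by (auto simp: ev_def)
  next
    case False
    obtain k' i' b' where yy: "y = (k', i', b')" by (cases y) auto
    have wP: "?w \<in> Pnu r \<nu>" using End_Pnu[OF f] t by simp
    have yP: "y \<in> PS r \<nu>" using wP False by (simp add: Pnu_iff)
    have v: "valid_lab r i' b'" and i'r: "i' < r" using yP by (auto simp: yy PS_iff sumPS_def)
    have wt: "wt r y = wt r (k, i, Hb 0)" by (rule End_wt[OF f t False])
    have cv: "cval r k' i' = cval r k i" using cas_sep[OF r2 f t] False by (simp add: yy)
    have c: "(i' = i \<and> even (k' - k)) \<or> (i + i' + 2 = r \<and> odd (k' - k))"
      using cval_eq[OF r2 _ i'r cv] ir by simp
    have "(k', i', b') \<in> {(k, i, Hb 0), (k, i, Sb 0), (k + 1, jj r i, Lb 0), (k - 1, jj r i, Rb i)}"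
      by (rule wt_an_H[OF ir v _ c]) (use wt in \<open>simp add: yy wt_def\<close>)
    then show ?thesis by (auto simp: yy ev_def)
  qed
qed

lemma End_top_V:
  assumes r2: "r \<ge> 2" and f: "f \<in> EndSet r \<nu>" and t: "(k, i, Vb 0) \<in> PS r \<nu>"
  shows "f (ev (k, i, Vb 0)) = (\<lambda>y. f (ev (k, i, Vb 0)) (k, i, Vb 0) * ev (k, i, Vb 0) y)"
proof
  fix y
  let ?w = "f (ev (k, i, Vb 0))"
  have ir: "i + 1 = r" and si: "sumPS r \<nu> k i" using t by (auto simp: PS_iff)
  show "?w y = ?w (k, i, Vb 0) * ev (k, i, Vb 0) y"
  proof (cases "?w y = 0")
    case True
    then show ?thesis by (auto simp: ev_def)
  next
    case False
    obtain k' i' b' where yy: "y = (k', i', b')" by (cases y) auto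
    have wP: "?w \<in> Pnu r \<nu>" using End_Pnu[OF f] t by simp
    have yP: "y \<in> PS r \<nu>" using wP False by (simp add: Pnu_iff)
    have v: "valid_lab r i' b'" and i'r: "i' < r" using yP by (auto simp: yy PS_iff sumPS_def)
    have wt: "wt r y = wt r (k, i, Vb 0)" by (rule End_wt[OF f t False])
    have cv: "cval r k' i' = cval r k i" using cas_sep[OF r2 f t] False by (simp add: yy)
    have c: "(i' = i \<and> even (k' - k)) \<or> (i + i' + 2 = r \<and> odd (k' - k))"
      using cval_eq[OF r2 _ i'r cv] ir by simp
    then have c: "i' = i \<and> even (k' - k)" using ir by auto
    have "(k', i', b') = (k, i, Vb 0)"
      by (rule wt_an_V[OF ir v _ c]) (use wt in \<open>simp add: yy wt_def\<close>)
    then show ?thesis by (auto simp: yy ev_def)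
  qed
qed

section \<open>Every endomorphism is given by the general matrix\<close>

definition cA :: "nat \<Rightarrow> (pvec \<Rightarrow> pvec) \<Rightarrow> cf" where
  "cA r f k i = f (ev (top r k i)) (top r k i)"
definition cB :: "nat \<Rightarrow> (pvec \<Rightarrow> pvec) \<Rightarrow> cf" where
  "cB r f k i = f (ev (k, i, Hb 0)) (k, i, Sb 0)"
definition cG :: "nat \<Rightarrow> (pvec \<Rightarrow> pvec) \<Rightarrow> cf" where
  "cG r f k i = f (ev (k, i, Hb 0)) (k + 1, jj r i, Lb 0)"
definition cD :: "nat \<Rightarrow> (pvec \<Rightarrow> pvec) \<Rightarrow> cf" where
  "cD r f k i = f (ev (k, i, Hb 0)) (k - 1, jj r i, Rb i)"

lemma End_ev_shift:
  assumes f: "f \<in> EndSet r \<nu>"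
  shows "f (ev (k + sh r, i, b)) y = f (ev (k, i, b)) (fst y - sh r, snd y)"
proof (cases "(k, i, b) \<in> PS r \<nu>")
  case True
  then show ?thesis using End_shift_ev[OF f True] by (simp add: shiftP_alt)
next
  case False
  then have "(k + sh r, i, b) \<notin> PS r \<nu>" using PS_unshift[of "(k + sh r, i, b)" r \<nu>] by auto
  then show ?thesis using False End_out[OF f] by simp
qed

lemma coord_periodic:
  assumes f: "f \<in> EndSet r \<nu>"
  shows "cA r f (k + sh r) i = cA r f k i" "cB r f (k + sh r) i = cB r f k i"
    "cG r f (k + sh r) i = cG r f k i" "cD r f (k + sh r) i = cD r f k i"
  by (simp_all add: cA_def cB_def cG_def cD_def top_def End_ev_shift[OF f] algebra_simps)

abbreviation Mf :: "nat \<Rightarrow> (pvec \<Rightarrow> pvec) \<Rightarrow> pidx \<Rightarrow> pvec" where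
  "Mf r f \<equiv> Mrow r (cA r f) (cB r f) (cG r f) (cD r f)"

theorem End_decomp:
  assumes r2: "r \<ge> 2" and f: "f \<in> EndSet r \<nu>"
  shows "f = mapM r \<nu> (Mf r f)"
proof (rule End_eq_tops[OF f])
  show "mapM r \<nu> (Mf r f) \<in> EndSet r \<nu>"
    by (rule Mrow_EndSet) (use coord_periodic[OF f] in auto)
next
  fix k i assume s: "sumPS r \<nu> k i"
  show "f (ev (top r k i)) = mapM r \<nu> (Mf r f) (ev (top r k i))"
  proof (cases "i + 2 \<le> r")
    case True
    have t: "(k, i, Hb 0) \<in> PS r \<nu>" using s True by (simp add: PS_iff)
    show ?thesis using t True End_top_H[OF r2 f t]
      by (simp add: top_def mapM_def cA_def cB_def cG_def cD_def)
  next
    case False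
    then have ri: "i + 1 = r" using s by (simp add: sumPS_def)
    have t: "(k, i, Vb 0) \<in> PS r \<nu>" using s ri by (simp add: PS_iff)
    show ?thesis using t False End_top_V[OF r2 f t]
      by (simp add: top_def mapM_def cA_def)
  qed
qed


lemma End_ev_row:
  assumes r2: "r \<ge> 2" and f: "f \<in> EndSet r \<nu>" and x: "x \<in> PS r \<nu>"
  shows "f (ev x) = Mf r f x"
  using End_decomp[OF r2 f] x by (metis ev_Pnu lin_ev mapM_def)

lemma End_apply_row:
  assumes r2: "r \<ge> 2" and f: "f \<in> EndSet r \<nu>" and v: "v \<in> Pnu r \<nu>"
  shows "f v = lin (Mf r f) v"
  using End_decomp[OF r2 f] v by (metis mapM_def)

definition ecomp :: "nat \<Rightarrow> int \<Rightarrow> (pvec \<Rightarrow> pvec) \<Rightarrow> (pvec \<Rightarrow> pvec) \<Rightarrow> pvec \<Rightarrow> pvec" where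
  "ecomp r \<nu> f g = amul (EndAlg r \<nu>) f g"

lemma ecomp_ev: "x \<in> PS r \<nu> \<Longrightarrow> ecomp r \<nu> f g (ev x) = f (g (ev x))"
  by (simp add: ecomp_def EndAlg_def)

lemma comp_H:
  assumes r2: "r \<ge> 2" and f: "f \<in> EndSet r \<nu>" and g: "g \<in> EndSet r \<nu>" and t: "(k, i, Hb 0) \<in> PS r \<nu>"
  defines "h \<equiv> ecomp r \<nu> f g"
  shows "cA r h k i = cA r g k i * cA r f k i"
    "cB r h k i = cA r g k i * cB r f k i + cB r g k i * cA r f k i
        - cG r g k i * cD r f (k + 1) (jj r i) * prodg r (jj r i) (jj r i)
        + cD r g k i * cG r f (k - 1) (jj r i) * prodg r i i"
    "cG r h k i = cA r g k i * cG r f k i + cG r g k i * cA r f (k + 1) (jj r i)"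
    "cD r h k i = cA r g k i * cD r f k i + cD r g k i * cA r f (k - 1) (jj r i)"
proof -
  have ir: "i + 2 \<le> r" using t by (simp add: PS_iff)
  have j: "jj r (jj r i) = i" using ir by (rule jj_inv)
  have gt: "g (ev (k, i, Hb 0)) = Mf r g (k, i, Hb 0)" by (rule End_ev_row[OF r2 g t])
  have gP: "g (ev (k, i, Hb 0)) \<in> Pnu r \<nu>" using End_Pnu[OF g] t by simp
  have "h (ev (k, i, Hb 0)) = f (g (ev (k, i, Hb 0)))" unfolding h_def by (rule ecomp_ev[OF t])
  also have "\<dots> = lin (Mf r f) (Mf r g (k, i, Hb 0))"
    using End_apply_row[OF r2 f gP] gt by simp
  finally have hv: "h (ev (k, i, Hb 0)) = lin (Mf r f) (Mf r g (k, i, Hb 0))" .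
  have top: "top r k i = (k, i, Hb 0)" using ir by (simp add: top_def)
  have top2: "top r (k + 1) (jj r i) = (k + 1, jj r i, Hb 0)" "top r (k - 1) (jj r i) = (k - 1, jj r i, Hb 0)"
    using ir by (simp_all add: top_def jj_def)
  show "cA r h k i = cA r g k i * cA r f k i"
    unfolding cA_def top hv by (simp; simp add: ev_def cA_def cB_def cG_def cD_def top j)
  show "cB r h k i = cA r g k i * cB r f k i + cB r g k i * cA r f k i
        - cG r g k i * cD r f (k + 1) (jj r i) * prodg r (jj r i) (jj r i)
        + cD r g k i * cG r f (k - 1) (jj r i) * prodg r i i"
    unfolding cB_def hv by (simp; simp add: ev_def cA_def cB_def cG_def cD_def top top2 j algebra_simps)
  show "cG r h k i = cA r g k i * cG r f k i + cG r g k i * cA r f (k + 1) (jj r i)"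
    unfolding cG_def hv by (simp; simp add: ev_def cA_def cB_def cG_def cD_def top top2 j algebra_simps)
  show "cD r h k i = cA r g k i * cD r f k i + cD r g k i * cA r f (k - 1) (jj r i)"
    unfolding cD_def hv by (simp; simp add: ev_def cA_def cB_def cG_def cD_def top top2 j algebra_simps)
qed

lemma comp_V:
  assumes r2: "r \<ge> 2" and f: "f \<in> EndSet r \<nu>" and g: "g \<in> EndSet r \<nu>" and t: "(k, i, Vb 0) \<in> PS r \<nu>"
  shows "cA r (ecomp r \<nu> f g) k i = cA r g k i * cA r f k i"
proof -
  have ir: "\<not> i + 2 \<le> r" using t by (simp add: PS_iff)
  have top: "top r k i = (k, i, Vb 0)" using ir by (simp add: top_def)
  have gt: "g (ev (k, i, Vb 0)) = Mf r g (k, i, Vb 0)" by (rule End_ev_row[OF r2 g t])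
  have gP: "g (ev (k, i, Vb 0)) \<in> Pnu r \<nu>" using End_Pnu[OF g] t by simp
  have hv: "ecomp r \<nu> f g (ev (k, i, Vb 0)) = lin (Mf r f) (Mf r g (k, i, Vb 0))"
    using ecomp_ev[OF t] End_apply_row[OF r2 f gP] gt by simp
  show ?thesis unfolding cA_def top hv by (simp; simp add: cA_def top ev_def)
qed


lemma sh_cases: "r > 0 \<Longrightarrow> (odd r \<and> sh r = 2) \<or> (even r \<and> sh r = 1)"
  by (auto simp: sh_def rprime_def)

lemma coord_per_int:
  assumes f: "f \<in> EndSet r \<nu>"
  shows "cA r f (k + m * sh r) i = cA r f k i \<and> cB r f (k + m * sh r) i = cB r f k i
    \<and> cG r f (k + m * sh r) i = cG r f k i \<and> cD r f (k + m * sh r) i = cD r f k i"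
proof (induction m rule: int_induct[where k = 0])
  case base then show ?case by simp
next
  case (step1 m)
  have e: "k + (m + 1) * sh r = (k + m * sh r) + sh r" by (simp add: algebra_simps)
  show ?case unfolding e using step1 coord_periodic[OF f] by simp
next
  case (step2 m)
  have e: "k + m * sh r = (k + (m - 1) * sh r) + sh r" by (simp add: algebra_simps)
  show ?case using step2 coord_periodic[OF f, of "k + (m - 1) * sh r" i] unfolding e by simp
qed

lemma coord_per2:
  assumes f: "f \<in> EndSet r \<nu>" and r: "r > 0"
  shows "cA r f (k + 2) i = cA r f k i" "cB r f (k + 2) i = cB r f k i"
    "cG r f (k + 2) i = cG r f k i" "cD r f (k + 2) i = cD r f k i"
proof -
  obtain m where m: "2 = m * sh r" using sh_cases[OF r] by (metis mult_1 mult.commute numeral_One one_add_one)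
  show "cA r f (k + 2) i = cA r f k i" "cB r f (k + 2) i = cB r f k i"
    "cG r f (k + 2) i = cG r f k i" "cD r f (k + 2) i = cD r f k i"
    unfolding m using coord_per_int[OF f] by simp_all
qed

lemma coord_per1:
  assumes f: "f \<in> EndSet r \<nu>" and r: "r > 0" and e: "even r"
  shows "cA r f (k + 1) i = cA r f k i" "cB r f (k + 1) i = cB r f k i"
    "cG r f (k + 1) i = cG r f k i" "cD r f (k + 1) i = cD r f k i"
proof -
  have m: "sh r = 1" using sh_cases[OF r] e by auto
  show "cA r f (k + 1) i = cA r f k i" "cB r f (k + 1) i = cB r f k i"
    "cG r f (k + 1) i = cG r f k i" "cD r f (k + 1) i = cD r f k i"
    using coord_per_int[OF f, of k 1 i] unfolding m by simp_all
qed

lemma amul_algA: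
  "amul algA x y = (\<lambda>z. case z of
      Ap \<Rightarrow> x Ap * y Ap
    | Aq \<Rightarrow> x Aq * y Aq
    | Aap \<Rightarrow> x Aq * y Aap + x Aap * y Ap
    | Aam \<Rightarrow> x Aq * y Aam + x Aam * y Ap
    | Abp \<Rightarrow> x Ap * y Abp + x Abp * y Aq
    | Abm \<Rightarrow> x Ap * y Abm + x Abm * y Aq
    | Abpam \<Rightarrow> x Ap * y Abpam + x Abpam * y Ap + x Abp * y Aam - x Abm * y Aap
    | Aapbm \<Rightarrow> x Aq * y Aapbm + x Aapbm * y Aq + x Aap * y Abm - x Aam * y Abp)"
  unfolding algA_def basis_alg_def abas_list_def
  by (rule ext, case_tac z) (simp_all add: algebra_simps)

lemma amul_algB:
  "amul algB x y = (\<lambda>z. case z of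
      B1 \<Rightarrow> x B1 * y B1
    | Bp \<Rightarrow> x B1 * y Bp + x Bp * y B1
    | Bm \<Rightarrow> x B1 * y Bm + x Bm * y B1
    | Bpm \<Rightarrow> x B1 * y Bpm + x Bpm * y B1 + x Bp * y Bm - x Bm * y Bp)"
  unfolding algB_def basis_alg_def bbas_list_def
  by (rule ext, case_tac z) (simp_all add: algebra_simps)


definition Ablk :: "nat \<Rightarrow> (pvec \<Rightarrow> pvec) \<Rightarrow> int \<Rightarrow> nat \<Rightarrow> abas \<Rightarrow> complex" where
  "Ablk r f k i = (\<lambda>z. case z of
      Ap \<Rightarrow> cA r f k i
    | Aq \<Rightarrow> cA r f (k + 1) (jj r i)
    | Aap \<Rightarrow> cG r f k i
    | Aam \<Rightarrow> prodg r i i * cD r f k i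
    | Abp \<Rightarrow> cG r f (k + 1) (jj r i)
    | Abm \<Rightarrow> prodg r (jj r i) (jj r i) * cD r f (k + 1) (jj r i)
    | Abpam \<Rightarrow> cB r f k i
    | Aapbm \<Rightarrow> cB r f (k + 1) (jj r i))"

definition Bblk :: "nat \<Rightarrow> (pvec \<Rightarrow> pvec) \<Rightarrow> int \<Rightarrow> nat \<Rightarrow> bbas \<Rightarrow> complex" where
  "Bblk r f k i = (\<lambda>z. case z of
      B1 \<Rightarrow> cA r f k i
    | Bp \<Rightarrow> cG r f k i
    | Bm \<Rightarrow> prodg r i i * cD r f k i
    | Bpm \<Rightarrow> cB r f k i)"

lemma Ablk_mul:
  assumes r2: "r \<ge> 2" and f: "f \<in> EndSet r \<nu>" and g: "g \<in> EndSet r \<nu>" and t: "(k, i, Hb 0) \<in> PS r \<nu>"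
  shows "Ablk r (ecomp r \<nu> f g) k i = amul algA (Ablk r f k i) (Ablk r g k i)"
proof -
  have r: "r > 0" using r2 by simp
  have ir: "i + 2 \<le> r" and si: "sumPS r \<nu> k i" using t by (auto simp: PS_iff)
  have j: "jj r (jj r i) = i" using ir by (rule jj_inv)
  have q: "(k + 1, jj r i, Hb 0) \<in> PS r \<nu>"
    using sumPS_nb[OF ir si] ir by (simp add: PS_iff jj_def)
  note P = comp_H[OF r2 f g t] and Q = comp_H[OF r2 f g q]
  have e1: "cG r f (k - 1) (jj r i) = cG r f (k + 1) (jj r i)"
    "cA r f (k - 1) (jj r i) = cA r f (k + 1) (jj r i)"
    using coord_per2[OF f r, of "k - 1" "jj r i"] unfolding diff_add_cancel[of k 1] by (simp_all add: add.commute)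
  have e2: "cA r f (k + 1 + 1) i = cA r f k i" "cD r f (k + 1 + 1) i = cD r f k i"
    "cA r f (k + 2) i = cA r f k i" "cD r f (k + 2) i = cD r f k i"
    "cA r f (2 + k) i = cA r f k i" "cD r f (2 + k) i = cD r f k i"
    using coord_per2[OF f r, of k i] by (simp_all add: add.assoc add.commute)
  show ?thesis
  proof (rule ext)
    fix z show "Ablk r (ecomp r \<nu> f g) k i z = amul algA (Ablk r f k i) (Ablk r g k i) z"
      apply (cases z)
             apply (simp_all add: Ablk_def amul_algA P Q e1 e2 j)
       apply (simp_all add: algebra_simps)
      done
  qed
qed

lemma Bblk_mul:
  assumes r2: "r \<ge> 2" and f: "f \<in> EndSet r \<nu>" and g: "g \<in> EndSet r \<nu>" and t: "(k, i, Hb 0) \<in> PS r \<nu>"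
    and ev: "even r" and ij: "jj r i = i"
  shows "Bblk r (ecomp r \<nu> f g) k i = amul algB (Bblk r f k i) (Bblk r g k i)"
proof -
  have r: "r > 0" using r2 by simp
  note P = comp_H[OF r2 f g t]
  have e1: "cG r f (k - 1) i = cG r f k i" "cA r f (k - 1) i = cA r f k i"
    using coord_per1[OF f r ev, of "k - 1" i] by simp_all
  have e2: "cA r f (k + 1) i = cA r f k i" "cD r f (k + 1) i = cD r f k i"
    "cA r f (1 + k) i = cA r f k i" "cD r f (1 + k) i = cD r f k i"
    using coord_per1[OF f r ev, of k i] by (simp_all add: add.commute)
  show ?thesis
  proof (rule ext)
    fix z show "Bblk r (ecomp r \<nu> f g) k i z = amul algB (Bblk r f k i) (Bblk r g k i) z"
      by (cases z) (simp_all add: Bblk_def amul_algB P e1 e2 ij algebra_simps)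
  qed
qed


definition ahom :: "'a calg \<Rightarrow> 'b calg \<Rightarrow> ('a \<Rightarrow> 'b) \<Rightarrow> bool" where
  "ahom S T \<phi> \<longleftrightarrow> (\<forall>x\<in>acar S. \<phi> x \<in> acar T)
     \<and> (\<forall>x\<in>acar S. \<forall>y\<in>acar S. \<phi> (aadd S x y) = aadd T (\<phi> x) (\<phi> y))
     \<and> (\<forall>x\<in>acar S. \<forall>y\<in>acar S. \<phi> (amul S x y) = amul T (\<phi> x) (\<phi> y))
     \<and> (\<forall>c. \<forall>x\<in>acar S. \<phi> (asmul S c x) = asmul T c (\<phi> x))
     \<and> \<phi> (aone S) = aone T"

lemma alg_iso_intro:
  assumes "ahom S T \<phi>" "inj_on \<phi> (acar S)" "\<And>y. y \<in> acar T \<Longrightarrow> \<exists>x\<in>acar S. \<phi> x = y"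
  shows "alg_iso S T \<phi>"
proof -
  have "\<phi> ` acar S = acar T"
    using assms(1,3) unfolding ahom_def by force
  then have "bij_betw \<phi> (acar S) (acar T)" using assms(2) by (simp add: bij_betw_def)
  then show ?thesis using assms(1) by (simp add: alg_iso_def ahom_def)
qed

lemma prod_hom:
  assumes "ahom S T1 \<phi>1" "ahom S T2 \<phi>2"
  shows "ahom S (prod_alg T1 T2) (\<lambda>x. (\<phi>1 x, \<phi>2 x))"
  using assms unfolding ahom_def prod_alg_def by auto

lemma pow_hom:
  assumes "\<And>t. t < n \<Longrightarrow> ahom S T (\<psi> t)"
  shows "ahom S (pow_alg T n) (\<lambda>x t. if t < n then \<psi> t x else azero T)"
  using assms unfolding ahom_def pow_alg_def by (auto simp: fun_eq_iff)

lemma EndAlg_simps: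
  "acar (EndAlg r \<nu>) = EndSet r \<nu>"
  "aadd (EndAlg r \<nu>) f g = (\<lambda>v. if v \<in> Pnu r \<nu> then (\<lambda>x. f v x + g v x) else (\<lambda>x. 0))"
  "asmul (EndAlg r \<nu>) c f = (\<lambda>v. if v \<in> Pnu r \<nu> then (\<lambda>x. c * f v x) else (\<lambda>x. 0))"
  "aone (EndAlg r \<nu>) = (\<lambda>v. if v \<in> Pnu r \<nu> then v else (\<lambda>x. 0))"
  "amul (EndAlg r \<nu>) f g = ecomp r \<nu> f g"
  by (simp_all add: EndAlg_def ecomp_def)

lemma coord_lin:
  assumes t: "(k, i, Hb 0) \<in> PS r \<nu>"
  shows "cA r (aadd (EndAlg r \<nu>) f g) k i = cA r f k i + cA r g k i"
    "cB r (aadd (EndAlg r \<nu>) f g) k i = cB r f k i + cB r g k i"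
    "cG r (aadd (EndAlg r \<nu>) f g) k i = cG r f k i + cG r g k i"
    "cD r (aadd (EndAlg r \<nu>) f g) k i = cD r f k i + cD r g k i"
    "cA r (asmul (EndAlg r \<nu>) c f) k i = c * cA r f k i"
    "cB r (asmul (EndAlg r \<nu>) c f) k i = c * cB r f k i"
    "cG r (asmul (EndAlg r \<nu>) c f) k i = c * cG r f k i"
    "cD r (asmul (EndAlg r \<nu>) c f) k i = c * cD r f k i"
    "cA r (aone (EndAlg r \<nu>)) k i = 1"
    "cB r (aone (EndAlg r \<nu>)) k i = 0"
    "cG r (aone (EndAlg r \<nu>)) k i = 0"
    "cD r (aone (EndAlg r \<nu>)) k i = 0"
proof -
  have ir: "i + 2 \<le> r" using t by (simp add: PS_iff)
  then have top: "top r k i = (k, i, Hb 0)" by (simp add: top_def)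
  have e: "(\<lambda>y. if y = (k, i, Hb 0) then 1 else 0) \<in> Pnu r \<nu>" using t ev_Pnu[of "(k, i, Hb 0)" r \<nu>] by (simp add: ev_def)
  show "cA r (aadd (EndAlg r \<nu>) f g) k i = cA r f k i + cA r g k i"
    "cB r (aadd (EndAlg r \<nu>) f g) k i = cB r f k i + cB r g k i"
    "cG r (aadd (EndAlg r \<nu>) f g) k i = cG r f k i + cG r g k i"
    "cD r (aadd (EndAlg r \<nu>) f g) k i = cD r f k i + cD r g k i"
    "cA r (asmul (EndAlg r \<nu>) c f) k i = c * cA r f k i"
    "cB r (asmul (EndAlg r \<nu>) c f) k i = c * cB r f k i"
    "cG r (asmul (EndAlg r \<nu>) c f) k i = c * cG r f k i"
    "cD r (asmul (EndAlg r \<nu>) c f) k i = c * cD r f k i"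
    "cA r (aone (EndAlg r \<nu>)) k i = 1"
    "cB r (aone (EndAlg r \<nu>)) k i = 0"
    "cG r (aone (EndAlg r \<nu>)) k i = 0"
    "cD r (aone (EndAlg r \<nu>)) k i = 0"
    using t e by (simp_all add: EndAlg_simps cA_def cB_def cG_def cD_def top ev_def)
qed

lemma coord_linV:
  assumes t: "(k, i, Vb 0) \<in> PS r \<nu>"
  shows "cA r (aadd (EndAlg r \<nu>) f g) k i = cA r f k i + cA r g k i"
    "cA r (asmul (EndAlg r \<nu>) c f) k i = c * cA r f k i"
    "cA r (aone (EndAlg r \<nu>)) k i = 1"
proof -
  have ir: "\<not> i + 2 \<le> r" using t by (simp add: PS_iff)
  then have top: "top r k i = (k, i, Vb 0)" by (simp add: top_def)
  have e: "(\<lambda>y. if y = (k, i, Vb 0) then 1 else 0) \<in> Pnu r \<nu>" using t ev_Pnu[of "(k, i, Vb 0)" r \<nu>] by (simp add: ev_def)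
  show "cA r (aadd (EndAlg r \<nu>) f g) k i = cA r f k i + cA r g k i"
    "cA r (asmul (EndAlg r \<nu>) c f) k i = c * cA r f k i"
    "cA r (aone (EndAlg r \<nu>)) k i = 1"
    using t e by (simp_all add: EndAlg_simps cA_def top ev_def)
qed

lemma algA_simps:
  "acar algA = UNIV"
  "aadd algA x y = (\<lambda>z. x z + y z)"
  "asmul algA c x = (\<lambda>z. c * x z)"
  "aone algA = (\<lambda>z. if z = Ap \<or> z = Aq then 1 else 0)"
  "azero algA = (\<lambda>z. 0)"
proof -
  have "\<And>z. z \<in> set abas_list" unfolding abas_list_def by (case_tac z) auto
  then show "acar algA = UNIV" by (auto simp: algA_def basis_alg_def)
qed (simp_all add: algA_def basis_alg_def)

lemma algB_simps:
  "acar algB = UNIV"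
  "aadd algB x y = (\<lambda>z. x z + y z)"
  "asmul algB c x = (\<lambda>z. c * x z)"
  "aone algB = (\<lambda>z. if z = B1 then 1 else 0)"
  "azero algB = (\<lambda>z. 0)"
proof -
  have "\<And>z. z \<in> set bbas_list" unfolding bbas_list_def by (case_tac z) auto
  then show "acar algB = UNIV" by (auto simp: algB_def basis_alg_def)
qed (simp_all add: algB_def basis_alg_def)

lemma Ablk_hom:
  assumes r2: "r \<ge> 2" and t: "(k, i, Hb 0) \<in> PS r \<nu>"
  shows "ahom (EndAlg r \<nu>) algA (\<lambda>f. Ablk r f k i)"
proof -
  have ir: "i + 2 \<le> r" and si: "sumPS r \<nu> k i" using t by (auto simp: PS_iff)
  have q: "(k + 1, jj r i, Hb 0) \<in> PS r \<nu>"
    using sumPS_nb[OF ir si] ir by (simp add: PS_iff jj_def)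
  note L = coord_lin[OF t] and Lq = coord_lin[OF q]
  show ?thesis unfolding ahom_def
  proof (intro conjI ballI allI)
    fix f g assume f: "f \<in> acar (EndAlg r \<nu>)" and g: "g \<in> acar (EndAlg r \<nu>)"
    show "Ablk r (aadd (EndAlg r \<nu>) f g) k i = aadd algA (Ablk r f k i) (Ablk r g k i)"
    proof (rule ext)
      fix z :: abas show "Ablk r (aadd (EndAlg r \<nu>) f g) k i z = aadd algA (Ablk r f k i) (Ablk r g k i) z"
        by (cases z) (simp_all add: Ablk_def algA_simps L Lq distrib_left mult_ac)
    qed
    show "Ablk r (amul (EndAlg r \<nu>) f g) k i = amul algA (Ablk r f k i) (Ablk r g k i)"
      using Ablk_mul[OF r2 _ _ t] f g by (simp add: EndAlg_simps)
  next
    fix c f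
    show "Ablk r (asmul (EndAlg r \<nu>) c f) k i = asmul algA c (Ablk r f k i)"
    proof (rule ext)
      fix z :: abas show "Ablk r (asmul (EndAlg r \<nu>) c f) k i z = asmul algA c (Ablk r f k i) z"
        by (cases z) (simp_all add: Ablk_def algA_simps L Lq distrib_left mult_ac)
    qed
  next
    show "Ablk r (aone (EndAlg r \<nu>)) k i = aone algA"
    proof (rule ext)
      fix z :: abas show "Ablk r (aone (EndAlg r \<nu>)) k i z = aone algA z"
        by (cases z) (simp_all add: Ablk_def algA_simps L Lq)
    qed
  qed (simp add: algA_simps)
qed

lemma Bblk_hom:
  assumes r2: "r \<ge> 2" and t: "(k, i, Hb 0) \<in> PS r \<nu>" and ev: "even r" and ij: "jj r i = i"
  shows "ahom (EndAlg r \<nu>) algB (\<lambda>f. Bblk r f k i)"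
proof -
  note L = coord_lin[OF t]
  show ?thesis unfolding ahom_def
  proof (intro conjI ballI allI)
    fix f g assume f: "f \<in> acar (EndAlg r \<nu>)" and g: "g \<in> acar (EndAlg r \<nu>)"
    show "Bblk r (aadd (EndAlg r \<nu>) f g) k i = aadd algB (Bblk r f k i) (Bblk r g k i)"
    proof (rule ext)
      fix z :: bbas show "Bblk r (aadd (EndAlg r \<nu>) f g) k i z = aadd algB (Bblk r f k i) (Bblk r g k i) z"
        by (cases z) (simp_all add: Bblk_def algB_simps L distrib_left mult_ac)
    qed
    show "Bblk r (amul (EndAlg r \<nu>) f g) k i = amul algB (Bblk r f k i) (Bblk r g k i)"
      using Bblk_mul[OF r2 _ _ t ev ij] f g by (simp add: EndAlg_simps)
  next
    fix c f
    show "Bblk r (asmul (EndAlg r \<nu>) c f) k i = asmul algB c (Bblk r f k i)"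
    proof (rule ext)
      fix z :: bbas show "Bblk r (asmul (EndAlg r \<nu>) c f) k i z = asmul algB c (Bblk r f k i) z"
        by (cases z) (simp_all add: Bblk_def algB_simps L distrib_left mult_ac)
    qed
  next
    show "Bblk r (aone (EndAlg r \<nu>)) k i = aone algB"
    proof (rule ext)
      fix z :: bbas show "Bblk r (aone (EndAlg r \<nu>)) k i z = aone algB z"
        by (cases z) (simp_all add: Bblk_def algB_simps L)
    qed
  qed (simp add: algB_simps)
qed

lemma Cblk_hom:
  assumes r2: "r \<ge> 2" and t: "(k, i, Vb 0) \<in> PS r \<nu>"
  shows "ahom (EndAlg r \<nu>) complex_alg (\<lambda>f. cA r f k i)"
  unfolding ahom_def
  using coord_linV[OF t] comp_V[OF r2 _ _ t]
  by (simp add: complex_alg_def EndAlg_simps mult.commute)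


lemma qint_nz:
  assumes r2: "r \<ge> 2" and x: "0 < x" "x < int r"
  shows "qint r x \<noteq> 0"
proof -
  have r: "real r > 0" using r2 by simp
  have "0 < pi * real_of_int x / real r" using x r by simp
  moreover have "pi * real_of_int x / real r < pi"
    using x r by (simp add: divide_less_eq)
  ultimately have "sin (pi * real_of_int x / real r) > 0" by (rule sin_gt_zero)
  then have "qbr r x \<noteq> 0" by (simp add: qbr_sin)
  then show ?thesis using qbr1_nz[OF r2] by (simp add: qint_def)
qed

lemma prodg_nz:
  assumes r2: "r \<ge> 2" and i: "i < r"
  shows "a \<le> i \<Longrightarrow> prodg r i a \<noteq> 0"
proof (induction a)
  case 0 then show ?case by simp
next
  case (Suc a)
  have "gam r (int i) (int i - int a) = qint r (int i - int a) * qint r (int a + 1)"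
    by (simp add: gam_def)
  moreover have "qint r (int i - int a) \<noteq> 0" using Suc i by (intro qint_nz[OF r2]) auto
  moreover have "qint r (int a + 1) \<noteq> 0" using Suc i by (intro qint_nz[OF r2]) auto
  ultimately show ?case using Suc by simp
qed

lemma prodg_nz': "r \<ge> 2 \<Longrightarrow> i < r \<Longrightarrow> prodg r i i \<noteq> 0"
  using prodg_nz by blast

lemma coord_dvd:
  assumes f: "f \<in> EndSet r \<nu>" and d: "sh r dvd (k' - k)"
  shows "cA r f k' i = cA r f k i \<and> cB r f k' i = cB r f k i \<and> cG r f k' i = cG r f k i \<and> cD r f k' i = cD r f k i"
proof -
  obtain m where m: "k' - k = sh r * m" using d by (auto elim: dvdE)
  have "k' = k + m * sh r" using m by (simp add: algebra_simps)
  then show ?thesis using coord_per_int[OF f, of k m i] by simp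
qed

lemma End_eq_coords:
  assumes r2: "r \<ge> 2" and f: "f \<in> EndSet r \<nu>" and g: "g \<in> EndSet r \<nu>"
    and c: "\<And>k i. sumPS r \<nu> k i \<Longrightarrow> cA r f k i = cA r g k i \<and>
       (i + 2 \<le> r \<longrightarrow> cB r f k i = cB r g k i \<and> cG r f k i = cG r g k i \<and> cD r f k i = cD r g k i)"
  shows "f = g"
proof -
  have "mapM r \<nu> (Mf r f) = mapM r \<nu> (Mf r g)"
  proof
    fix v show "mapM r \<nu> (Mf r f) v = mapM r \<nu> (Mf r g) v"
    proof (cases "v \<in> Pnu r \<nu>")
      case True
      have "lin (Mf r f) v = lin (Mf r g) v"
      proof (rule lin_cong)
        fix x assume "v x \<noteq> 0"
        then have x: "x \<in> PS r \<nu>" using True by (simp add: Pnu_iff)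
        obtain k i b where xx: "x = (k, i, b)" by (cases x) auto
        have s: "sumPS r \<nu> k i" and vb: "valid_lab r i b" using x by (auto simp: xx PS_iff)
        note cc = c[OF s]
        show "Mf r f x = Mf r g x"
          using vb cc by (cases b) (auto simp: xx)
      qed
      then show ?thesis using True by (simp add: mapM_def)
    qed (simp add: mapM_def)
  qed
  then show ?thesis using End_decomp[OF r2 f] End_decomp[OF r2 g] by simp
qed

lemma Mrow_coords:
  assumes pA: "\<And>k i. A (k + sh r) i = A k i" and pB: "\<And>k i. B (k + sh r) i = B k i"
    and pG: "\<And>k i. G (k + sh r) i = G k i" and pD: "\<And>k i. D (k + sh r) i = D k i"
    and s: "sumPS r \<nu> k i"
  defines "h \<equiv> mapM r \<nu> (Mrow r A B G D)"
  shows "cA r h k i = A k i"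
    "i + 2 \<le> r \<Longrightarrow> cB r h k i = B k i"
    "i + 2 \<le> r \<Longrightarrow> cG r h k i = G k i"
    "i + 2 \<le> r \<Longrightarrow> cD r h k i = D k i"
proof -
  show "cA r h k i = A k i"
  proof (cases "i + 2 \<le> r")
    case True
    then have t: "(k, i, Hb 0) \<in> PS r \<nu>" using s by (simp add: PS_iff)
    have "h (ev (k, i, Hb 0)) = Mrow r A B G D (k, i, Hb 0)" using t by (simp add: h_def mapM_def)
    then show ?thesis using True by (simp add: cA_def top_def ev_def)
  next
    case False
    then have "i + 1 = r" using s by (simp add: sumPS_def)
    then have t: "(k, i, Vb 0) \<in> PS r \<nu>" using s by (simp add: PS_iff)
    have "h (ev (k, i, Vb 0)) = Mrow r A B G D (k, i, Vb 0)" using t by (simp add: h_def mapM_def)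
    then show ?thesis using False by (simp add: cA_def top_def ev_def)
  qed
  assume ir: "i + 2 \<le> r"
  then have t: "(k, i, Hb 0) \<in> PS r \<nu>" using s by (simp add: PS_iff)
  have "h (ev (k, i, Hb 0)) = Mrow r A B G D (k, i, Hb 0)" using t by (simp add: h_def mapM_def)
  then show "cB r h k i = B k i" "cG r h k i = G k i" "cD r h k i = D k i"
    by (simp_all add: cB_def cG_def cD_def ev_def)
qed

definition gdata :: "nat \<Rightarrow> int \<Rightarrow> nat \<Rightarrow> (nat \<Rightarrow> nat) \<Rightarrow> (nat \<Rightarrow> nat) \<Rightarrow> (nat \<Rightarrow> int)
    \<Rightarrow> bool \<Rightarrow> nat \<Rightarrow> int \<Rightarrow> bool \<Rightarrow> int \<Rightarrow> bool" where
  "gdata r \<nu> n ir blk k0 hasB mB kB hasC kC \<longleftrightarrow> r \<ge> 2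
    \<and> (\<forall>t<n. ir t + 2 \<le> r \<and> ir t < jj r (ir t) \<and> sumPS r \<nu> (k0 t) (ir t) \<and> blk (ir t) = t)
    \<and> (\<forall>k i. sumPS r \<nu> k i \<and> i + 2 \<le> r \<and> i < jj r i \<longrightarrow> blk i < n \<and> ir (blk i) = i \<and> sh r dvd (k - k0 (blk i)))
    \<and> (hasB \<longrightarrow> mB = jj r mB \<and> mB + 2 \<le> r \<and> sumPS r \<nu> kB mB \<and> even r)
    \<and> (\<forall>k i. sumPS r \<nu> k i \<and> i + 2 \<le> r \<and> i = jj r i \<longrightarrow> hasB \<and> i = mB \<and> sh r dvd (k - kB))
    \<and> (hasC \<longrightarrow> sumPS r \<nu> kC (r - 1))
    \<and> (\<forall>k. sumPS r \<nu> k (r - 1) \<longrightarrow> hasC \<and> sh r dvd (k - kC))"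

lemma gdata_JI:
  assumes gd: "gdata r \<nu> n ir blk k0 hasB mB kB hasC kC"
    and f: "f \<in> EndSet r \<nu>" and g: "g \<in> EndSet r \<nu>"
    and eA: "\<And>t. t < n \<Longrightarrow> Ablk r f (k0 t) (ir t) = Ablk r g (k0 t) (ir t)"
    and eB: "hasB \<Longrightarrow> Bblk r f kB mB = Bblk r g kB mB"
    and eC: "hasC \<Longrightarrow> cA r f kC (r - 1) = cA r g kC (r - 1)"
  shows "f = g"
proof -
  have r2: "r \<ge> 2" using gd by (simp add: gdata_def)
  show ?thesis
  proof (rule End_eq_coords[OF r2 f g])
    fix k i assume s: "sumPS r \<nu> k i"
    have ir: "i < r" using s by (simp add: sumPS_def)
    show "cA r f k i = cA r g k i \<and>
       (i + 2 \<le> r \<longrightarrow> cB r f k i = cB r g k i \<and> cG r f k i = cG r g k i \<and> cD r f k i = cD r g k i)"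
    proof (cases "i + 2 \<le> r")
      case False
      then have i1: "i = r - 1" using ir by simp
      have hc: "hasC" and d: "sh r dvd (k - kC)" using gd s i1 by (auto simp: gdata_def)
      show ?thesis using False eC[OF hc] coord_dvd[OF f d] coord_dvd[OF g d] i1 by simp
    next
      case ir2: True
      have pnz: "prodg r i i \<noteq> 0" using prodg_nz'[OF r2 ir] .
      consider (lt) "i < jj r i" | (gt) "jj r i < i" | (eq) "i = jj r i" by linarith
      then show ?thesis
      proof cases
        case lt
        define t where "t = blk i"
        have t: "t < n" "ir t = i" "sh r dvd (k - k0 t)"
          using gd s ir2 lt by (auto simp: gdata_def t_def)
        have e: "Ablk r f (k0 t) i = Ablk r g (k0 t) i" using eA[OF t(1)] t(2) by simp
        have c: "cA r f (k0 t) i = cA r g (k0 t) i" "cB r f (k0 t) i = cB r g (k0 t) i"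
          "cG r f (k0 t) i = cG r g (k0 t) i" "prodg r i i * cD r f (k0 t) i = prodg r i i * cD r g (k0 t) i"
          using fun_cong[OF e, of Ap] fun_cong[OF e, of Abpam] fun_cong[OF e, of Aap] fun_cong[OF e, of Aam]
          by (simp_all add: Ablk_def)
        show ?thesis using c pnz coord_dvd[OF f t(3)] coord_dvd[OF g t(3)] by simp
      next
        case gt
        define i' where "i' = jj r i"
        have j: "jj r i' = i" using ir2 by (simp add: i'_def jj_inv)
        have s': "sumPS r \<nu> (k - 1) i'" using sumPS_nb[OF ir2 s] by (simp add: i'_def)
        have ir': "i' + 2 \<le> r" using jj_le[OF ir2] by (simp add: i'_def)
        have lt': "i' < jj r i'" using gt j by (simp add: i'_def)
        define t where "t = blk i'"
        have t: "t < n" "ir t = i'" "sh r dvd (k - 1 - k0 t)"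
          using gd s' ir' lt' by (auto simp: gdata_def t_def)
        have d: "sh r dvd (k - (k0 t + 1))" using t(3) by (simp add: algebra_simps)
        have e: "Ablk r f (k0 t) i' = Ablk r g (k0 t) i'" using eA[OF t(1)] t(2) by simp
        have c: "cA r f (k0 t + 1) i = cA r g (k0 t + 1) i" "cB r f (k0 t + 1) i = cB r g (k0 t + 1) i"
          "cG r f (k0 t + 1) i = cG r g (k0 t + 1) i"
          "prodg r i i * cD r f (k0 t + 1) i = prodg r i i * cD r g (k0 t + 1) i"
          using fun_cong[OF e, of Aq] fun_cong[OF e, of Aapbm] fun_cong[OF e, of Abp] fun_cong[OF e, of Abm]
          by (simp_all add: Ablk_def j)
        show ?thesis using c pnz coord_dvd[OF f d] coord_dvd[OF g d] by simp
      next
        case eq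
        have hb: "hasB" and m: "i = mB" and d: "sh r dvd (k - kB)" using gd s ir2 eq by (auto simp: gdata_def)
        have e: "Bblk r f kB i = Bblk r g kB i" using eB[OF hb] m by simp
        have c: "cA r f kB i = cA r g kB i" "cB r f kB i = cB r g kB i"
          "cG r f kB i = cG r g kB i" "prodg r i i * cD r f kB i = prodg r i i * cD r g kB i"
          using fun_cong[OF e, of B1] fun_cong[OF e, of Bpm] fun_cong[OF e, of Bp] fun_cong[OF e, of Bm]
          by (simp_all add: Bblk_def)
        show ?thesis using c pnz coord_dvd[OF f d] coord_dvd[OF g d] by simp
      qed
    qed
  qed
qed

lemma gdata_JS:
  assumes gd: "gdata r \<nu> n ir blk k0 hasB mB kB hasC kC"
  shows "\<exists>h\<in>EndSet r \<nu>. (\<forall>t<n. Ablk r h (k0 t) (ir t) = zA t)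
    \<and> (hasB \<longrightarrow> Bblk r h kB mB = zB) \<and> (hasC \<longrightarrow> cA r h kC (r - 1) = zC)"
proof -
  have r2: "r \<ge> 2" using gd by (simp add: gdata_def)
  define A :: cf where "A k i = (if i + 2 \<le> r then (if i < jj r i then zA (blk i) Ap
     else if jj r i < i then zA (blk (jj r i)) Aq else zB B1) else zC)" for k i
  define B :: cf where "B k i = (if i < jj r i then zA (blk i) Abpam
     else if jj r i < i then zA (blk (jj r i)) Aapbm else zB Bpm)" for k i
  define G :: cf where "G k i = (if i < jj r i then zA (blk i) Aap
     else if jj r i < i then zA (blk (jj r i)) Abp else zB Bp)" for k i
  define D :: cf where "D k i = (if i < jj r i then zA (blk i) Aam
     else if jj r i < i then zA (blk (jj r i)) Abm else zB Bm) / prodg r i i" for k i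
  define h where "h = mapM r \<nu> (Mrow r A B G D)"
  have per: "\<And>k i. A (k + sh r) i = A k i" "\<And>k i. B (k + sh r) i = B k i"
    "\<And>k i. G (k + sh r) i = G k i" "\<And>k i. D (k + sh r) i = D k i"
    by (simp_all add: A_def B_def G_def D_def)
  have hE: "h \<in> EndSet r \<nu>" unfolding h_def by (rule Mrow_EndSet) (fact per)+
  note co = Mrow_coords[where A=A and B=B and G=G and D=D, OF per, folded h_def]
  have bA: "\<forall>t<n. Ablk r h (k0 t) (ir t) = zA t"
  proof (intro allI impI)
    fix t assume t: "t < n"
    define i where "i = ir t"
    have i: "i + 2 \<le> r" "i < jj r i" "sumPS r \<nu> (k0 t) i" "blk i = t"
      using gd t by (auto simp: gdata_def i_def)
    have j: "jj r (jj r i) = i" using i(1) by (rule jj_inv)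
    have s': "sumPS r \<nu> (k0 t + 1) (jj r i)" using sumPS_nb[OF i(1) i(3)] by simp
    have ir': "jj r i + 2 \<le> r" using i(1) by (rule jj_le)
    have pnz: "prodg r i i \<noteq> 0" "prodg r (jj r i) (jj r i) \<noteq> 0"
      using prodg_nz'[OF r2] i(1) ir' by auto
    show "Ablk r h (k0 t) (ir t) = zA t"
    proof (rule ext)
      fix z :: abas
      show "Ablk r h (k0 t) (ir t) z = zA t z"
        using i j pnz co[OF i(3)] co[OF s'] ir'
        by (cases z) (simp_all add: Ablk_def i_def[symmetric] h_def A_def B_def G_def D_def)
    qed
  qed
  have bB: "hasB \<longrightarrow> Bblk r h kB mB = zB"
  proof
    assume hb: hasB
    have m: "mB = jj r mB" "mB + 2 \<le> r" "sumPS r \<nu> kB mB" using gd hb by (auto simp: gdata_def)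
    have pnz: "prodg r mB mB \<noteq> 0" using prodg_nz'[OF r2] m by auto
    show "Bblk r h kB mB = zB"
    proof (rule ext)
      fix z :: bbas
      have mm: "jj r mB = mB" using m(1) by simp
      show "Bblk r h kB mB z = zB z"
        using m(2,3) mm pnz co[OF m(3)]
        by (cases z) (simp_all add: Bblk_def h_def A_def B_def G_def D_def)
    qed
  qed
  have bC: "hasC \<longrightarrow> cA r h kC (r - 1) = zC"
  proof
    assume hc: hasC
    have s: "sumPS r \<nu> kC (r - 1)" using gd hc by (auto simp: gdata_def)
    show "cA r h kC (r - 1) = zC" using co(1)[OF s] r2 by (simp add: A_def h_def)
  qed
  show ?thesis using hE bA bB bC by blast
qed


section \<open>Assembling the isomorphisms\<close>

definition PhiA :: "nat \<Rightarrow> nat \<Rightarrow> (nat \<Rightarrow> nat) \<Rightarrow> (nat \<Rightarrow> int) \<Rightarrow> (pvec \<Rightarrow> pvec) \<Rightarrow> nat \<Rightarrow> abas \<Rightarrow> complex" where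
  "PhiA r n ir k0 f = (\<lambda>t. if t < n then Ablk r f (k0 t) (ir t) else azero algA)"

lemma gdata_basic:
  assumes gd: "gdata r \<nu> n ir blk k0 hasB mB kB hasC kC"
  shows "r \<ge> 2" "\<And>t. t < n \<Longrightarrow> (k0 t, ir t, Hb 0) \<in> PS r \<nu>"
    "hasB \<Longrightarrow> (kB, mB, Hb 0) \<in> PS r \<nu> \<and> even r \<and> jj r mB = mB"
    "hasC \<Longrightarrow> (kC, r - 1, Vb 0) \<in> PS r \<nu>"
  using gd by (auto simp: gdata_def PS_iff)

lemma PhiA_hom:
  assumes gd: "gdata r \<nu> n ir blk k0 hasB mB kB hasC kC"
  shows "ahom (EndAlg r \<nu>) (pow_alg algA n) (PhiA r n ir k0)"
  unfolding PhiA_def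
  by (rule pow_hom[of n _ _ "\<lambda>t f. Ablk r f (k0 t) (ir t)", simplified])
     (rule Ablk_hom[OF gdata_basic(1,2)[OF gd]])

lemma acar_pow_algA: "z \<in> acar (pow_alg algA n) \<longleftrightarrow> (\<forall>t\<ge>n. z t = azero algA)"
  by (simp add: pow_alg_def algA_simps)

lemma PhiA_eq: "z \<in> acar (pow_alg algA n) \<Longrightarrow> (\<forall>t<n. Ablk r h (k0 t) (ir t) = z t) \<Longrightarrow> PhiA r n ir k0 h = z"
  by (auto simp: PhiA_def acar_pow_algA fun_eq_iff)

lemma PhiA_inj: "PhiA r n ir k0 f = PhiA r n ir k0 g \<Longrightarrow> t < n \<Longrightarrow> Ablk r f (k0 t) (ir t) = Ablk r g (k0 t) (ir t)"
  by (drule fun_cong[of _ _ t]) (simp add: PhiA_def)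

lemma shape_AC:
  assumes gd: "gdata r \<nu> n ir blk k0 False mB kB True kC"
  shows "alg_isomorphic (EndAlg r \<nu>) (prod_alg (pow_alg algA n) complex_alg)"
proof -
  note b = gdata_basic[OF gd]
  let ?phi = "\<lambda>f. (PhiA r n ir k0 f, cA r f kC (r - 1))"
  have "alg_iso (EndAlg r \<nu>) (prod_alg (pow_alg algA n) complex_alg) ?phi"
  proof (rule alg_iso_intro)
    show "ahom (EndAlg r \<nu>) (prod_alg (pow_alg algA n) complex_alg) ?phi"
      by (rule prod_hom[OF PhiA_hom[OF gd] Cblk_hom[OF b(1) b(4)]]) simp
    show "inj_on ?phi (acar (EndAlg r \<nu>))"
      by (auto simp: inj_on_def EndAlg_simps intro!: gdata_JI[OF gd] dest: PhiA_inj)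
    fix y assume y: "y \<in> acar (prod_alg (pow_alg algA n) complex_alg)"
    obtain zA zC where yy: "y = (zA, zC)" by (cases y) auto
    have zA: "zA \<in> acar (pow_alg algA n)" using y by (simp add: yy prod_alg_def)
    obtain h where h: "h \<in> EndSet r \<nu>" "\<forall>t<n. Ablk r h (k0 t) (ir t) = zA t" "cA r h kC (r - 1) = zC"
      using gdata_JS[OF gd, of zA undefined zC] by auto
    show "\<exists>x\<in>acar (EndAlg r \<nu>). ?phi x = y"
      using h PhiA_eq[OF zA h(2)] by (auto simp: yy EndAlg_simps)
  qed
  then show ?thesis by (auto simp: alg_isomorphic_def)
qed

lemma shape_AB:
  assumes gd: "gdata r \<nu> n ir blk k0 True mB kB False kC"
  shows "alg_isomorphic (EndAlg r \<nu>) (prod_alg (pow_alg algA n) algB)"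
proof -
  note b = gdata_basic[OF gd]
  let ?phi = "\<lambda>f. (PhiA r n ir k0 f, Bblk r f kB mB)"
  have "alg_iso (EndAlg r \<nu>) (prod_alg (pow_alg algA n) algB) ?phi"
  proof (rule alg_iso_intro)
    show "ahom (EndAlg r \<nu>) (prod_alg (pow_alg algA n) algB) ?phi"
      using b(3) by (intro prod_hom[OF PhiA_hom[OF gd] Bblk_hom[OF b(1)]]) auto
    show "inj_on ?phi (acar (EndAlg r \<nu>))"
      by (auto simp: inj_on_def EndAlg_simps intro!: gdata_JI[OF gd] dest: PhiA_inj)
    fix y assume y: "y \<in> acar (prod_alg (pow_alg algA n) algB)"
    obtain zA zB where yy: "y = (zA, zB)" by (cases y) auto
    have zA: "zA \<in> acar (pow_alg algA n)" using y by (simp add: yy prod_alg_def)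
    obtain h where h: "h \<in> EndSet r \<nu>" "\<forall>t<n. Ablk r h (k0 t) (ir t) = zA t" "Bblk r h kB mB = zB"
      using gdata_JS[OF gd, of zA zB undefined] by auto
    show "\<exists>x\<in>acar (EndAlg r \<nu>). ?phi x = y"
      using h PhiA_eq[OF zA h(2)] by (auto simp: yy EndAlg_simps)
  qed
  then show ?thesis by (auto simp: alg_isomorphic_def)
qed

lemma shape_A:
  assumes gd: "gdata r \<nu> n ir blk k0 False mB kB False kC"
  shows "alg_isomorphic (EndAlg r \<nu>) (pow_alg algA n)"
proof -
  note b = gdata_basic[OF gd]
  let ?phi = "PhiA r n ir k0"
  have "alg_iso (EndAlg r \<nu>) (pow_alg algA n) ?phi"
  proof (rule alg_iso_intro)
    show "ahom (EndAlg r \<nu>) (pow_alg algA n) ?phi" by (rule PhiA_hom[OF gd])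
    show "inj_on ?phi (acar (EndAlg r \<nu>))"
      by (auto simp: inj_on_def EndAlg_simps intro!: gdata_JI[OF gd] dest: PhiA_inj)
    fix y assume y: "y \<in> acar (pow_alg algA n)"
    obtain h where h: "h \<in> EndSet r \<nu>" "\<forall>t<n. Ablk r h (k0 t) (ir t) = y t"
      using gdata_JS[OF gd, of y undefined undefined] by auto
    show "\<exists>x\<in>acar (EndAlg r \<nu>). ?phi x = y"
      using h PhiA_eq[OF y h(2)] by (auto simp: EndAlg_simps)
  qed
  then show ?thesis by (auto simp: alg_isomorphic_def)
qed

lemma shape_ABC:
  assumes gd: "gdata r \<nu> n ir blk k0 True mB kB True kC"
  shows "alg_isomorphic (EndAlg r \<nu>) (prod_alg (prod_alg (pow_alg algA n) algB) complex_alg)"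
proof -
  note b = gdata_basic[OF gd]
  let ?phi = "\<lambda>f. ((PhiA r n ir k0 f, Bblk r f kB mB), cA r f kC (r - 1))"
  have "alg_iso (EndAlg r \<nu>) (prod_alg (prod_alg (pow_alg algA n) algB) complex_alg) ?phi"
  proof (rule alg_iso_intro)
    show "ahom (EndAlg r \<nu>) (prod_alg (prod_alg (pow_alg algA n) algB) complex_alg) ?phi"
      using b(3) by (intro prod_hom[OF prod_hom[OF PhiA_hom[OF gd] Bblk_hom[OF b(1)]] Cblk_hom[OF b(1) b(4)]]) auto
    show "inj_on ?phi (acar (EndAlg r \<nu>))"
      by (auto simp: inj_on_def EndAlg_simps intro!: gdata_JI[OF gd] dest: PhiA_inj)
    fix y assume y: "y \<in> acar (prod_alg (prod_alg (pow_alg algA n) algB) complex_alg)"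
    obtain zA zB zC where yy: "y = ((zA, zB), zC)" by (cases y) auto
    have zA: "zA \<in> acar (pow_alg algA n)" using y by (simp add: yy prod_alg_def)
    obtain h where h: "h \<in> EndSet r \<nu>" "\<forall>t<n. Ablk r h (k0 t) (ir t) = zA t" "Bblk r h kB mB = zB"
        "cA r h kC (r - 1) = zC"
      using gdata_JS[OF gd, of zA zB zC] by auto
    show "\<exists>x\<in>acar (EndAlg r \<nu>). ?phi x = y"
      using h PhiA_eq[OF zA h(2)] by (auto simp: yy EndAlg_simps)
  qed
  then show ?thesis by (auto simp: alg_isomorphic_def)
qed


lemma odd_r_mod: "odd r \<Longrightarrow> (k * int r + m) mod 2 = (k + m) mod 2"
proof -
  assume "odd r"
  then obtain q where q: "r = 2 * q + 1" by (auto elim: oddE)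
  have "k * int r + m = 2 * (k * int q) + (k + m)" by (simp add: q algebra_simps)
  then show ?thesis by presburger
qed

lemma even_r_mod: "even r \<Longrightarrow> (k * int r + m) mod 2 = m mod 2"
proof -
  assume "even r"
  then obtain q where q: "r = 2 * q" by (auto elim: evenE)
  have "k * int r + m = 2 * (k * int q) + m" by (simp add: q algebra_simps)
  then show ?thesis by presburger
qed

lemma sh_odd: "odd r \<Longrightarrow> sh r = 2"
  using sh_cases[of r] by (cases r) auto

lemma sh_even: "even r \<Longrightarrow> r > 0 \<Longrightarrow> sh r = 1"
  using sh_cases[of r] by auto

lemma gd_odd:
  assumes o: "odd r" and r3: "r \<ge> 3" and nu: "\<nu> = 0 \<or> \<nu> = 1"
  shows "gdata r \<nu> ((r - 1) div 2) id id (\<lambda>t. (\<nu> - int t) mod 2) False 0 0 True \<nu>"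
proof -
  have noB: "\<And>i. i + 2 \<le> r \<Longrightarrow> i = jj r i \<Longrightarrow> False"
  proof -
    fix i assume "i + 2 \<le> r" "i = jj r i"
    then have "r = 2 * i + 2" by (simp add: jj_def; linarith)
    then show False using o by simp
  qed
  show ?thesis
  unfolding gdata_def
proof (intro conjI allI impI)
  show "2 \<le> r" using r3 by simp
  fix t assume t: "t < (r - 1) div 2"
  show "id t + 2 \<le> r" "id t < jj r (id t)" using t o by (auto simp: jj_def elim!: oddE)
  show "sumPS r \<nu> ((\<nu> - int t) mod 2) (id t)"
    using t nu by (auto simp: sumPS_def odd_r_mod[OF o]) presburger+
  show "id (id t) = t" by simp
next
  fix k i assume a: "sumPS r \<nu> k i \<and> i + 2 \<le> r \<and> i < jj r i"
  then have "i + i + 2 < r" by (simp add: jj_def; linarith)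
  then show "id i < (r - 1) div 2" using o by (auto elim!: oddE)
  show "id (id i) = i" by simp
  have "(k + int i) mod 2 = \<nu>" using a by (simp add: sumPS_def odd_r_mod[OF o])
  then have "(2::int) dvd k - (\<nu> - int i) mod 2" by presburger
  then show "sh r dvd k - (\<nu> - int (id i)) mod 2" using sh_odd[OF o] by simp
next
  fix k i assume a: "sumPS r \<nu> k i \<and> i + 2 \<le> r \<and> i = jj r i"
  then have "r = 2 * i + 2" by (simp add: jj_def; linarith)
  then show False using o by simp
next
  show "sumPS r \<nu> \<nu> (r - 1)"
    using nu o r3 by (auto simp: sumPS_def odd_r_mod[OF o] elim!: oddE)
next
  fix k assume a: "sumPS r \<nu> k (r - 1)"
  show True by simp
  obtain q where q: "r = 2 * q + 1" using o by (auto elim: oddE)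
  have "(k + int (r - 1)) mod 2 = \<nu>" using a unfolding sumPS_def odd_r_mod[OF o] by blast
  moreover have "int (r - 1) = 2 * int q" using q by simp
  ultimately have "(k + 2 * int q) mod 2 = \<nu>" by simp
  then have "(2::int) dvd k - \<nu>" using nu by presburger
  then show "sh r dvd k - \<nu>" using sh_odd[OF o] by simp
qed (use noB in auto)
qed


lemma sumPS_even: "even r \<Longrightarrow> sumPS r \<nu> k i \<longleftrightarrow> i < r \<and> int (i mod 2) = \<nu>"
  by (simp add: sumPS_def even_r_mod of_nat_mod)

lemma gdata_intro:
  assumes "r \<ge> 2"
    "\<And>t. t < n \<Longrightarrow> ir t + 2 \<le> r \<and> ir t < jj r (ir t) \<and> sumPS r \<nu> (k0 t) (ir t) \<and> blk (ir t) = t"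
    "\<And>k i. sumPS r \<nu> k i \<Longrightarrow> i + 2 \<le> r \<Longrightarrow> i < jj r i \<Longrightarrow> blk i < n \<and> ir (blk i) = i \<and> sh r dvd (k - k0 (blk i))"
    "hasB \<Longrightarrow> mB = jj r mB \<and> mB + 2 \<le> r \<and> sumPS r \<nu> kB mB \<and> even r"
    "\<And>k i. sumPS r \<nu> k i \<Longrightarrow> i + 2 \<le> r \<Longrightarrow> i = jj r i \<Longrightarrow> hasB \<and> i = mB \<and> sh r dvd (k - kB)"
    "hasC \<Longrightarrow> sumPS r \<nu> kC (r - 1)"
    "\<And>k. sumPS r \<nu> k (r - 1) \<Longrightarrow> hasC \<and> sh r dvd (k - kC)"
  shows "gdata r \<nu> n ir blk k0 hasB mB kB hasC kC"
  using assms unfolding gdata_def by blast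

lemma gd_2_0:
  assumes rm: "r mod 4 = 2"
  shows "gdata r 0 ((r - 2) div 4) (\<lambda>t. 2 * t) (\<lambda>i. i div 2) (\<lambda>t. 0) True ((r - 2) div 2) 0 False 0"
proof -
  have "r = 4 * (r div 4) + 2" using rm by presburger
  then obtain q where rq: "r = 4 * q + 2" by blast
  have ev: "even r" using rq by simp
  have sh1: "sh r = 1" using sh_even[OF ev] rq by simp
  have n: "(r - 2) div 4 = q" "(r - 2) div 2 = 2 * q" using rq by simp_all
  show ?thesis unfolding n
  proof (rule gdata_intro)
    show "2 \<le> r" using rq by simp
  next
    fix t assume t: "t < q"
    show "2 * t + 2 \<le> r \<and> 2 * t < jj r (2 * t) \<and> sumPS r 0 0 (2 * t) \<and> 2 * t div 2 = t"
      using t rq by (simp add: jj_def sumPS_even; arith)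
  next
    fix k i assume s: "sumPS r 0 k i" and ir: "i + 2 \<le> r" and lt: "i < jj r i"
    have e: "even i" using s ev by (simp add: sumPS_even; presburger)
    then obtain u where u: "i = 2 * u" by (auto elim: evenE)
    show "i div 2 < q \<and> 2 * (i div 2) = i \<and> sh r dvd (k - 0)"
      using lt u rq sh1 by (simp add: jj_def; arith)
  next
    show "2 * q = jj r (2 * q) \<and> 2 * q + 2 \<le> r \<and> sumPS r 0 0 (2 * q) \<and> even r"
      using rq by (simp add: jj_def sumPS_even)
  next
    fix k i assume s: "sumPS r 0 k i" and ir: "i + 2 \<le> r" and eq: "i = jj r i"
    have e2: "i = r - 2 - i" using eq by (simp only: jj_def)
    then have "i + i + 2 = r" using ir by arith
    then show "True \<and> i = 2 * q \<and> sh r dvd (k - 0)" using rq sh1 by simp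
  next
    fix k assume s: "sumPS r 0 k (r - 1)"
    then have "(r - 1) mod 2 = 0" using ev by (simp add: sumPS_even; presburger)
    then show "False \<and> sh r dvd (k - 0)" using rq by presburger
  qed simp
qed

lemma gd_2_1:
  assumes rm: "r mod 4 = 2"
  shows "gdata r 1 ((r - 2) div 4) (\<lambda>t. 2 * t + 1) (\<lambda>i. i div 2) (\<lambda>t. 0) False 0 0 True 0"
proof -
  have "r = 4 * (r div 4) + 2" using rm by presburger
  then obtain q where rq: "r = 4 * q + 2" by blast
  have ev: "even r" using rq by simp
  have sh1: "sh r = 1" using sh_even[OF ev] rq by simp
  have n: "(r - 2) div 4 = q" using rq by simp_all
  show ?thesis unfolding n
  proof (rule gdata_intro)
    show "2 \<le> r" using rq by simp
  next
    fix t assume t: "t < q"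
    show "2 * t + 1 + 2 \<le> r \<and> 2 * t + 1 < jj r (2 * t + 1) \<and> sumPS r 1 0 (2 * t + 1) \<and> (2 * t + 1) div 2 = t"
      using t rq by (simp add: jj_def sumPS_even; arith)
  next
    fix k i assume s: "sumPS r 1 k i" and ir: "i + 2 \<le> r" and lt: "i < jj r i"
    have e: "odd i" using s ev by (simp add: sumPS_even; presburger)
    then obtain u where u: "i = 2 * u + 1" by (auto elim: oddE)
    show "i div 2 < q \<and> 2 * (i div 2) + 1 = i \<and> sh r dvd (k - 0)"
      using lt u rq sh1 by (simp add: jj_def; arith)
  next
    fix k i assume s: "sumPS r 1 k i" and ir: "i + 2 \<le> r" and eq: "i = jj r i"
    have e: "odd i" using s ev by (simp add: sumPS_even; presburger)
    have e2: "i = r - 2 - i" using eq by (simp only: jj_def)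
    then have "i + i + 2 = r" using ir by arith
    then show "False \<and> i = 0 \<and> sh r dvd (k - 0)" using e rq by presburger
  next
    show "sumPS r 1 0 (r - 1)" using rq by (simp add: sumPS_even; presburger)
  next
    fix k assume s: "sumPS r 1 k (r - 1)"
    show "True \<and> sh r dvd (k - 0)" using sh1 by simp
  qed simp
qed

lemma gd_0_0:
  assumes rm: "r mod 4 = 0 \<and> r \<ge> 4"
  shows "gdata r 0 (r div 4) (\<lambda>t. 2 * t) (\<lambda>i. i div 2) (\<lambda>t. 0) False 0 0 False 0"
proof -
  have "r = 4 * (r div 4 - 1) + 4" using rm by presburger
  then obtain q where rq: "r = 4 * q + 4" by blast
  have ev: "even r" using rq by simp
  have sh1: "sh r = 1" using sh_even[OF ev] rq by simp
  have n: "r div 4 = q + 1" using rq by simp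
  show ?thesis unfolding n
  proof (rule gdata_intro)
    show "2 \<le> r" using rq by simp
  next
    fix t assume t: "t < q + 1"
    show "2 * t + 2 \<le> r \<and> 2 * t < jj r (2 * t) \<and> sumPS r 0 0 (2 * t) \<and> 2 * t div 2 = t"
      using t rq by (simp add: jj_def sumPS_even; arith)
  next
    fix k i assume s: "sumPS r 0 k i" and ir: "i + 2 \<le> r" and lt: "i < jj r i"
    have e: "even i" using s ev by (simp add: sumPS_even; presburger)
    then obtain u where u: "i = 2 * u" by (auto elim: evenE)
    show "i div 2 < q + 1 \<and> 2 * (i div 2) = i \<and> sh r dvd (k - 0)"
      using lt u rq sh1 by (simp add: jj_def; arith)
  next
    fix k i assume s: "sumPS r 0 k i" and ir: "i + 2 \<le> r" and eq: "i = jj r i"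
    have e: "even i" using s ev by (simp add: sumPS_even; presburger)
    have e2: "i = r - 2 - i" using eq by (simp only: jj_def)
    then have "i + i + 2 = r" using ir by arith
    then show "False \<and> i = 0 \<and> sh r dvd (k - 0)" using e rq by presburger
  next
    fix k assume s: "sumPS r 0 k (r - 1)"
    then have "(r - 1) mod 2 = 0" using ev by (simp add: sumPS_even; presburger)
    then show "False \<and> sh r dvd (k - 0)" using rq by presburger
  qed simp_all
qed

lemma gd_0_1:
  assumes rm: "r mod 4 = 0 \<and> r \<ge> 4"
  shows "gdata r 1 ((r - 4) div 4) (\<lambda>t. 2 * t + 1) (\<lambda>i. i div 2) (\<lambda>t. 0) True ((r - 2) div 2) 0 True 0"
proof -
  have "r = 4 * (r div 4 - 1) + 4" using rm by presburger
  then obtain q where rq: "r = 4 * q + 4" by blast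
  have ev: "even r" using rq by simp
  have sh1: "sh r = 1" using sh_even[OF ev] rq by simp
  have n: "(r - 4) div 4 = q" "(r - 2) div 2 = 2 * q + 1" using rq by simp_all
  show ?thesis unfolding n
  proof (rule gdata_intro)
    show "2 \<le> r" using rq by simp
  next
    fix t assume t: "t < q"
    show "2 * t + 1 + 2 \<le> r \<and> 2 * t + 1 < jj r (2 * t + 1) \<and> sumPS r 1 0 (2 * t + 1) \<and> (2 * t + 1) div 2 = t"
      using t rq by (simp add: jj_def sumPS_even; arith)
  next
    fix k i assume s: "sumPS r 1 k i" and ir: "i + 2 \<le> r" and lt: "i < jj r i"
    have e: "odd i" using s ev by (simp add: sumPS_even; presburger)
    then obtain u where u: "i = 2 * u + 1" by (auto elim: oddE)
    show "i div 2 < q \<and> 2 * (i div 2) + 1 = i \<and> sh r dvd (k - 0)"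
      using lt u rq sh1 by (simp add: jj_def; arith)
  next
    show "2 * q + 1 = jj r (2 * q + 1) \<and> 2 * q + 1 + 2 \<le> r \<and> sumPS r 1 0 (2 * q + 1) \<and> even r"
      using rq by (simp add: jj_def sumPS_even)
  next
    fix k i assume s: "sumPS r 1 k i" and ir: "i + 2 \<le> r" and eq: "i = jj r i"
    have e2: "i = r - 2 - i" using eq by (simp only: jj_def)
    then have "i + i + 2 = r" using ir by arith
    then show "True \<and> i = 2 * q + 1 \<and> sh r dvd (k - 0)" using rq sh1 by simp
  next
    show "sumPS r 1 0 (r - 1)" using rq by (simp add: sumPS_even; presburger)
  next
    fix k assume s: "sumPS r 1 k (r - 1)"
    show "True \<and> sh r dvd (k - 0)" using sh1 by simp
  qed
qed


theorem theorem7p2: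
  fixes r :: nat
  shows "(odd r \<and> r \<ge> 3 \<longrightarrow>
            alg_isomorphic (EndAlg r 0) (prod_alg (pow_alg algA ((r - 1) div 2)) complex_alg)
          \<and> alg_isomorphic (EndAlg r 1) (prod_alg (pow_alg algA ((r - 1) div 2)) complex_alg))
       \<and> (r mod 4 = 2 \<longrightarrow>
            alg_isomorphic (EndAlg r 0) (prod_alg (pow_alg algA ((r - 2) div 4)) algB)
          \<and> alg_isomorphic (EndAlg r 1) (prod_alg (pow_alg algA ((r - 2) div 4)) complex_alg))
       \<and> (r mod 4 = 0 \<and> r \<ge> 4 \<longrightarrow>
            alg_isomorphic (EndAlg r 0) (pow_alg algA (r div 4))
          \<and> alg_isomorphic (EndAlg r 1)
              (prod_alg (prod_alg (pow_alg algA ((r - 4) div 4)) algB) complex_alg))"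
proof (intro conjI impI)
  assume a: "odd r \<and> r \<ge> 3"
  show "alg_isomorphic (EndAlg r 0) (prod_alg (pow_alg algA ((r - 1) div 2)) complex_alg)"
    using shape_AC[OF gd_odd[of r 0]] a by simp
  show "alg_isomorphic (EndAlg r 1) (prod_alg (pow_alg algA ((r - 1) div 2)) complex_alg)"
    using shape_AC[OF gd_odd[of r 1]] a by simp
next
  assume a: "r mod 4 = 2"
  show "alg_isomorphic (EndAlg r 0) (prod_alg (pow_alg algA ((r - 2) div 4)) algB)"
    by (rule shape_AB[OF gd_2_0[OF a]])
  show "alg_isomorphic (EndAlg r 1) (prod_alg (pow_alg algA ((r - 2) div 4)) complex_alg)"
    by (rule shape_AC[OF gd_2_1[OF a]])
next
  assume a: "r mod 4 = 0 \<and> r \<ge> 4"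
  show "alg_isomorphic (EndAlg r 0) (pow_alg algA (r div 4))"
    by (rule shape_A[OF gd_0_0[OF a]])
  show "alg_isomorphic (EndAlg r 1) (prod_alg (prod_alg (pow_alg algA ((r - 4) div 4)) algB) complex_alg)"
    by (rule shape_ABC[OF gd_0_1[OF a]])
qed


end
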